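(* Let $R$ be a ring, $S$ an almost left Ore set of $R$, $\mathfrak{a}=\mathrm{ass}_R(S)$, and $\mathfrak{a}_r$ the ideal of $R$ generated by $\mathrm{ass}_r(S)=\{r\in R:rs=0\text{ for some }s\in S\}$. Then \begin{enumerate} \item $S_r:=(S+\mathfrak{a}_r)/\mathfrak{a}_r$ is a left Ore set of $R/\mathfrak{a}_r$. \item The following are equivalent: $S$ is left localizable in $R$; $S_r$ is left localizable in $R/\mathfrak{a}_r$; ${}'\mathfrak{a}(S_r)\neq R/\mathfrak{a}_r$; ${}'\mathfrak{a}(S)\ne R$. \item Suppose ${}'\mathfrak{a}:={}'\mathfrak{a}(S)\neq R$. Let ${}'\pi:R\to{}'R=R/{}'\mathfrak{a}$, $r\mapsto{}'r=r+{}'\mathfrak{a}$, and ${}'S={}'\pi(S)$. Then \begin{enumerate} \item ${}'S$ is a left denominator set of ${}'R$ contained in ${}'\mathcal{C}_{{}'R}$; \item $\mathfrak{a}={}'\pi^{-1}(\mathrm{ass}_l({}'S))$; \item $R\langle S^{-1}\rangle\simeq{}'S^{-1}\,{}'R$, an $R$-isomorphism. \end{enumerate} \end{enumerate}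
   Context: Rings are associative with $1$. Multiplicative set: $SS\subseteq S$, $1\in S$, $0\notin S$. Almost left Ore set: for all $s\in S,r\in R$ there are $s_1,s_2\in S$, $r_1\in R$ with $(s_1r-r_1s)s_2=0$. Left Ore set: $Sr\cap Rs\ne\emptyset$ for all $r\in R,s\in S$; left denominator set: left Ore and $rs=0$ ($s\in S$) implies $tr=0$ for some $t\in S$; $T^{-1}A$ is the left Ore localization; $\mathrm{ass}_l(T)=\{a:ta=0\text{ for some }t\in T\}$. For a multiplicative set $T$ of a ring $A$: $A\langle T^{-1}\rangle=A\langle X_T\rangle/I_T$ ($A\langle X_T\rangle$ freely generated by $A$ and noncommuting $x_t$, $I_T$ generated by $tx_t-1,x_tt-1$); $\mathrm{ass}_A(T)=\ker(A\to A\langle T^{-1}\rangle)$; $T$ is left localizable if $A\langle T^{-1}\rangle\neq0$ and every element has the form $(x_t+I_T)(a+I_T)$. ${}'\mathcal{C}_A=\{a\in A: xa=0\Rightarrow x=0\}$, and ${}'\mathfrak{a}(T)$ is the least ideal $\mathfrak{b}$ of $A$ such that the image of $T$ in $A/\mathfrak{b}$ lies in ${}'\mathcal{C}_{A/\mathfrak{b}}$ (it exists). *)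

theory Defs
  imports "HOL-Algebra.Algebra"
begin

definition multiplicative_set :: "('a,'m) ring_scheme \<Rightarrow> 'a set \<Rightarrow> bool" where
  "multiplicative_set A S \<longleftrightarrow> S \<subseteq> carrier A \<and> \<one>\<^bsub>A\<^esub> \<in> S \<and> \<zero>\<^bsub>A\<^esub> \<notin> S \<and>
     (\<forall>s\<in>S. \<forall>t\<in>S. s \<otimes>\<^bsub>A\<^esub> t \<in> S)"

definition almost_left_Ore :: "('a,'m) ring_scheme \<Rightarrow> 'a set \<Rightarrow> bool" where
  "almost_left_Ore A S \<longleftrightarrow> multiplicative_set A S \<and>
     (\<forall>s\<in>S. \<forall>r\<in>carrier A. \<exists>s1\<in>S. \<exists>s2\<in>S. \<exists>r1\<in>carrier A.
        (s1 \<otimes>\<^bsub>A\<^esub> r \<ominus>\<^bsub>A\<^esub> r1 \<otimes>\<^bsub>A\<^esub> s) \<otimes>\<^bsub>A\<^esub> s2 = \<zero>\<^bsub>A\<^esub>)"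

text \<open>Left Ore set: a multiplicative monoid S (0 is allowed) with Sr \<inter> Rs nonempty.\<close>
definition left_Ore_set :: "('a,'m) ring_scheme \<Rightarrow> 'a set \<Rightarrow> bool" where
  "left_Ore_set A S \<longleftrightarrow> S \<subseteq> carrier A \<and> \<one>\<^bsub>A\<^esub> \<in> S \<and> (\<forall>s\<in>S. \<forall>t\<in>S. s \<otimes>\<^bsub>A\<^esub> t \<in> S) \<and>
     (\<forall>r\<in>carrier A. \<forall>s\<in>S. \<exists>s'\<in>S. \<exists>r'\<in>carrier A. s' \<otimes>\<^bsub>A\<^esub> r = r' \<otimes>\<^bsub>A\<^esub> s)"

definition left_denominator_set :: "('a,'m) ring_scheme \<Rightarrow> 'a set \<Rightarrow> bool" where
  "left_denominator_set A S \<longleftrightarrow> left_Ore_set A S \<and>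
     (\<forall>r\<in>carrier A. \<forall>s\<in>S. r \<otimes>\<^bsub>A\<^esub> s = \<zero>\<^bsub>A\<^esub> \<longrightarrow> (\<exists>t\<in>S. t \<otimes>\<^bsub>A\<^esub> r = \<zero>\<^bsub>A\<^esub>))"

definition ass_l :: "('a,'m) ring_scheme \<Rightarrow> 'a set \<Rightarrow> 'a set" where
  "ass_l A T = {a \<in> carrier A. \<exists>t\<in>T. t \<otimes>\<^bsub>A\<^esub> a = \<zero>\<^bsub>A\<^esub>}"

definition ass_r :: "('a,'m) ring_scheme \<Rightarrow> 'a set \<Rightarrow> 'a set" where
  "ass_r A T = {a \<in> carrier A. \<exists>t\<in>T. a \<otimes>\<^bsub>A\<^esub> t = \<zero>\<^bsub>A\<^esub>}"

definition left_regular :: "('a,'m) ring_scheme \<Rightarrow> 'a set" where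
  "left_regular A = {a \<in> carrier A. \<forall>x\<in>carrier A. x \<otimes>\<^bsub>A\<^esub> a = \<zero>\<^bsub>A\<^esub> \<longrightarrow> x = \<zero>\<^bsub>A\<^esub>}"

text \<open>'a(T): the least ideal b such that the image of T in A/b consists of left regular
  elements (rendered as the intersection of all such ideals; A itself is one of them).\<close>
definition prime_a :: "('a,'m) ring_scheme \<Rightarrow> 'a set \<Rightarrow> 'a set" where
  "prime_a A T = \<Inter>{b. ideal b A \<and> (\<forall>t\<in>T. b +>\<^bsub>A\<^esub> t \<in> left_regular (A Quot b))}"

text \<open>Free (noncommutative) ring Z<Y> on an alphabet Y: finitely supported integer
  functions on words over Y.\<close>
definition free_ring :: "'y set \<Rightarrow> ('y list \<Rightarrow> int) ring" where
  "free_ring Y = \<lparr>carrier = {f. finite {w. f w \<noteq> 0} \<and> (\<forall>w. f w \<noteq> 0 \<longrightarrow> set w \<subseteq> Y)},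
     monoid.mult = (\<lambda>f g w. \<Sum>(u,v)\<in>{(u,v). u @ v = w}. f u * g v),
     monoid.one = (\<lambda>w. if w = [] then 1 else 0),
     ring.zero = (\<lambda>w. 0),
     ring.add = (\<lambda>f g w. f w + g w)\<rparr>"

definition letter :: "'y \<Rightarrow> ('y list \<Rightarrow> int)" where
  "letter y = (\<lambda>w. if w = [y] then 1 else 0)"

text \<open>Alphabet: Inl a (a in A) stands for a, Inr t (t in T) stands for x_t.\<close>
definition loc_alphabet :: "('a,'m) ring_scheme \<Rightarrow> 'a set \<Rightarrow> ('a + 'a) set" where
  "loc_alphabet A T = Inl ` carrier A \<union> Inr ` T"

abbreviation loc_free :: "('a,'m) ring_scheme \<Rightarrow> 'a set \<Rightarrow> (('a + 'a) list \<Rightarrow> int) ring" where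
  "loc_free A T \<equiv> free_ring (loc_alphabet A T)"

text \<open>Relations: those making a \<mapsto> Inl a a ring homomorphism (so the quotient by them is
  A<X_T>), together with the relations of I_T:  t x_t - 1, x_t t - 1.\<close>
definition loc_rels :: "('a,'m) ring_scheme \<Rightarrow> 'a set \<Rightarrow> (('a + 'a) list \<Rightarrow> int) set" where
  "loc_rels A T =
     {letter (Inl (a \<oplus>\<^bsub>A\<^esub> b)) \<ominus>\<^bsub>loc_free A T\<^esub> (letter (Inl a) \<oplus>\<^bsub>loc_free A T\<^esub> letter (Inl b))
        | a b. a \<in> carrier A \<and> b \<in> carrier A}
   \<union> {letter (Inl (a \<otimes>\<^bsub>A\<^esub> b)) \<ominus>\<^bsub>loc_free A T\<^esub> (letter (Inl a) \<otimes>\<^bsub>loc_free A T\<^esub> letter (Inl b))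
        | a b. a \<in> carrier A \<and> b \<in> carrier A}
   \<union> {letter (Inl \<one>\<^bsub>A\<^esub>) \<ominus>\<^bsub>loc_free A T\<^esub> \<one>\<^bsub>loc_free A T\<^esub>}
   \<union> {letter (Inl t) \<otimes>\<^bsub>loc_free A T\<^esub> letter (Inr t) \<ominus>\<^bsub>loc_free A T\<^esub> \<one>\<^bsub>loc_free A T\<^esub> | t. t \<in> T}
   \<union> {letter (Inr t) \<otimes>\<^bsub>loc_free A T\<^esub> letter (Inl t) \<ominus>\<^bsub>loc_free A T\<^esub> \<one>\<^bsub>loc_free A T\<^esub> | t. t \<in> T}"

definition loc_ideal :: "('a,'m) ring_scheme \<Rightarrow> 'a set \<Rightarrow> (('a + 'a) list \<Rightarrow> int) set" where
  "loc_ideal A T = Idl\<^bsub>loc_free A T\<^esub> (loc_rels A T)"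

definition univ_loc :: "('a,'m) ring_scheme \<Rightarrow> 'a set \<Rightarrow> (('a + 'a) list \<Rightarrow> int) set ring" where
  "univ_loc A T = loc_free A T Quot loc_ideal A T"

definition univ_map :: "('a,'m) ring_scheme \<Rightarrow> 'a set \<Rightarrow> 'a \<Rightarrow> (('a + 'a) list \<Rightarrow> int) set" where
  "univ_map A T a = loc_ideal A T +>\<^bsub>loc_free A T\<^esub> letter (Inl a)"

definition univ_x :: "('a,'m) ring_scheme \<Rightarrow> 'a set \<Rightarrow> 'a \<Rightarrow> (('a + 'a) list \<Rightarrow> int) set" where
  "univ_x A T t = loc_ideal A T +>\<^bsub>loc_free A T\<^esub> letter (Inr t)"

definition ass :: "('a,'m) ring_scheme \<Rightarrow> 'a set \<Rightarrow> 'a set" where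
  "ass A T = {a \<in> carrier A. univ_map A T a = \<zero>\<^bsub>univ_loc A T\<^esub>}"

definition left_localizable :: "('a,'m) ring_scheme \<Rightarrow> 'a set \<Rightarrow> bool" where
  "left_localizable A T \<longleftrightarrow> \<one>\<^bsub>univ_loc A T\<^esub> \<noteq> \<zero>\<^bsub>univ_loc A T\<^esub> \<and>
     (\<forall>u\<in>carrier (univ_loc A T). \<exists>t\<in>T. \<exists>a\<in>carrier A.
        u = univ_x A T t \<otimes>\<^bsub>univ_loc A T\<^esub> univ_map A T a)"

definition is_left_Ore_loc ::
  "('a,'m) ring_scheme \<Rightarrow> 'a set \<Rightarrow> ('c,'n) ring_scheme \<Rightarrow> ('a \<Rightarrow> 'c) \<Rightarrow> bool" where
  "is_left_Ore_loc A T B \<sigma> \<longleftrightarrow> ring B \<and> \<sigma> \<in> ring_hom A B \<and>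
     (\<forall>t\<in>T. \<sigma> t \<in> Units B) \<and>
     (\<forall>b\<in>carrier B. \<exists>t\<in>T. \<exists>a\<in>carrier A. b = inv\<^bsub>B\<^esub> (\<sigma> t) \<otimes>\<^bsub>B\<^esub> \<sigma> a) \<and>
     (\<forall>a\<in>carrier A. \<sigma> a = \<zero>\<^bsub>B\<^esub> \<longleftrightarrow> a \<in> ass_l A T)"

end

theory Submission
  imports Defs
begin

definition splits :: "'y list \<Rightarrow> ('y list \<times> 'y list) set" where
  "splits w = {(u,v). u @ v = w}"

lemma splits_eq: "splits w = (\<lambda>i. (take i w, drop i w)) ` {..length w}"
proof -
  have "(u,v) \<in> (\<lambda>i. (take i w, drop i w)) ` {..length w}" if "u @ v = w" for u v
    using that by (intro image_eqI[of _ _ "length u"]) auto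
  then show ?thesis unfolding splits_def by auto
qed

lemma finite_splits[simp]: "finite (splits w)"
  by (simp add: splits_eq)

definition T3 :: "'y list \<Rightarrow> ('y list \<times> 'y list \<times> 'y list) set" where
  "T3 w = {(x,y,z). x @ y @ z = w}"

lemma T3_eq: "T3 w = (\<lambda>(p,q). (fst p, fst q, snd q)) ` Sigma (splits w) (\<lambda>p. splits (snd p))"
proof -
  have "(x,y,z) \<in> (\<lambda>(p,q). (fst p, fst q, snd q)) ` Sigma (splits w) (\<lambda>p. splits (snd p))"
    if "x @ y @ z = w" for x y z
    using that by (intro image_eqI[of _ _ "((x,y@z),(y,z))"]) (auto simp: splits_def)
  then show ?thesis by (auto simp: T3_def splits_def)
qed

lemma finite_T3[simp]: "finite (T3 w)"
  unfolding T3_eq by (rule finite_imageI) auto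

lemma sum_splits_left:
  "(\<Sum>p\<in>splits w. \<Sum>q\<in>splits (fst p). F (fst q) (snd q) (snd p)) = (\<Sum>t\<in>T3 w. F (fst t) (fst (snd t)) (snd (snd t)))"
proof -
  have "(\<Sum>p\<in>splits w. \<Sum>q\<in>splits (fst p). F (fst q) (snd q) (snd p))
      = (\<Sum>(p,q)\<in>Sigma (splits w) (\<lambda>p. splits (fst p)). F (fst q) (snd q) (snd p))"
    by (rule sum.Sigma) auto
  also have "\<dots> = (\<Sum>t\<in>T3 w. F (fst t) (fst (snd t)) (snd (snd t)))"
    by (rule sum.reindex_bij_witness[where i = "\<lambda>t. ((fst t @ fst (snd t), snd (snd t)), (fst t, fst (snd t)))"
          and j = "\<lambda>(p,q). (fst q, snd q, snd p)"])
       (auto simp: splits_def T3_def)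
  finally show ?thesis .
qed

lemma sum_splits_right:
  "(\<Sum>p\<in>splits w. \<Sum>q\<in>splits (snd p). F (fst p) (fst q) (snd q)) = (\<Sum>t\<in>T3 w. F (fst t) (fst (snd t)) (snd (snd t)))"
proof -
  have "(\<Sum>p\<in>splits w. \<Sum>q\<in>splits (snd p). F (fst p) (fst q) (snd q))
      = (\<Sum>(p,q)\<in>Sigma (splits w) (\<lambda>p. splits (snd p)). F (fst p) (fst q) (snd q))"
    by (rule sum.Sigma) auto
  also have "\<dots> = (\<Sum>t\<in>T3 w. F (fst t) (fst (snd t)) (snd (snd t)))"
    by (rule sum.reindex_bij_witness[where i = "\<lambda>t. ((fst t, fst (snd t) @ snd (snd t)), (fst (snd t), snd (snd t)))"
          and j = "\<lambda>(p,q). (fst p, fst q, snd q)"])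
       (auto simp: splits_def T3_def)
  finally show ?thesis .
qed

definition fmul :: "('y list \<Rightarrow> int) \<Rightarrow> ('y list \<Rightarrow> int) \<Rightarrow> ('y list \<Rightarrow> int)" where
  "fmul f g = (\<lambda>w. \<Sum>p\<in>splits w. f (fst p) * g (snd p))"

lemma free_mult_eq: "f \<otimes>\<^bsub>free_ring Y\<^esub> g = fmul f g"
proof -
  have "(\<Sum>(u,v)\<in>{(u,v). u @ v = w}. f u * g v) = (\<Sum>p\<in>splits w. f (fst p) * g (snd p))" for w
    unfolding splits_def by (rule sum.cong) auto
  then show ?thesis by (auto simp: free_ring_def fmul_def)
qed

lemma free_add_eq: "f \<oplus>\<^bsub>free_ring Y\<^esub> g = (\<lambda>w. f w + g w)"
  by (simp add: free_ring_def)
lemma free_zero_eq: "\<zero>\<^bsub>free_ring Y\<^esub> = (\<lambda>w. 0)"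
  by (simp add: free_ring_def)
lemma free_one_eq: "\<one>\<^bsub>free_ring Y\<^esub> = (\<lambda>w. if w = [] then 1 else 0)"
  by (simp add: free_ring_def)
lemma free_carrier_eq: "carrier (free_ring Y) = {f. finite {w. f w \<noteq> 0} \<and> (\<forall>w. f w \<noteq> 0 \<longrightarrow> set w \<subseteq> Y)}"
  by (simp add: free_ring_def)

lemma fmul_assoc: "fmul (fmul f g) h = fmul f (fmul g h)"
proof
  fix w
  have "fmul (fmul f g) h w = (\<Sum>p\<in>splits w. \<Sum>q\<in>splits (fst p). f (fst q) * g (snd q) * h (snd p))"
    by (simp add: fmul_def sum_distrib_right)
  also have "\<dots> = (\<Sum>t\<in>T3 w. f (fst t) * g (fst (snd t)) * h (snd (snd t)))"
    by (rule sum_splits_left)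
  also have "\<dots> = (\<Sum>p\<in>splits w. \<Sum>q\<in>splits (snd p). f (fst p) * g (fst q) * h (snd q))"
    by (rule sum_splits_right[symmetric])
  also have "\<dots> = fmul f (fmul g h) w"
    by (simp add: fmul_def sum_distrib_left mult.assoc)
  finally show "fmul (fmul f g) h w = fmul f (fmul g h) w" .
qed

lemma sum_splits_nil: "(\<Sum>p\<in>splits w. (if fst p = [] then 1 else 0) * c (snd p)) = (c w :: int)"
proof -
  have "(\<Sum>p\<in>splits w. (if fst p = [] then 1 else 0) * c (snd p)) = (\<Sum>p\<in>splits w. (if p = ([],w) then c (snd p) else 0))"
    by (rule sum.cong) (auto simp: splits_def)
  also have "\<dots> = c w" using finite_splits[of w] by (simp add: splits_def)
  finally show ?thesis .
qed

lemma sum_splits_nil2: "(\<Sum>p\<in>splits w. c (fst p) * (if snd p = [] then 1 else 0)) = (c w :: int)"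
proof -
  have "(\<Sum>p\<in>splits w. c (fst p) * (if snd p = [] then 1 else 0)) = (\<Sum>p\<in>splits w. (if p = (w,[]) then c (fst p) else 0))"
    by (rule sum.cong) (auto simp: splits_def)
  also have "\<dots> = c w" using finite_splits[of w] by (simp add: splits_def)
  finally show ?thesis .
qed

lemma fmul_one_left: "fmul (\<lambda>w. if w = [] then 1 else 0) g = g"
proof
  fix w show "fmul (\<lambda>w. if w = [] then 1 else 0) g w = g w"
    unfolding fmul_def using sum_splits_nil[of g w] by simp
qed

lemma fmul_one_right: "fmul g (\<lambda>w. if w = [] then 1 else 0) = g"
proof
  fix w show "fmul g (\<lambda>w. if w = [] then 1 else 0) w = g w"
    unfolding fmul_def using sum_splits_nil2[of g w] by simp
qed

lemma fmul_supp: "{w. fmul f g w \<noteq> 0} \<subseteq> (\<lambda>p. fst p @ snd p) ` ({u. f u \<noteq> 0} \<times> {v. g v \<noteq> 0})"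
proof
  fix w assume "w \<in> {w. fmul f g w \<noteq> 0}"
  then obtain p where "p \<in> splits w" "f (fst p) * g (snd p) \<noteq> 0"
    unfolding fmul_def using sum.not_neutral_contains_not_neutral by blast
  then show "w \<in> (\<lambda>p. fst p @ snd p) ` ({u. f u \<noteq> 0} \<times> {v. g v \<noteq> 0})"
    by (intro image_eqI[of _ _ p]) (auto simp: splits_def)
qed

lemma free_add_closed: "x \<in> carrier (free_ring Y) \<Longrightarrow> y \<in> carrier (free_ring Y) \<Longrightarrow> x \<oplus>\<^bsub>free_ring Y\<^esub> y \<in> carrier (free_ring Y)"
  unfolding free_carrier_eq free_add_eq
proof (intro CollectI conjI allI impI)
  assume x: "x \<in> {f. finite {w. f w \<noteq> 0} \<and> (\<forall>w. f w \<noteq> 0 \<longrightarrow> set w \<subseteq> Y)}"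
     and y: "y \<in> {f. finite {w. f w \<noteq> 0} \<and> (\<forall>w. f w \<noteq> 0 \<longrightarrow> set w \<subseteq> Y)}"
  show "finite {w. x w + y w \<noteq> 0}"
    by (rule finite_subset[of _ "{w. x w \<noteq> 0} \<union> {w. y w \<noteq> 0}"]) (use x y in auto)
  fix w assume "x w + y w \<noteq> 0"
  then have "x w \<noteq> 0 \<or> y w \<noteq> 0" by auto
  then show "set w \<subseteq> Y" using x y by auto
qed

lemma free_mult_closed: "x \<in> carrier (free_ring Y) \<Longrightarrow> y \<in> carrier (free_ring Y) \<Longrightarrow> x \<otimes>\<^bsub>free_ring Y\<^esub> y \<in> carrier (free_ring Y)"
  unfolding free_carrier_eq free_mult_eq
proof (intro CollectI conjI allI impI)
  assume x: "x \<in> {f. finite {w. f w \<noteq> 0} \<and> (\<forall>w. f w \<noteq> 0 \<longrightarrow> set w \<subseteq> Y)}"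
     and y: "y \<in> {f. finite {w. f w \<noteq> 0} \<and> (\<forall>w. f w \<noteq> 0 \<longrightarrow> set w \<subseteq> Y)}"
  show "finite {w. fmul x y w \<noteq> 0}"
    by (rule finite_subset[OF fmul_supp]) (use x y in auto)
  fix w assume "fmul x y w \<noteq> 0"
  then have "w \<in> (\<lambda>p. fst p @ snd p) ` ({u. x u \<noteq> 0} \<times> {v. y v \<noteq> 0})" using fmul_supp by blast
  then obtain u v where "w = u @ v" "x u \<noteq> 0" "y v \<noteq> 0" by auto
  then show "set w \<subseteq> Y" using x y by auto
qed

lemma ring_free_ring: "ring (free_ring Y)"
proof (rule ringI)
  show "abelian_group (free_ring Y)"
  proof (rule abelian_groupI)
    fix x y assume "x \<in> carrier (free_ring Y)" "y \<in> carrier (free_ring Y)"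
    then show "x \<oplus>\<^bsub>free_ring Y\<^esub> y \<in> carrier (free_ring Y)" by (rule free_add_closed)
  next
    show "\<zero>\<^bsub>free_ring Y\<^esub> \<in> carrier (free_ring Y)" by (simp add: free_carrier_eq free_zero_eq)
  next
    fix x assume x: "x \<in> carrier (free_ring Y)"
    show "\<exists>y\<in>carrier (free_ring Y). y \<oplus>\<^bsub>free_ring Y\<^esub> x = \<zero>\<^bsub>free_ring Y\<^esub>"
      using x by (intro bexI[of _ "\<lambda>w. - x w"]) (auto simp: free_carrier_eq free_add_eq free_zero_eq)
  next
    fix x y z show "x \<oplus>\<^bsub>free_ring Y\<^esub> y \<oplus>\<^bsub>free_ring Y\<^esub> z = x \<oplus>\<^bsub>free_ring Y\<^esub> (y \<oplus>\<^bsub>free_ring Y\<^esub> z)"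
      by (simp add: free_add_eq add.assoc)
  next
    fix x y show "x \<oplus>\<^bsub>free_ring Y\<^esub> y = y \<oplus>\<^bsub>free_ring Y\<^esub> x"
      by (simp add: free_add_eq add.commute)
  next
    fix x show "\<zero>\<^bsub>free_ring Y\<^esub> \<oplus>\<^bsub>free_ring Y\<^esub> x = x"
      by (simp add: free_add_eq free_zero_eq)
  qed
next
  show "monoid (free_ring Y)"
  proof (rule monoidI)
    fix x y assume "x \<in> carrier (free_ring Y)" "y \<in> carrier (free_ring Y)"
    then show "x \<otimes>\<^bsub>free_ring Y\<^esub> y \<in> carrier (free_ring Y)" by (rule free_mult_closed)
  next
    show "\<one>\<^bsub>free_ring Y\<^esub> \<in> carrier (free_ring Y)"
      by (simp add: free_carrier_eq free_one_eq)
  next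
    fix x y z show "x \<otimes>\<^bsub>free_ring Y\<^esub> y \<otimes>\<^bsub>free_ring Y\<^esub> z = x \<otimes>\<^bsub>free_ring Y\<^esub> (y \<otimes>\<^bsub>free_ring Y\<^esub> z)"
      by (simp only: free_mult_eq fmul_assoc)
  next
    fix x show "\<one>\<^bsub>free_ring Y\<^esub> \<otimes>\<^bsub>free_ring Y\<^esub> x = x"
      by (simp only: free_mult_eq free_one_eq fmul_one_left)
  next
    fix x show "x \<otimes>\<^bsub>free_ring Y\<^esub> \<one>\<^bsub>free_ring Y\<^esub> = x"
      by (simp only: free_mult_eq free_one_eq fmul_one_right)
  qed
next
  fix x y z
  show "(x \<oplus>\<^bsub>free_ring Y\<^esub> y) \<otimes>\<^bsub>free_ring Y\<^esub> z = x \<otimes>\<^bsub>free_ring Y\<^esub> z \<oplus>\<^bsub>free_ring Y\<^esub> y \<otimes>\<^bsub>free_ring Y\<^esub> z"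
    by (simp only: free_mult_eq free_add_eq fmul_def distrib_right sum.distrib)
  show "z \<otimes>\<^bsub>free_ring Y\<^esub> (x \<oplus>\<^bsub>free_ring Y\<^esub> y) = z \<otimes>\<^bsub>free_ring Y\<^esub> x \<oplus>\<^bsub>free_ring Y\<^esub> z \<otimes>\<^bsub>free_ring Y\<^esub> y"
    by (simp only: free_mult_eq free_add_eq fmul_def distrib_left sum.distrib)
qed


definition mono :: "('b,'n) ring_scheme \<Rightarrow> ('y \<Rightarrow> 'b) \<Rightarrow> 'y list \<Rightarrow> 'b" where
  "mono B \<phi> w = foldr (\<lambda>y acc. \<phi> y \<otimes>\<^bsub>B\<^esub> acc) w \<one>\<^bsub>B\<^esub>"

definition evl :: "('b,'n) ring_scheme \<Rightarrow> ('y \<Rightarrow> 'b) \<Rightarrow> ('y list \<Rightarrow> int) \<Rightarrow> 'b" where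
  "evl B \<phi> f = finsum B (\<lambda>w. add_pow B (f w) (mono B \<phi> w)) {w. f w \<noteq> 0}"

definition cdelta :: "int \<Rightarrow> 'y list \<Rightarrow> ('y list \<Rightarrow> int)" where
  "cdelta c w = (\<lambda>v. if v = w then c else 0)"

lemma cdelta_carrier: "set w \<subseteq> Y \<Longrightarrow> cdelta c w \<in> carrier (free_ring Y)"
  by (auto simp: cdelta_def free_carrier_eq)

lemma free_finsum_apply:
  assumes "finite A" "h \<in> A \<rightarrow> carrier (free_ring Y)"
  shows "finsum (free_ring Y) h A v = (\<Sum>a\<in>A. h a v)"
  using assms
proof (induction A rule: finite_induct)
  case empty
  interpret FFr: ring "free_ring Y" by (rule ring_free_ring)
  show ?case by (simp add: free_zero_eq)
next
  case (insert x F)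
  interpret FFr: ring "free_ring Y" by (rule ring_free_ring)
  have "finsum (free_ring Y) h (insert x F) = h x \<oplus>\<^bsub>free_ring Y\<^esub> finsum (free_ring Y) h F"
    using insert by (intro FFr.finsum_insert) auto
  then show ?case using insert by (simp add: free_add_eq)
qed

lemma free_decomp:
  assumes "f \<in> carrier (free_ring Y)"
  shows "f = finsum (free_ring Y) (\<lambda>w. cdelta (f w) w) {w. f w \<noteq> 0}"
proof
  fix v
  have fin: "finite {w. f w \<noteq> 0}" and Y: "\<And>w. f w \<noteq> 0 \<Longrightarrow> set w \<subseteq> Y"
    using assms by (auto simp: free_carrier_eq)
  have "finsum (free_ring Y) (\<lambda>w. cdelta (f w) w) {w. f w \<noteq> 0} v = (\<Sum>w\<in>{w. f w \<noteq> 0}. cdelta (f w) w v)"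
    by (rule free_finsum_apply) (use fin Y in \<open>auto intro!: cdelta_carrier\<close>)
  also have "\<dots> = f v"
    using fin by (simp add: cdelta_def)
  finally show "f v = finsum (free_ring Y) (\<lambda>w. cdelta (f w) w) {w. f w \<noteq> 0} v" by simp
qed

lemma cdelta_mult: "cdelta a u \<otimes>\<^bsub>free_ring Y\<^esub> cdelta b v = cdelta (a * b) (u @ v)"
proof
  fix w
  have "(\<Sum>p\<in>splits w. cdelta a u (fst p) * cdelta b v (snd p)) = (\<Sum>p\<in>splits w. if p = (u,v) then a * b else 0)"
    by (rule sum.cong) (auto simp: cdelta_def)
  also have "\<dots> = cdelta (a * b) (u @ v) w"
    using finite_splits[of w] by (simp add: cdelta_def) (auto simp: splits_def)
  finally show "(cdelta a u \<otimes>\<^bsub>free_ring Y\<^esub> cdelta b v) w = cdelta (a * b) (u @ v) w"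
    by (simp add: free_mult_eq fmul_def)
qed

lemma free_one_cdelta: "\<one>\<^bsub>free_ring Y\<^esub> = cdelta 1 []"
  by (auto simp: free_one_eq cdelta_def)

lemma letter_cdelta: "letter y = cdelta 1 [y]"
  by (auto simp: letter_def cdelta_def)

locale evl_ctx = B?: ring B for B :: "('b,'n) ring_scheme" (structure) +
  fixes Y :: "'y set" and \<phi> :: "'y \<Rightarrow> 'b"
  assumes phi: "\<And>y. y \<in> Y \<Longrightarrow> \<phi> y \<in> carrier B"
begin

abbreviation "FF \<equiv> free_ring Y"
abbreviation zm :: "int \<Rightarrow> 'b \<Rightarrow> 'b" (infixr "\<star>" 80) where "zm n x \<equiv> add_pow B n x"

lemma zm_0[simp]: "(0::int) \<star> x = \<zero>"
  by (simp add: add_pow_def)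

lemma mono_closed: "set w \<subseteq> Y \<Longrightarrow> mono B \<phi> w \<in> carrier B"
  by (induction w) (auto simp: mono_def phi)

lemma mono_append: "set u \<subseteq> Y \<Longrightarrow> set v \<subseteq> Y \<Longrightarrow> mono B \<phi> (u @ v) = mono B \<phi> u \<otimes> mono B \<phi> v"
proof (induction u)
  case Nil then show ?case using mono_closed[of v] by (simp add: mono_def)
next
  case (Cons a u)
  then have "mono B \<phi> ((a # u) @ v) = \<phi> a \<otimes> (mono B \<phi> u \<otimes> mono B \<phi> v)"
    by (simp add: mono_def)
  also have "\<dots> = mono B \<phi> (a # u) \<otimes> mono B \<phi> v"
    using Cons by (simp add: mono_def m_assoc[symmetric] phi mono_closed[unfolded mono_def])
  finally show ?case .
qed

lemma evl_superset:
  assumes "finite A" "{w. f w \<noteq> 0} \<subseteq> A" "\<And>w. w \<in> A \<Longrightarrow> set w \<subseteq> Y"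
  shows "evl B \<phi> f = finsum B (\<lambda>w. (f w) \<star> mono B \<phi> w) A"
  unfolding evl_def
  by (rule add.finprod_mono_neutral_cong_left) (use assms mono_closed in \<open>auto\<close>)

lemma evl_add:
  assumes f: "f \<in> carrier FF" and g: "g \<in> carrier FF"
  shows "evl B \<phi> (f \<oplus>\<^bsub>FF\<^esub> g) = evl B \<phi> f \<oplus> evl B \<phi> g"
proof -
  let ?A = "{w. f w \<noteq> 0} \<union> {w. g w \<noteq> 0}"
  have fin: "finite ?A" and Y: "\<And>w. w \<in> ?A \<Longrightarrow> set w \<subseteq> Y"
    using f g by (auto simp: free_carrier_eq)
  have "evl B \<phi> (f \<oplus>\<^bsub>FF\<^esub> g) = finsum B (\<lambda>w. (f w + g w) \<star> mono B \<phi> w) ?A"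
    unfolding free_add_eq by (rule evl_superset) (use fin Y in \<open>auto simp: free_add_eq\<close>)
  also have "\<dots> = finsum B (\<lambda>w. (f w) \<star> mono B \<phi> w \<oplus> (g w) \<star> mono B \<phi> w) ?A"
    by (rule add.finprod_cong') (auto simp: add.int_pow_mult Y mono_closed)
  also have "\<dots> = finsum B (\<lambda>w. (f w) \<star> mono B \<phi> w) ?A \<oplus> finsum B (\<lambda>w. (g w) \<star> mono B \<phi> w) ?A"
    by (rule add.finprod_multf) (auto simp: Y mono_closed)
  also have "\<dots> = evl B \<phi> f \<oplus> evl B \<phi> g"
    using evl_superset[of ?A f] evl_superset[of ?A g] fin Y by auto
  finally show ?thesis .
qed

lemma evl_closed: "f \<in> carrier FF \<Longrightarrow> evl B \<phi> f \<in> carrier B"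
  unfolding evl_def by (rule finsum_closed) (auto simp: free_carrier_eq mono_closed)

lemma evl_zero: "evl B \<phi> \<zero>\<^bsub>FF\<^esub> = \<zero>"
  by (simp add: evl_def free_zero_eq)

lemma evl_finsum:
  assumes "finite A" "h \<in> A \<rightarrow> carrier FF"
  shows "evl B \<phi> (finsum FF h A) = finsum B (\<lambda>a. evl B \<phi> (h a)) A"
  using assms
proof (induction A rule: finite_induct)
  case empty
  interpret FFr: ring "free_ring Y" by (rule ring_free_ring)
  show ?case using evl_zero by simp
next
  case (insert x F)
  interpret FFr: ring "free_ring Y" by (rule ring_free_ring)
  have "finsum FF h (insert x F) = h x \<oplus>\<^bsub>FF\<^esub> finsum FF h F"
    using insert by (intro FFr.finsum_insert) auto
  moreover have "finsum FF h F \<in> carrier FF"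
    using insert by (intro FFr.finsum_closed) auto
  ultimately have "evl B \<phi> (finsum FF h (insert x F)) = evl B \<phi> (h x) \<oplus> evl B \<phi> (finsum FF h F)"
    using insert by (simp only: evl_add Pi_iff insert_iff simp_thms)
  also have "\<dots> = evl B \<phi> (h x) \<oplus> finsum B (\<lambda>a. evl B \<phi> (h a)) F"
    using insert by simp
  also have "\<dots> = finsum B (\<lambda>a. evl B \<phi> (h a)) (insert x F)"
    using insert by (intro finsum_insert[symmetric]) (auto intro!: evl_closed)
  finally show ?case .
qed

lemma evl_cdelta: 
  assumes "set w \<subseteq> Y" shows "evl B \<phi> (cdelta c w) = (c) \<star> mono B \<phi> w"
proof -
  have "evl B \<phi> (cdelta c w) = finsum B (\<lambda>v. (cdelta c w v) \<star> mono B \<phi> v) {w}"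
    by (rule evl_superset) (use assms in \<open>auto simp: cdelta_def\<close>)
  also have "\<dots> = (cdelta c w w) \<star> mono B \<phi> w"
    using assms mono_closed[of w] by (subst finsum_insert) auto
  finally show ?thesis by (simp add: cdelta_def)
qed

lemma int_pow_mult_mult:
  assumes "x \<in> carrier B" "y \<in> carrier B"
  shows "((a::int) * b) \<star> (x \<otimes> y) = ((a) \<star> x) \<otimes> ((b) \<star> y)"
proof -
  have byc: "b \<star> y \<in> carrier B" using assms(2) by (rule add.int_pow_closed)
  have "((a) \<star> x) \<otimes> ((b) \<star> y) = (a) \<star> (x \<otimes> ((b) \<star> y))"
    by (rule add_pow_ldistr_int[OF assms(1) byc])
  also have "x \<otimes> ((b) \<star> y) = (b) \<star> (x \<otimes> y)"
    by (rule add_pow_rdistr_int[OF assms])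
  also have "(a) \<star> ((b) \<star> (x \<otimes> y)) = (b * a) \<star> (x \<otimes> y)"
    by (rule add.int_pow_pow) (use assms in simp)
  finally show ?thesis by (simp only: mult.commute)
qed

lemma evl_mult:
  assumes f: "f \<in> carrier FF" and g: "g \<in> carrier FF"
  shows "evl B \<phi> (f \<otimes>\<^bsub>FF\<^esub> g) = evl B \<phi> f \<otimes> evl B \<phi> g"
proof -
  let ?F = "{w. f w \<noteq> 0}" and ?G = "{w. g w \<noteq> 0}"
  have finF: "finite ?F" and YF: "\<And>w. w \<in> ?F \<Longrightarrow> set w \<subseteq> Y"
    using f by (auto simp: free_carrier_eq)
  have finG: "finite ?G" and YG: "\<And>w. w \<in> ?G \<Longrightarrow> set w \<subseteq> Y"
    using g by (auto simp: free_carrier_eq)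
  have YF2: "\<And>w y. f w \<noteq> 0 \<Longrightarrow> y \<in> set w \<Longrightarrow> y \<in> Y" using YF by auto
  have YG2: "\<And>w y. g w \<noteq> 0 \<Longrightarrow> y \<in> set w \<Longrightarrow> y \<in> Y" using YG by auto
  interpret FFr: ring FF by (rule ring_free_ring)
  have cF: "(\<lambda>w. cdelta (f w) w) \<in> ?F \<rightarrow> carrier FF" using YF by (auto intro: YF2 YG2 intro!: cdelta_carrier)
  have cG: "(\<lambda>w. cdelta (g w) w) \<in> ?G \<rightarrow> carrier FF" using YG by (auto intro: YF2 YG2 intro!: cdelta_carrier)
  have "f \<otimes>\<^bsub>FF\<^esub> g = finsum FF (\<lambda>u. cdelta (f u) u) ?F \<otimes>\<^bsub>FF\<^esub> finsum FF (\<lambda>v. cdelta (g v) v) ?G"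
    using free_decomp[OF f] free_decomp[OF g] by simp
  also have "\<dots> = finsum FF (\<lambda>u. cdelta (f u) u \<otimes>\<^bsub>FF\<^esub> finsum FF (\<lambda>v. cdelta (g v) v) ?G) ?F"
    by (rule FFr.finsum_ldistr) (use finF cF cG in auto)
  also have "\<dots> = finsum FF (\<lambda>u. finsum FF (\<lambda>v. cdelta (f u * g v) (u @ v)) ?G) ?F"
  proof (rule FFr.finsum_cong')
    fix u assume u: "u \<in> ?F"
    have "cdelta (f u) u \<otimes>\<^bsub>FF\<^esub> finsum FF (\<lambda>v. cdelta (g v) v) ?G
        = finsum FF (\<lambda>v. cdelta (f u) u \<otimes>\<^bsub>FF\<^esub> cdelta (g v) v) ?G"
      by (rule FFr.finsum_rdistr) (use finG cG u cF in auto)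
    then show "cdelta (f u) u \<otimes>\<^bsub>FF\<^esub> finsum FF (\<lambda>v. cdelta (g v) v) ?G = finsum FF (\<lambda>v. cdelta (f u * g v) (u @ v)) ?G"
      by (simp add: cdelta_mult)
  next
    show "(\<lambda>u. finsum FF (\<lambda>v. cdelta (f u * g v) (u @ v)) ?G) \<in> ?F \<rightarrow> carrier FF"
      using YF YG by (auto intro: YF2 YG2 intro!: FFr.finsum_closed cdelta_carrier)
  qed simp
  finally have fg: "f \<otimes>\<^bsub>FF\<^esub> g = finsum FF (\<lambda>u. finsum FF (\<lambda>v. cdelta (f u * g v) (u @ v)) ?G) ?F" .
  have "evl B \<phi> (f \<otimes>\<^bsub>FF\<^esub> g) = finsum B (\<lambda>u. evl B \<phi> (finsum FF (\<lambda>v. cdelta (f u * g v) (u @ v)) ?G)) ?F"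
    unfolding fg by (rule evl_finsum) (use finF YF YG in \<open>auto intro: YF2 YG2 intro!: FFr.finsum_closed cdelta_carrier\<close>)
  also have "\<dots> = finsum B (\<lambda>u. finsum B (\<lambda>v. ((f u) \<star> mono B \<phi> u) \<otimes> ((g v) \<star> mono B \<phi> v)) ?G) ?F"
  proof (rule add.finprod_cong')
    fix u assume u: "u \<in> ?F"
    have "evl B \<phi> (finsum FF (\<lambda>v. cdelta (f u * g v) (u @ v)) ?G) = finsum B (\<lambda>v. evl B \<phi> (cdelta (f u * g v) (u @ v))) ?G"
      by (rule evl_finsum) (use finG u YF YG in \<open>auto intro: YF2 YG2 intro!: cdelta_carrier\<close>)
    also have "\<dots> = finsum B (\<lambda>v. ((f u) \<star> mono B \<phi> u) \<otimes> ((g v) \<star> mono B \<phi> v)) ?G"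
      by (rule add.finprod_cong') (use u YF YG in \<open>auto intro: YF2 YG2 simp: evl_cdelta mono_append int_pow_mult_mult mono_closed\<close>)
    finally show "evl B \<phi> (finsum FF (\<lambda>v. cdelta (f u * g v) (u @ v)) ?G) = finsum B (\<lambda>v. ((f u) \<star> mono B \<phi> u) \<otimes> ((g v) \<star> mono B \<phi> v)) ?G" .
  next
    show "(\<lambda>u. finsum B (\<lambda>v. ((f u) \<star> mono B \<phi> u) \<otimes> ((g v) \<star> mono B \<phi> v)) ?G) \<in> ?F \<rightarrow> carrier B"
      using YF YG by (auto intro: YF2 YG2 intro!: finsum_closed mono_closed)
  qed simp
  also have "\<dots> = finsum B (\<lambda>u. ((f u) \<star> mono B \<phi> u) \<otimes> evl B \<phi> g) ?F"
  proof (rule add.finprod_cong')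
    fix u assume u: "u \<in> ?F"
    show "finsum B (\<lambda>v. ((f u) \<star> mono B \<phi> u) \<otimes> ((g v) \<star> mono B \<phi> v)) ?G = ((f u) \<star> mono B \<phi> u) \<otimes> evl B \<phi> g"
      unfolding evl_def by (rule finsum_rdistr[symmetric]) (use finG u YF YG in \<open>auto intro: YF2 YG2 intro!: mono_closed\<close>)
  next
    show "(\<lambda>u. ((f u) \<star> mono B \<phi> u) \<otimes> evl B \<phi> g) \<in> ?F \<rightarrow> carrier B"
      using YF g by (auto intro: YF2 YG2 intro!: mono_closed evl_closed)
  qed simp
  also have "\<dots> = evl B \<phi> f \<otimes> evl B \<phi> g"
    unfolding evl_def[of B \<phi> f] by (rule finsum_ldistr[symmetric]) (use finF YF g in \<open>auto intro: YF2 YG2 intro!: mono_closed evl_closed\<close>)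
  finally show ?thesis .
qed

lemma evl_one: "evl B \<phi> \<one>\<^bsub>FF\<^esub> = \<one>"
  unfolding free_one_cdelta by (simp add: evl_cdelta mono_def)

lemma evl_letter: "y \<in> Y \<Longrightarrow> evl B \<phi> (letter y) = \<phi> y"
  unfolding letter_cdelta by (simp add: evl_cdelta mono_def phi)

lemma evl_hom: "evl B \<phi> \<in> ring_hom FF B"
  by (rule ring_hom_memI) (auto simp: evl_closed evl_mult evl_add evl_one)

end


lemma hom_minus:
  assumes "ring R" "ring S" "h \<in> ring_hom R S" "x \<in> carrier R" "y \<in> carrier R"
  shows "h (x \<ominus>\<^bsub>R\<^esub> y) = h x \<ominus>\<^bsub>S\<^esub> h y"
proof -
  interpret hh: ring_hom_ring R S h using assms(1-3) by (rule ring_hom_ringI2)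
  show ?thesis using assms(4,5) by (simp add: a_minus_def)
qed

lemma hom_uminus:
  assumes "ring R" "ring S" "h \<in> ring_hom R S" "x \<in> carrier R"
  shows "h (\<ominus>\<^bsub>R\<^esub> x) = \<ominus>\<^bsub>S\<^esub> h x"
proof -
  interpret hh: ring_hom_ring R S h using assms(1-3) by (rule ring_hom_ringI2)
  show ?thesis using assms(4) by simp
qed

lemma quot_elem:
  assumes "ideal I R" "P1 \<in> carrier (R Quot I)"
  shows "\<exists>x\<in>carrier R. P1 = I +>\<^bsub>R\<^esub> x"
  using assms(2) unfolding FactRing_def A_RCOSETS_def' by auto

lemma quot_zero: "\<zero>\<^bsub>R Quot I\<^esub> = I"
  by (simp add: FactRing_def)

lemma quot_zero_iff:
  assumes "ring R" "ideal I R" "x \<in> carrier R"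
  shows "I +>\<^bsub>R\<^esub> x = \<zero>\<^bsub>R Quot I\<^esub> \<longleftrightarrow> x \<in> I"
proof -
  interpret R: ring R by fact
  have "I +>\<^bsub>R\<^esub> \<zero>\<^bsub>R\<^esub> = I" by (rule R.a_rcos_zero[OF assms(2)]) (simp add: additive_subgroup.zero_closed[OF ideal.axioms(1)[OF assms(2)]])
  moreover have "x \<ominus>\<^bsub>R\<^esub> \<zero>\<^bsub>R\<^esub> = x" using assms(3) by (simp add: a_minus_def)
  ultimately show ?thesis
    using R.quotient_eq_iff_same_a_r_cos[OF assms(2) assms(3) R.zero_closed] by (simp add: quot_zero)
qed

lemma quot_eq_iff:
  assumes "ring R" "ideal I R" "x \<in> carrier R" "y \<in> carrier R"
  shows "I +>\<^bsub>R\<^esub> x = I +>\<^bsub>R\<^esub> y \<longleftrightarrow> x \<ominus>\<^bsub>R\<^esub> y \<in> I"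
  using ring.quotient_eq_iff_same_a_r_cos[OF assms(1,2,3,4)] by simp

lemma quot_lift:
  assumes R: "ring R" and I: "ideal I R" and S: "ring S" and h: "h \<in> ring_hom R S"
    and ker: "\<And>x. x \<in> I \<Longrightarrow> h x = \<zero>\<^bsub>S\<^esub>"
  shows "\<exists>g\<in>ring_hom (R Quot I) S. \<forall>x\<in>carrier R. g (I +>\<^bsub>R\<^esub> x) = h x"
proof -
  interpret R: ring R by fact
  interpret S: ring S by fact
  interpret hh: ring_hom_ring R S h using R S h by (rule ring_hom_ringI2)
  interpret I: ideal I R by fact
  define g where "g P1 = h (SOME x. x \<in> carrier R \<and> P1 = I +>\<^bsub>R\<^esub> x)" for P1
  have wd: "h x = h y" if "x \<in> carrier R" "y \<in> carrier R" "I +>\<^bsub>R\<^esub> x = I +>\<^bsub>R\<^esub> y" for x y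
  proof -
    have "x \<ominus>\<^bsub>R\<^esub> y \<in> I" using quot_eq_iff[OF R I that(1,2)] that(3) by simp
    then have "h (x \<ominus>\<^bsub>R\<^esub> y) = \<zero>\<^bsub>S\<^esub>" by (rule ker)
    then have "h x \<ominus>\<^bsub>S\<^esub> h y = \<zero>\<^bsub>S\<^esub>" using that hom_minus[OF R S h] by simp
    then show ?thesis using that by (simp add: S.r_right_minus_eq)
  qed
  have gx: "g (I +>\<^bsub>R\<^esub> x) = h x" if "x \<in> carrier R" for x
  proof -
    have "\<exists>z. z \<in> carrier R \<and> I +>\<^bsub>R\<^esub> x = I +>\<^bsub>R\<^esub> z" using that by blast
    then have "(SOME z. z \<in> carrier R \<and> I +>\<^bsub>R\<^esub> x = I +>\<^bsub>R\<^esub> z) \<in> carrier R \<and>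
          I +>\<^bsub>R\<^esub> x = I +>\<^bsub>R\<^esub> (SOME z. z \<in> carrier R \<and> I +>\<^bsub>R\<^esub> x = I +>\<^bsub>R\<^esub> z)"
      by (rule someI_ex)
    then show ?thesis unfolding g_def using wd that by metis
  qed
  have pi: "(+>\<^bsub>R\<^esub>) I \<in> ring_hom R (R Quot I)" by (rule I.rcos_ring_hom)
  have "g \<in> ring_hom (R Quot I) S"
  proof (rule ring_hom_memI)
    fix P1 assume "P1 \<in> carrier (R Quot I)"
    then obtain x where "x \<in> carrier R" "P1 = I +>\<^bsub>R\<^esub> x" using quot_elem[OF I] by blast
    then show "g P1 \<in> carrier S" using gx by simp
  next
    fix P1 P2 assume "P1 \<in> carrier (R Quot I)" "P2 \<in> carrier (R Quot I)"
    then obtain x y where xy: "x \<in> carrier R" "P1 = I +>\<^bsub>R\<^esub> x" "y \<in> carrier R" "P2 = I +>\<^bsub>R\<^esub> y"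
      using quot_elem[OF I] by metis
    have "P1 \<otimes>\<^bsub>R Quot I\<^esub> P2 = I +>\<^bsub>R\<^esub> (x \<otimes>\<^bsub>R\<^esub> y)" using xy ring_hom_mult[OF pi] by simp
    then show "g (P1 \<otimes>\<^bsub>R Quot I\<^esub> P2) = g P1 \<otimes>\<^bsub>S\<^esub> g P2" using xy gx by simp
    have "P1 \<oplus>\<^bsub>R Quot I\<^esub> P2 = I +>\<^bsub>R\<^esub> (x \<oplus>\<^bsub>R\<^esub> y)" using xy ring_hom_add[OF pi] by simp
    then show "g (P1 \<oplus>\<^bsub>R Quot I\<^esub> P2) = g P1 \<oplus>\<^bsub>S\<^esub> g P2" using xy gx by simp
  next
    have "\<one>\<^bsub>R Quot I\<^esub> = I +>\<^bsub>R\<^esub> \<one>\<^bsub>R\<^esub>" using ring_hom_one[OF pi] by simp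
    then show "g \<one>\<^bsub>R Quot I\<^esub> = \<one>\<^bsub>S\<^esub>" using gx by simp
  qed
  then show ?thesis using gx by blast
qed

locale uloc = A?: ring A for A :: "('a,'m) ring_scheme" (structure) +
  fixes T :: "'a set"
  assumes T_sub: "T \<subseteq> carrier A"
begin

abbreviation "FL \<equiv> loc_free A T"
abbreviation "IL \<equiv> loc_ideal A T"
abbreviation "U \<equiv> univ_loc A T"

lemma FL_ring: "ring FL" by (rule ring_free_ring)

lemma letter_carrier: "y \<in> loc_alphabet A T \<Longrightarrow> letter y \<in> carrier FL"
  unfolding letter_cdelta by (rule cdelta_carrier) simp

lemma letter_Inl: "a \<in> carrier A \<Longrightarrow> letter (Inl a) \<in> carrier FL"
  by (rule letter_carrier) (simp add: loc_alphabet_def)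

lemma letter_Inr: "t \<in> T \<Longrightarrow> letter (Inr t) \<in> carrier FL"
  by (rule letter_carrier) (simp add: loc_alphabet_def)

lemma rels_sub: "loc_rels A T \<subseteq> carrier FL"
proof -
  interpret F: ring FL by (rule FL_ring)
  show ?thesis unfolding loc_rels_def
    using T_sub by (auto intro!: letter_Inl letter_Inr)
qed

lemma IL_ideal: "ideal IL FL"
  unfolding loc_ideal_def by (rule ring.genideal_ideal[OF FL_ring rels_sub])

lemma rels_in_IL: "x \<in> loc_rels A T \<Longrightarrow> x \<in> IL"
  unfolding loc_ideal_def using ring.genideal_self[OF FL_ring rels_sub] by blast

lemma U_ring: "ring U"
  unfolding univ_loc_def by (rule ideal.quotient_is_ring[OF IL_ideal])

lemma pi_hom: "(+>\<^bsub>FL\<^esub>) IL \<in> ring_hom FL U"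
  unfolding univ_loc_def by (rule ideal.rcos_ring_hom[OF IL_ideal])

lemma pi_eq: "x \<in> carrier FL \<Longrightarrow> y \<in> carrier FL \<Longrightarrow> x \<ominus>\<^bsub>FL\<^esub> y \<in> IL \<Longrightarrow> IL +>\<^bsub>FL\<^esub> x = IL +>\<^bsub>FL\<^esub> y"
  using quot_eq_iff[OF FL_ring IL_ideal] by blast

lemma map_closed: "a \<in> carrier A \<Longrightarrow> univ_map A T a \<in> carrier U"
  unfolding univ_map_def using ring_hom_closed[OF pi_hom letter_Inl] .

lemma x_closed: "t \<in> T \<Longrightarrow> univ_x A T t \<in> carrier U"
  unfolding univ_x_def using ring_hom_closed[OF pi_hom letter_Inr] .

lemma map_hom: "univ_map A T \<in> ring_hom A U"
proof -
  interpret F: ring FL by (rule FL_ring)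
  show ?thesis
  proof (rule ring_hom_memI)
    fix x assume "x \<in> carrier A" then show "univ_map A T x \<in> carrier U" by (rule map_closed)
  next
    fix x y assume xy: "x \<in> carrier A" "y \<in> carrier A"
    have "letter (Inl (x \<otimes> y)) \<ominus>\<^bsub>FL\<^esub> (letter (Inl x) \<otimes>\<^bsub>FL\<^esub> letter (Inl y)) \<in> IL"
      using xy by (intro rels_in_IL) (auto simp: loc_rels_def)
    then have "IL +>\<^bsub>FL\<^esub> letter (Inl (x \<otimes> y)) = IL +>\<^bsub>FL\<^esub> (letter (Inl x) \<otimes>\<^bsub>FL\<^esub> letter (Inl y))"
      using xy by (intro pi_eq) (auto intro!: letter_Inl)
    then show "univ_map A T (x \<otimes> y) = univ_map A T x \<otimes>\<^bsub>U\<^esub> univ_map A T y"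
      unfolding univ_map_def using ring_hom_mult[OF pi_hom letter_Inl letter_Inl] xy by simp
    have "letter (Inl (x \<oplus> y)) \<ominus>\<^bsub>FL\<^esub> (letter (Inl x) \<oplus>\<^bsub>FL\<^esub> letter (Inl y)) \<in> IL"
      using xy by (intro rels_in_IL) (auto simp: loc_rels_def)
    then have "IL +>\<^bsub>FL\<^esub> letter (Inl (x \<oplus> y)) = IL +>\<^bsub>FL\<^esub> (letter (Inl x) \<oplus>\<^bsub>FL\<^esub> letter (Inl y))"
      using xy by (intro pi_eq) (auto intro!: letter_Inl)
    then show "univ_map A T (x \<oplus> y) = univ_map A T x \<oplus>\<^bsub>U\<^esub> univ_map A T y"
      unfolding univ_map_def using ring_hom_add[OF pi_hom letter_Inl letter_Inl] xy by simp
  next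
    have "letter (Inl \<one>) \<ominus>\<^bsub>FL\<^esub> \<one>\<^bsub>FL\<^esub> \<in> IL"
      by (intro rels_in_IL) (auto simp: loc_rels_def)
    then have "IL +>\<^bsub>FL\<^esub> letter (Inl \<one>) = IL +>\<^bsub>FL\<^esub> \<one>\<^bsub>FL\<^esub>"
      by (intro pi_eq) (auto intro!: letter_Inl)
    then show "univ_map A T \<one> = \<one>\<^bsub>U\<^esub>"
      unfolding univ_map_def using ring_hom_one[OF pi_hom] by simp
  qed
qed

lemma x_inv:
  assumes t: "t \<in> T"
  shows "univ_map A T t \<otimes>\<^bsub>U\<^esub> univ_x A T t = \<one>\<^bsub>U\<^esub>" "univ_x A T t \<otimes>\<^bsub>U\<^esub> univ_map A T t = \<one>\<^bsub>U\<^esub>"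
proof -
  interpret F: ring FL by (rule FL_ring)
  have tc: "t \<in> carrier A" using t T_sub by auto
  have "letter (Inl t) \<otimes>\<^bsub>FL\<^esub> letter (Inr t) \<ominus>\<^bsub>FL\<^esub> \<one>\<^bsub>FL\<^esub> \<in> IL"
    using t by (intro rels_in_IL) (auto simp: loc_rels_def)
  then have "IL +>\<^bsub>FL\<^esub> (letter (Inl t) \<otimes>\<^bsub>FL\<^esub> letter (Inr t)) = IL +>\<^bsub>FL\<^esub> \<one>\<^bsub>FL\<^esub>"
    using t tc by (intro pi_eq) (auto intro!: letter_Inl letter_Inr)
  then show "univ_map A T t \<otimes>\<^bsub>U\<^esub> univ_x A T t = \<one>\<^bsub>U\<^esub>"
    unfolding univ_map_def univ_x_def using ring_hom_mult[OF pi_hom letter_Inl[OF tc] letter_Inr[OF t]] ring_hom_one[OF pi_hom] by simp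
  have "letter (Inr t) \<otimes>\<^bsub>FL\<^esub> letter (Inl t) \<ominus>\<^bsub>FL\<^esub> \<one>\<^bsub>FL\<^esub> \<in> IL"
    using t by (intro rels_in_IL) (auto simp: loc_rels_def)
  then have "IL +>\<^bsub>FL\<^esub> (letter (Inr t) \<otimes>\<^bsub>FL\<^esub> letter (Inl t)) = IL +>\<^bsub>FL\<^esub> \<one>\<^bsub>FL\<^esub>"
    using t tc by (intro pi_eq) (auto intro!: letter_Inl letter_Inr)
  then show "univ_x A T t \<otimes>\<^bsub>U\<^esub> univ_map A T t = \<one>\<^bsub>U\<^esub>"
    unfolding univ_map_def univ_x_def using ring_hom_mult[OF pi_hom letter_Inr[OF t] letter_Inl[OF tc]] ring_hom_one[OF pi_hom] by simp
qed

lemma univ_lift: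
  assumes B: "ring B" and f: "f \<in> ring_hom A B" and fT: "\<And>t. t \<in> T \<Longrightarrow> f t \<in> Units B"
  shows "\<exists>g\<in>ring_hom U B. (\<forall>a\<in>carrier A. g (univ_map A T a) = f a) \<and> (\<forall>t\<in>T. g (univ_x A T t) = inv\<^bsub>B\<^esub> (f t))"
proof -
  interpret B: ring B by fact
  interpret F: ring FL by (rule FL_ring)
  define \<phi> where "\<phi> = case_sum f (\<lambda>t. inv\<^bsub>B\<^esub> (f t))"
  interpret E: evl_ctx B "loc_alphabet A T" \<phi>
  proof
    fix y assume "y \<in> loc_alphabet A T"
    then show "\<phi> y \<in> carrier B"
      using fT ring_hom_closed[OF f] by (auto simp: loc_alphabet_def \<phi>_def)
  qed
  let ?h = "evl B \<phi>"
  have h: "?h \<in> ring_hom FL B" by (rule E.evl_hom)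
  interpret hh: ring_hom_ring FL B ?h using F.ring_axioms B h by (rule ring_hom_ringI2)
  have hl: "?h (letter (Inl a)) = f a" if "a \<in> carrier A" for a
    using that E.evl_letter[of "Inl a"] by (simp add: loc_alphabet_def \<phi>_def)
  have hr: "?h (letter (Inr t)) = inv\<^bsub>B\<^esub> (f t)" if "t \<in> T" for t
    using that E.evl_letter[of "Inr t"] by (simp add: loc_alphabet_def \<phi>_def)
  have fc: "f a \<in> carrier B" if "a \<in> carrier A" for a using ring_hom_closed[OF f that] .
  have rels0: "?h x = \<zero>\<^bsub>B\<^esub>" if "x \<in> loc_rels A T" for x
  proof -
    from that consider
      (add) a b where "a \<in> carrier A" "b \<in> carrier A" "x = letter (Inl (a \<oplus> b)) \<ominus>\<^bsub>FL\<^esub> (letter (Inl a) \<oplus>\<^bsub>FL\<^esub> letter (Inl b))"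
    | (mul) a b where "a \<in> carrier A" "b \<in> carrier A" "x = letter (Inl (a \<otimes> b)) \<ominus>\<^bsub>FL\<^esub> (letter (Inl a) \<otimes>\<^bsub>FL\<^esub> letter (Inl b))"
    | (one) "x = letter (Inl \<one>) \<ominus>\<^bsub>FL\<^esub> \<one>\<^bsub>FL\<^esub>"
    | (l) t where "t \<in> T" "x = letter (Inl t) \<otimes>\<^bsub>FL\<^esub> letter (Inr t) \<ominus>\<^bsub>FL\<^esub> \<one>\<^bsub>FL\<^esub>"
    | (r) t where "t \<in> T" "x = letter (Inr t) \<otimes>\<^bsub>FL\<^esub> letter (Inl t) \<ominus>\<^bsub>FL\<^esub> \<one>\<^bsub>FL\<^esub>"
      unfolding loc_rels_def by blast
    then show ?thesis
    proof cases
      case add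
      have "?h x = f (a \<oplus> b) \<ominus>\<^bsub>B\<^esub> (f a \<oplus>\<^bsub>B\<^esub> f b)"
        using add by (simp add: hom_minus[OF F.ring_axioms B h] letter_Inl hl ring_hom_add[OF h])
      then show ?thesis using add by (simp add: ring_hom_add[OF f] fc B.r_right_minus_eq)
    next
      case mul
      have "?h x = f (a \<otimes> b) \<ominus>\<^bsub>B\<^esub> (f a \<otimes>\<^bsub>B\<^esub> f b)"
        using mul by (simp add: hom_minus[OF F.ring_axioms B h] letter_Inl hl ring_hom_mult[OF h])
      then show ?thesis using mul by (simp add: ring_hom_mult[OF f] fc B.r_right_minus_eq)
    next
      case one
      have "?h x = f \<one> \<ominus>\<^bsub>B\<^esub> \<one>\<^bsub>B\<^esub>"
        using one by (simp add: hom_minus[OF F.ring_axioms B h] letter_Inl hl ring_hom_one[OF h])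
      then show ?thesis using one by (simp add: ring_hom_one[OF f] B.r_right_minus_eq)
    next
      case l
      have tc: "t \<in> carrier A" using l T_sub by auto
      have "?h x = f t \<otimes>\<^bsub>B\<^esub> inv\<^bsub>B\<^esub> (f t) \<ominus>\<^bsub>B\<^esub> \<one>\<^bsub>B\<^esub>"
        using l tc by (simp add: hom_minus[OF F.ring_axioms B h] letter_Inl letter_Inr hl hr ring_hom_one[OF h] ring_hom_mult[OF h])
      then show ?thesis using fT[OF l(1)] by (simp add: B.r_right_minus_eq)
    next
      case r
      have tc: "t \<in> carrier A" using r T_sub by auto
      have "?h x = inv\<^bsub>B\<^esub> (f t) \<otimes>\<^bsub>B\<^esub> f t \<ominus>\<^bsub>B\<^esub> \<one>\<^bsub>B\<^esub>"
        using r tc by (simp add: hom_minus[OF F.ring_axioms B h] letter_Inl letter_Inr hl hr ring_hom_one[OF h] ring_hom_mult[OF h])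
      then show ?thesis using fT[OF r(1)] by (simp add: B.r_right_minus_eq)
    qed
  qed
  have IL_ker: "?h x = \<zero>\<^bsub>B\<^esub>" if "x \<in> IL" for x
  proof -
    have "loc_rels A T \<subseteq> a_kernel FL B ?h"
      unfolding a_kernel_def' using rels0 rels_sub by blast
    then have "IL \<subseteq> a_kernel FL B ?h"
      unfolding loc_ideal_def by (rule F.genideal_minimal[OF hh.kernel_is_ideal])
    then show ?thesis using that unfolding a_kernel_def' by blast
  qed
  obtain g where g: "g \<in> ring_hom (FL Quot IL) B" "\<forall>x\<in>carrier FL. g (IL +>\<^bsub>FL\<^esub> x) = ?h x"
    using quot_lift[OF FL_ring IL_ideal B h IL_ker] by blast
  show ?thesis
  proof (intro bexI[of _ g] conjI ballI)
    show "g \<in> ring_hom U B" using g(1) unfolding univ_loc_def .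
  next
    fix a assume a: "a \<in> carrier A"
    show "g (univ_map A T a) = f a" unfolding univ_map_def using g(2) letter_Inl[OF a] hl[OF a] by simp
  next
    fix t assume t: "t \<in> T"
    show "g (univ_x A T t) = inv\<^bsub>B\<^esub> (f t)" unfolding univ_x_def using g(2) letter_Inr[OF t] hr[OF t] by simp
  qed
qed

end


lemma cdelta_add: "cdelta a w \<oplus>\<^bsub>free_ring Y\<^esub> cdelta b w = cdelta (a + b) w"
  by (auto simp: cdelta_def free_add_eq)

lemma cdelta_zero: "cdelta 0 w = \<zero>\<^bsub>free_ring Y\<^esub>"
  by (auto simp: cdelta_def free_zero_eq)

locale uloc_ore = uloc +
  assumes one_T: "\<one> \<in> T"
    and mult_T: "\<And>s t. s \<in> T \<Longrightarrow> t \<in> T \<Longrightarrow> s \<otimes> t \<in> T"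
    and ore: "\<And>s r. s \<in> T \<Longrightarrow> r \<in> carrier A \<Longrightarrow>
        \<exists>s1\<in>T. \<exists>s2\<in>T. \<exists>r1\<in>carrier A. (s1 \<otimes> r \<ominus> r1 \<otimes> s) \<otimes> s2 = \<zero>"
begin

abbreviation "mm \<equiv> univ_map A T"
abbreviation "xx \<equiv> univ_x A T"

lemma Tc: "t \<in> T \<Longrightarrow> t \<in> carrier A" using T_sub by auto

lemma mm_mult: "a \<in> carrier A \<Longrightarrow> b \<in> carrier A \<Longrightarrow> mm (a \<otimes> b) = mm a \<otimes>\<^bsub>U\<^esub> mm b"
  by (rule ring_hom_mult[OF map_hom])
lemma mm_add: "a \<in> carrier A \<Longrightarrow> b \<in> carrier A \<Longrightarrow> mm (a \<oplus> b) = mm a \<oplus>\<^bsub>U\<^esub> mm b"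
  by (rule ring_hom_add[OF map_hom])
lemma mm_one: "mm \<one> = \<one>\<^bsub>U\<^esub>"
  by (rule ring_hom_one[OF map_hom])
lemma mm_zero: "mm \<zero> = \<zero>\<^bsub>U\<^esub>"
  by (rule ring_hom_zero[OF map_hom A.ring_axioms U_ring])
lemma mm_minus: "a \<in> carrier A \<Longrightarrow> b \<in> carrier A \<Longrightarrow> mm (a \<ominus> b) = mm a \<ominus>\<^bsub>U\<^esub> mm b"
  by (rule hom_minus[OF A.ring_axioms U_ring map_hom])
lemma mm_uminus: "a \<in> carrier A \<Longrightarrow> mm (\<ominus> a) = \<ominus>\<^bsub>U\<^esub> mm a"
  by (rule hom_uminus[OF A.ring_axioms U_ring map_hom])

lemma ore_U:
  assumes s: "s \<in> T" and r: "r \<in> carrier A"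
  shows "\<exists>s1\<in>T. \<exists>r1\<in>carrier A. mm s1 \<otimes>\<^bsub>U\<^esub> mm r = mm r1 \<otimes>\<^bsub>U\<^esub> mm s"
proof -
  interpret U: ring U by (rule U_ring)
  obtain s1 s2 r1 where s1: "s1 \<in> T" and s2: "s2 \<in> T" and r1: "r1 \<in> carrier A"
    and e: "(s1 \<otimes> r \<ominus> r1 \<otimes> s) \<otimes> s2 = \<zero>"
    using ore[OF s r] by blast
  have c: "s1 \<otimes> r \<ominus> r1 \<otimes> s \<in> carrier A" using s1 r r1 s by (simp add: Tc)
  have "mm (s1 \<otimes> r \<ominus> r1 \<otimes> s) \<otimes>\<^bsub>U\<^esub> mm s2 = \<zero>\<^bsub>U\<^esub>"
    using e mm_mult[OF c Tc[OF s2]] mm_zero by simp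
  then have "mm (s1 \<otimes> r \<ominus> r1 \<otimes> s) \<otimes>\<^bsub>U\<^esub> mm s2 \<otimes>\<^bsub>U\<^esub> xx s2 = \<zero>\<^bsub>U\<^esub>"
    using x_closed[OF s2] by simp
  then have "mm (s1 \<otimes> r \<ominus> r1 \<otimes> s) = \<zero>\<^bsub>U\<^esub>"
    using x_inv(1)[OF s2] map_closed[OF c] map_closed[OF Tc[OF s2]] x_closed[OF s2]
    by (simp add: U.m_assoc)
  then have "mm s1 \<otimes>\<^bsub>U\<^esub> mm r \<ominus>\<^bsub>U\<^esub> mm r1 \<otimes>\<^bsub>U\<^esub> mm s = \<zero>\<^bsub>U\<^esub>"
    using s1 r r1 s by (simp add: mm_minus mm_mult Tc)
  then have "mm s1 \<otimes>\<^bsub>U\<^esub> mm r = mm r1 \<otimes>\<^bsub>U\<^esub> mm s"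
    using s1 r r1 s map_closed Tc by (simp add: U.r_right_minus_eq)
  then show ?thesis using s1 r1 by blast
qed

lemma swap_U:
  assumes s: "s \<in> T" and r: "r \<in> carrier A"
  shows "\<exists>s1\<in>T. \<exists>r1\<in>carrier A. mm r \<otimes>\<^bsub>U\<^esub> xx s = xx s1 \<otimes>\<^bsub>U\<^esub> mm r1"
proof -
  interpret U: ring U by (rule U_ring)
  obtain s1 r1 where s1: "s1 \<in> T" and r1: "r1 \<in> carrier A" and e: "mm s1 \<otimes>\<^bsub>U\<^esub> mm r = mm r1 \<otimes>\<^bsub>U\<^esub> mm s"
    using ore_U[OF s r] by blast
  note cl = map_closed[OF r] map_closed[OF r1] map_closed[OF Tc[OF s]] map_closed[OF Tc[OF s1]] x_closed[OF s] x_closed[OF s1]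
  have "mm r \<otimes>\<^bsub>U\<^esub> xx s = (xx s1 \<otimes>\<^bsub>U\<^esub> mm s1) \<otimes>\<^bsub>U\<^esub> mm r \<otimes>\<^bsub>U\<^esub> xx s"
    using x_inv(2)[OF s1] cl by simp
  also have "\<dots> = xx s1 \<otimes>\<^bsub>U\<^esub> (mm s1 \<otimes>\<^bsub>U\<^esub> mm r) \<otimes>\<^bsub>U\<^esub> xx s"
    using cl by (simp add: U.m_assoc)
  also have "\<dots> = xx s1 \<otimes>\<^bsub>U\<^esub> mm r1 \<otimes>\<^bsub>U\<^esub> (mm s \<otimes>\<^bsub>U\<^esub> xx s)"
    unfolding e using cl by (simp add: U.m_assoc)
  also have "\<dots> = xx s1 \<otimes>\<^bsub>U\<^esub> mm r1"
    using x_inv(1)[OF s] cl by simp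
  finally show ?thesis using s1 r1 by blast
qed

lemma xx_mult:
  assumes s: "s \<in> T" and t: "t \<in> T"
  shows "xx s \<otimes>\<^bsub>U\<^esub> xx t = xx (t \<otimes> s)"
proof -
  interpret U: ring U by (rule U_ring)
  have ts: "t \<otimes> s \<in> T" using mult_T[OF t s] .
  note cl = map_closed[OF Tc[OF s]] map_closed[OF Tc[OF t]] x_closed[OF s] x_closed[OF t] x_closed[OF ts]
  have mts: "mm (t \<otimes> s) = mm t \<otimes>\<^bsub>U\<^esub> mm s" using mm_mult Tc s t by blast
  have "xx s \<otimes>\<^bsub>U\<^esub> xx t = xx s \<otimes>\<^bsub>U\<^esub> xx t \<otimes>\<^bsub>U\<^esub> (mm (t \<otimes> s) \<otimes>\<^bsub>U\<^esub> xx (t \<otimes> s))"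
    using x_inv(1)[OF ts] cl by simp
  also have "\<dots> = xx s \<otimes>\<^bsub>U\<^esub> (xx t \<otimes>\<^bsub>U\<^esub> mm t) \<otimes>\<^bsub>U\<^esub> mm s \<otimes>\<^bsub>U\<^esub> xx (t \<otimes> s)"
    unfolding mts using cl by (simp add: U.m_assoc)
  also have "\<dots> = xx (t \<otimes> s)"
    using x_inv(2)[OF s] x_inv(2)[OF t] cl by (simp add: U.m_assoc[symmetric])
  finally show ?thesis .
qed

definition GG where "GG = {u. \<exists>t\<in>T. \<exists>a\<in>carrier A. u = xx t \<otimes>\<^bsub>U\<^esub> mm a}"

lemma xx_one: "xx \<one> = \<one>\<^bsub>U\<^esub>"
proof -
  interpret U: ring U by (rule U_ring)
  show ?thesis using x_inv(2)[OF one_T] mm_one x_closed[OF one_T] by simp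
qed

lemma GG_mm: "a \<in> carrier A \<Longrightarrow> mm a \<in> GG"
proof -
  interpret U: ring U by (rule U_ring)
  assume a: "a \<in> carrier A"
  show ?thesis unfolding GG_def using one_T a map_closed[OF a] xx_one
    by (intro CollectI bexI[of _ "\<one>"] bexI[of _ a]) auto
qed

lemma GG_xx: "t \<in> T \<Longrightarrow> xx t \<in> GG"
proof -
  interpret U: ring U by (rule U_ring)
  assume t: "t \<in> T"
  show ?thesis unfolding GG_def using t x_closed[OF t] mm_one
    by (intro CollectI bexI[of _ t] bexI[of _ "\<one>"]) auto
qed

lemma GG_carrier: "u \<in> GG \<Longrightarrow> u \<in> carrier U"
proof -
  interpret U: ring U by (rule U_ring)
  show "u \<in> GG \<Longrightarrow> u \<in> carrier U" unfolding GG_def using x_closed map_closed by auto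
qed

lemma GG_add:
  assumes u: "u \<in> GG" and v: "v \<in> GG"
  shows "u \<oplus>\<^bsub>U\<^esub> v \<in> GG"
proof -
  interpret U: ring U by (rule U_ring)
  obtain s a where s: "s \<in> T" and a: "a \<in> carrier A" and ue: "u = xx s \<otimes>\<^bsub>U\<^esub> mm a" using u unfolding GG_def by blast
  obtain t b where t: "t \<in> T" and b: "b \<in> carrier A" and ve: "v = xx t \<otimes>\<^bsub>U\<^esub> mm b" using v unfolding GG_def by blast
  obtain s1 r1 where s1: "s1 \<in> T" and r1: "r1 \<in> carrier A" and e: "mm s \<otimes>\<^bsub>U\<^esub> xx t = xx s1 \<otimes>\<^bsub>U\<^esub> mm r1"
    using swap_U[OF t Tc[OF s]] by blast
  note cl = map_closed[OF a] map_closed[OF b] map_closed[OF r1] map_closed[OF Tc[OF s]] map_closed[OF Tc[OF s1]]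
    x_closed[OF s] x_closed[OF t] x_closed[OF s1]
  have "u \<oplus>\<^bsub>U\<^esub> v = xx s \<otimes>\<^bsub>U\<^esub> (mm a \<oplus>\<^bsub>U\<^esub> (mm s \<otimes>\<^bsub>U\<^esub> xx t) \<otimes>\<^bsub>U\<^esub> mm b)"
  proof -
    have "xx s \<otimes>\<^bsub>U\<^esub> ((mm s \<otimes>\<^bsub>U\<^esub> xx t) \<otimes>\<^bsub>U\<^esub> mm b) = (xx s \<otimes>\<^bsub>U\<^esub> mm s) \<otimes>\<^bsub>U\<^esub> xx t \<otimes>\<^bsub>U\<^esub> mm b"
      using cl by (simp add: U.m_assoc)
    also have "\<dots> = v" using x_inv(2)[OF s] cl ve by simp
    finally show ?thesis using ue cl by (simp add: U.r_distr)
  qed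
  also have "\<dots> = xx s \<otimes>\<^bsub>U\<^esub> (xx s1 \<otimes>\<^bsub>U\<^esub> (mm s1 \<otimes>\<^bsub>U\<^esub> mm a) \<oplus>\<^bsub>U\<^esub> xx s1 \<otimes>\<^bsub>U\<^esub> mm r1 \<otimes>\<^bsub>U\<^esub> mm b)"
  proof -
    have "xx s1 \<otimes>\<^bsub>U\<^esub> (mm s1 \<otimes>\<^bsub>U\<^esub> mm a) = mm a"
      using x_inv(2)[OF s1] cl by (simp add: U.m_assoc[symmetric])
    then show ?thesis unfolding e by simp
  qed
  also have "\<dots> = (xx s \<otimes>\<^bsub>U\<^esub> xx s1) \<otimes>\<^bsub>U\<^esub> (mm s1 \<otimes>\<^bsub>U\<^esub> mm a \<oplus>\<^bsub>U\<^esub> mm r1 \<otimes>\<^bsub>U\<^esub> mm b)"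
    using cl by (simp add: U.m_assoc U.r_distr)
  also have "\<dots> = xx (s1 \<otimes> s) \<otimes>\<^bsub>U\<^esub> mm (s1 \<otimes> a \<oplus> r1 \<otimes> b)"
    using xx_mult[OF s s1] a b r1 s1 by (simp add: mm_add mm_mult Tc)
  finally have e2: "u \<oplus>\<^bsub>U\<^esub> v = xx (s1 \<otimes> s) \<otimes>\<^bsub>U\<^esub> mm (s1 \<otimes> a \<oplus> r1 \<otimes> b)" .
  have "s1 \<otimes> a \<oplus> r1 \<otimes> b \<in> carrier A" using a b r1 s1 by (simp add: Tc)
  then show ?thesis unfolding GG_def using e2 mult_T[OF s1 s] by blast
qed

lemma GG_mult:
  assumes u: "u \<in> GG" and v: "v \<in> GG"
  shows "u \<otimes>\<^bsub>U\<^esub> v \<in> GG"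
proof -
  interpret U: ring U by (rule U_ring)
  obtain s a where s: "s \<in> T" and a: "a \<in> carrier A" and ue: "u = xx s \<otimes>\<^bsub>U\<^esub> mm a" using u unfolding GG_def by blast
  obtain t b where t: "t \<in> T" and b: "b \<in> carrier A" and ve: "v = xx t \<otimes>\<^bsub>U\<^esub> mm b" using v unfolding GG_def by blast
  obtain s1 r1 where s1: "s1 \<in> T" and r1: "r1 \<in> carrier A" and e: "mm a \<otimes>\<^bsub>U\<^esub> xx t = xx s1 \<otimes>\<^bsub>U\<^esub> mm r1"
    using swap_U[OF t a] by blast
  note cl = map_closed[OF a] map_closed[OF b] map_closed[OF r1]
    x_closed[OF s] x_closed[OF t] x_closed[OF s1]
  have "u \<otimes>\<^bsub>U\<^esub> v = xx s \<otimes>\<^bsub>U\<^esub> (mm a \<otimes>\<^bsub>U\<^esub> xx t) \<otimes>\<^bsub>U\<^esub> mm b"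
    using ue ve cl by (simp add: U.m_assoc)
  also have "\<dots> = (xx s \<otimes>\<^bsub>U\<^esub> xx s1) \<otimes>\<^bsub>U\<^esub> (mm r1 \<otimes>\<^bsub>U\<^esub> mm b)"
    unfolding e using cl by (simp add: U.m_assoc)
  also have "\<dots> = xx (s1 \<otimes> s) \<otimes>\<^bsub>U\<^esub> mm (r1 \<otimes> b)"
    using xx_mult[OF s s1] b r1 by (simp add: mm_mult)
  finally have e2: "u \<otimes>\<^bsub>U\<^esub> v = xx (s1 \<otimes> s) \<otimes>\<^bsub>U\<^esub> mm (r1 \<otimes> b)" .
  have "r1 \<otimes> b \<in> carrier A" using b r1 by simp
  then show ?thesis unfolding GG_def using e2 mult_T[OF s1 s] by blast
qed

lemma GG_uminus:
  assumes u: "u \<in> GG"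
  shows "\<ominus>\<^bsub>U\<^esub> u \<in> GG"
proof -
  interpret U: ring U by (rule U_ring)
  obtain s a where s: "s \<in> T" and a: "a \<in> carrier A" and ue: "u = xx s \<otimes>\<^bsub>U\<^esub> mm a" using u unfolding GG_def by blast
  have "\<ominus>\<^bsub>U\<^esub> u = xx s \<otimes>\<^bsub>U\<^esub> mm (\<ominus> a)"
    using ue a s x_closed map_closed by (simp add: mm_uminus U.r_minus)
  then show ?thesis unfolding GG_def using s a by auto
qed

lemma GG_zero: "\<zero>\<^bsub>U\<^esub> \<in> GG"
  using GG_mm[of \<zero>] mm_zero by simp

lemma GG_finsum:
  assumes "finite B" "h \<in> B \<rightarrow> carrier FL" "\<And>b. b \<in> B \<Longrightarrow> IL +>\<^bsub>FL\<^esub> h b \<in> GG"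
  shows "IL +>\<^bsub>FL\<^esub> finsum FL h B \<in> GG"
  using assms
proof (induction B rule: finite_induct)
  case empty
  interpret F: ring FL by (rule FL_ring)
  show ?case using ring_hom_zero[OF pi_hom F.ring_axioms U_ring] GG_zero by simp
next
  case (insert x B)
  interpret F: ring FL by (rule FL_ring)
  have "finsum FL h (insert x B) = h x \<oplus>\<^bsub>FL\<^esub> finsum FL h B"
    using insert by (intro F.finsum_insert) auto
  moreover have "finsum FL h B \<in> carrier FL"
    using insert by (intro F.finsum_closed) auto
  ultimately have "IL +>\<^bsub>FL\<^esub> finsum FL h (insert x B) = (IL +>\<^bsub>FL\<^esub> h x) \<oplus>\<^bsub>U\<^esub> (IL +>\<^bsub>FL\<^esub> finsum FL h B)"
    using insert ring_hom_add[OF pi_hom] by auto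
  then show ?case using insert GG_add by auto
qed

lemma GG_cdelta1:
  assumes "set w \<subseteq> loc_alphabet A T"
  shows "IL +>\<^bsub>FL\<^esub> cdelta 1 w \<in> GG"
  using assms
proof (induction w)
  case Nil
  show ?case using ring_hom_one[OF pi_hom] GG_mm[OF A.one_closed] mm_one by (simp add: free_one_cdelta[where Y="loc_alphabet A T", symmetric])
next
  case (Cons y w)
  have cd: "cdelta 1 (y # w) = letter y \<otimes>\<^bsub>FL\<^esub> cdelta 1 w"
    using cdelta_mult[where a=1 and u="[y]" and b=1 and v=w and Y="loc_alphabet A T"] by (simp add: letter_cdelta)
  have y: "y \<in> loc_alphabet A T" using Cons by auto
  have ly: "IL +>\<^bsub>FL\<^esub> letter y \<in> GG"
  proof (cases y)
    case (Inl a)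
    then have "a \<in> carrier A" using y by (auto simp: loc_alphabet_def)
    then show ?thesis using GG_mm Inl unfolding univ_map_def by simp
  next
    case (Inr t)
    then have "t \<in> T" using y by (auto simp: loc_alphabet_def)
    then show ?thesis using GG_xx Inr unfolding univ_x_def by simp
  qed
  have "IL +>\<^bsub>FL\<^esub> cdelta 1 (y # w) = (IL +>\<^bsub>FL\<^esub> letter y) \<otimes>\<^bsub>U\<^esub> (IL +>\<^bsub>FL\<^esub> cdelta 1 w)"
    unfolding cd using Cons.prems ring_hom_mult[OF pi_hom letter_carrier[OF y] cdelta_carrier] by simp
  then show ?case using GG_mult ly Cons by simp
qed

lemma GG_cdelta_nat:
  assumes "set w \<subseteq> loc_alphabet A T"
  shows "IL +>\<^bsub>FL\<^esub> cdelta (int n) w \<in> GG"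
proof (induction n)
  case 0
  interpret F: ring FL by (rule FL_ring)
  show ?case using ring_hom_zero[OF pi_hom F.ring_axioms U_ring] GG_zero by (simp add: cdelta_zero[where Y="loc_alphabet A T"])
next
  case (Suc n)
  have "cdelta (int (Suc n)) w = cdelta (int n) w \<oplus>\<^bsub>FL\<^esub> cdelta 1 w" by (simp add: cdelta_add add.commute)
  then have "IL +>\<^bsub>FL\<^esub> cdelta (int (Suc n)) w = (IL +>\<^bsub>FL\<^esub> cdelta (int n) w) \<oplus>\<^bsub>U\<^esub> (IL +>\<^bsub>FL\<^esub> cdelta 1 w)"
    using ring_hom_add[OF pi_hom cdelta_carrier[OF assms] cdelta_carrier[OF assms]] by simp
  then show ?case using GG_add Suc GG_cdelta1[OF assms] by simp
qed

lemma GG_cdelta: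
  assumes w: "set w \<subseteq> loc_alphabet A T"
  shows "IL +>\<^bsub>FL\<^esub> cdelta c w \<in> GG"
proof (cases "c \<ge> 0")
  case True
  then show ?thesis using GG_cdelta_nat[OF w, of "nat c"] by simp
next
  case False
  interpret U: ring U by (rule U_ring)
  interpret F: ring FL by (rule FL_ring)
  define n where "n = nat (- c)"
  have cn: "c = - int n" using False n_def by simp
  have cz: "cdelta c w \<oplus>\<^bsub>FL\<^esub> cdelta (int n) w = cdelta 0 w" using cn by (simp add: cdelta_add)
  have "(IL +>\<^bsub>FL\<^esub> cdelta c w) \<oplus>\<^bsub>U\<^esub> (IL +>\<^bsub>FL\<^esub> cdelta (int n) w) = IL +>\<^bsub>FL\<^esub> cdelta 0 w"
    using ring_hom_add[OF pi_hom cdelta_carrier[OF w] cdelta_carrier[OF w], of c "int n", symmetric] unfolding cz .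
  also have "\<dots> = \<zero>\<^bsub>U\<^esub>" using ring_hom_zero[OF pi_hom F.ring_axioms U_ring] by (simp add: cdelta_zero[where Y="loc_alphabet A T"])
  finally have "IL +>\<^bsub>FL\<^esub> cdelta c w = \<ominus>\<^bsub>U\<^esub> (IL +>\<^bsub>FL\<^esub> cdelta (int n) w)"
    using ring_hom_closed[OF pi_hom cdelta_carrier[OF w]] by (simp add: U.minus_equality)
  then show ?thesis using GG_uminus GG_cdelta_nat[OF w] by simp
qed

lemma U_GG: "u \<in> carrier U \<Longrightarrow> u \<in> GG"
proof -
  assume u: "u \<in> carrier U"
  then obtain x where x: "x \<in> carrier FL" "u = IL +>\<^bsub>FL\<^esub> x"
    using quot_elem[OF IL_ideal] unfolding univ_loc_def by blast
  have fin: "finite {w. x w \<noteq> 0}" and Y: "\<And>w. x w \<noteq> 0 \<Longrightarrow> set w \<subseteq> loc_alphabet A T"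
    using x(1) by (auto simp: free_carrier_eq)
  have "IL +>\<^bsub>FL\<^esub> finsum FL (\<lambda>w. cdelta (x w) w) {w. x w \<noteq> 0} \<in> GG"
    using fin Y by (intro GG_finsum) (auto intro!: cdelta_carrier GG_cdelta)
  then show ?thesis using free_decomp[OF x(1)] x(2) by simp
qed

lemma U_form: "u \<in> carrier U \<Longrightarrow> \<exists>t\<in>T. \<exists>a\<in>carrier A. u = xx t \<otimes>\<^bsub>U\<^esub> mm a"
  using U_GG unfolding GG_def by blast

end


locale ore_reg = A?: ring A for A :: "('a,'m) ring_scheme" (structure) +
  fixes T :: "'a set"
  assumes T_sub: "T \<subseteq> carrier A"
    and one_T: "\<one> \<in> T"
    and mult_T: "\<And>s t. s \<in> T \<Longrightarrow> t \<in> T \<Longrightarrow> s \<otimes> t \<in> T"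
    and ore: "\<And>r s. r \<in> carrier A \<Longrightarrow> s \<in> T \<Longrightarrow> \<exists>s'\<in>T. \<exists>r'\<in>carrier A. s' \<otimes> r = r' \<otimes> s"
    and regR: "\<And>x t. x \<in> carrier A \<Longrightarrow> t \<in> T \<Longrightarrow> x \<otimes> t = \<zero> \<Longrightarrow> x = \<zero>"
    and regL: "\<And>x t. x \<in> carrier A \<Longrightarrow> t \<in> T \<Longrightarrow> t \<otimes> x = \<zero> \<Longrightarrow> x = \<zero>"
begin

lemma Tc[simp]: "t \<in> T \<Longrightarrow> t \<in> carrier A" using T_sub by auto

lemma cR: assumes "x \<in> carrier A" "y \<in> carrier A" "t \<in> T" "x \<otimes> t = y \<otimes> t" shows "x = y"
proof -
  have "(x \<ominus> y) \<otimes> t = x \<otimes> t \<ominus> y \<otimes> t" using assms by (simp add: a_minus_def l_distr l_minus)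
  also have "\<dots> = \<zero>" using assms by simp
  finally have z: "(x \<ominus> y) \<otimes> t = \<zero>" .
  have "x \<ominus> y = \<zero>" using regR[OF _ _ z] assms by simp
  then show ?thesis using assms by (simp add: r_right_minus_eq)
qed

lemma cL: assumes "x \<in> carrier A" "y \<in> carrier A" "t \<in> T" "t \<otimes> x = t \<otimes> y" shows "x = y"
proof -
  have "t \<otimes> (x \<ominus> y) = t \<otimes> x \<ominus> t \<otimes> y" using assms by (simp add: a_minus_def r_distr r_minus)
  also have "\<dots> = \<zero>" using assms by simp
  finally have z: "t \<otimes> (x \<ominus> y) = \<zero>" .
  have "x \<ominus> y = \<zero>" using regL[OF _ _ z] assms by simp
  then show ?thesis using assms by (simp add: r_right_minus_eq)
qed

definition PP where "PP = T \<times> carrier A"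

definition eqv :: "'a \<times> 'a \<Rightarrow> 'a \<times> 'a \<Rightarrow> bool" where
  "eqv p q \<longleftrightarrow> (\<forall>c\<in>carrier A. \<forall>c'\<in>carrier A. c \<otimes> fst p = c' \<otimes> fst q \<longrightarrow> c \<otimes> snd p = c' \<otimes> snd q)"

lemma eqvI:
  assumes "\<And>c c'. c \<in> carrier A \<Longrightarrow> c' \<in> carrier A \<Longrightarrow> c \<otimes> t = c' \<otimes> t' \<Longrightarrow> c \<otimes> a = c' \<otimes> a'"
  shows "eqv (t,a) (t',a')"
  using assms unfolding eqv_def by auto

lemma eqvD:
  assumes "eqv (t,a) (t',a')" "c \<in> carrier A" "c' \<in> carrier A" "c \<otimes> t = c' \<otimes> t'"
  shows "c \<otimes> a = c' \<otimes> a'"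
  using assms unfolding eqv_def by auto

lemma eqv_refl: assumes "t \<in> T" "a \<in> carrier A" shows "eqv (t,a) (t,a)"
proof (rule eqvI)
  fix c c' assume "c \<in> carrier A" "c' \<in> carrier A" "c \<otimes> t = c' \<otimes> t"
  then have "c = c'" using cR assms by blast
  then show "c \<otimes> a = c' \<otimes> a" by simp
qed

lemma eqv_sym: "eqv p q \<Longrightarrow> eqv q p"
  unfolding eqv_def by metis

lemma eqv_trans:
  assumes t: "t \<in> T" "t' \<in> T" "t'' \<in> T" and a: "a \<in> carrier A" "a' \<in> carrier A" "a'' \<in> carrier A"
    and e1: "eqv (t,a) (t',a')" and e2: "eqv (t',a') (t'',a'')"
  shows "eqv (t,a) (t'',a'')"
proof (rule eqvI)
  fix c c'' assume c: "c \<in> carrier A" "c'' \<in> carrier A" and h: "c \<otimes> t = c'' \<otimes> t''"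
  obtain v d where v: "v \<in> T" and d: "d \<in> carrier A" and vd: "v \<otimes> (c \<otimes> t) = d \<otimes> t'"
    using ore[of "c \<otimes> t" t'] t c by auto
  have 1: "(v \<otimes> c) \<otimes> a = d \<otimes> a'"
    by (rule eqvD[OF e1]) (use v d c t vd in \<open>simp_all add: m_assoc\<close>)
  have 2: "d \<otimes> a' = (v \<otimes> c'') \<otimes> a''"
    by (rule eqvD[OF e2]) (use v d c t vd h in \<open>simp_all add: m_assoc\<close>)
  have "v \<otimes> (c \<otimes> a) = v \<otimes> (c'' \<otimes> a'')"
    using 1 2 v c a by (simp add: m_assoc)
  then show "c \<otimes> a = c'' \<otimes> a''" using cL[of "c \<otimes> a" "c'' \<otimes> a''" v] v c a by simp
qed

definition orew :: "'a \<Rightarrow> 'a \<Rightarrow> 'a \<times> 'a" where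
  "orew r s = (SOME p. fst p \<in> T \<and> snd p \<in> carrier A \<and> fst p \<otimes> r = snd p \<otimes> s)"

lemma orew:
  assumes "r \<in> carrier A" "s \<in> T"
  shows "fst (orew r s) \<in> T" "snd (orew r s) \<in> carrier A" "fst (orew r s) \<otimes> r = snd (orew r s) \<otimes> s"
proof -
  have "\<exists>p. fst p \<in> T \<and> snd p \<in> carrier A \<and> fst p \<otimes> r = snd p \<otimes> s"
    using ore[OF assms] by auto
  then have "fst (orew r s) \<in> T \<and> snd (orew r s) \<in> carrier A \<and> fst (orew r s) \<otimes> r = snd (orew r s) \<otimes> s"
    unfolding orew_def by (rule someI_ex)
  then show "fst (orew r s) \<in> T" "snd (orew r s) \<in> carrier A" "fst (orew r s) \<otimes> r = snd (orew r s) \<otimes> s"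
    by auto
qed

definition padd :: "'a \<times> 'a \<Rightarrow> 'a \<times> 'a \<Rightarrow> 'a \<times> 'a" where
  "padd p q = (let u = fst (orew (fst p) (fst q)); r = snd (orew (fst p) (fst q))
     in (u \<otimes> fst p, u \<otimes> snd p \<oplus> r \<otimes> snd q))"

definition pmul :: "'a \<times> 'a \<Rightarrow> 'a \<times> 'a \<Rightarrow> 'a \<times> 'a" where
  "pmul p q = (let u = fst (orew (snd p) (fst q)); r = snd (orew (snd p) (fst q))
     in (u \<otimes> fst p, r \<otimes> snd q))"

lemma padd_ex:
  assumes "t \<in> T" "t' \<in> T" "a \<in> carrier A" "b \<in> carrier A"
  obtains u r where "u \<in> T" "r \<in> carrier A" "u \<otimes> t = r \<otimes> t'" "padd (t,a) (t',b) = (u \<otimes> t, u \<otimes> a \<oplus> r \<otimes> b)"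
  using orew[of t t'] assms unfolding padd_def Let_def by auto

lemma pmul_ex:
  assumes "t \<in> T" "t' \<in> T" "a \<in> carrier A" "b \<in> carrier A"
  obtains u r where "u \<in> T" "r \<in> carrier A" "u \<otimes> a = r \<otimes> t'" "pmul (t,a) (t',b) = (u \<otimes> t, r \<otimes> b)"
  using orew[of a t'] assms unfolding pmul_def Let_def by auto


lemma padd_cong:
  assumes T: "t \<in> T" "t' \<in> T" "t1 \<in> T" "t1' \<in> T" "u \<in> T" "u1 \<in> T"
    and C: "a \<in> carrier A" "b \<in> carrier A" "a1 \<in> carrier A" "b1 \<in> carrier A" "r \<in> carrier A" "r1 \<in> carrier A"
    and e: "u \<otimes> t = r \<otimes> t'" and e1: "u1 \<otimes> t1 = r1 \<otimes> t1'"
    and q1: "eqv (t,a) (t1,a1)" and q2: "eqv (t',b) (t1',b1)"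
  shows "eqv (u \<otimes> t, u \<otimes> a \<oplus> r \<otimes> b) (u1 \<otimes> t1, u1 \<otimes> a1 \<oplus> r1 \<otimes> b1)"
proof (rule eqvI)
  fix c c' assume c: "c \<in> carrier A" "c' \<in> carrier A" and h: "c \<otimes> (u \<otimes> t) = c' \<otimes> (u1 \<otimes> t1)"
  have E1: "(c \<otimes> u) \<otimes> a = (c' \<otimes> u1) \<otimes> a1"
    by (rule eqvD[OF q1]) (use T C c h in \<open>simp_all add: m_assoc\<close>)
  have E2: "(c \<otimes> r) \<otimes> b = (c' \<otimes> r1) \<otimes> b1"
    by (rule eqvD[OF q2]) (use T C c h in \<open>simp_all add: m_assoc e[symmetric] e1[symmetric]\<close>)
  show "c \<otimes> (u \<otimes> a \<oplus> r \<otimes> b) = c' \<otimes> (u1 \<otimes> a1 \<oplus> r1 \<otimes> b1)"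
    using E1 E2 T C c by (simp add: r_distr m_assoc)
qed

lemma pmul_cong:
  assumes T: "t \<in> T" "t' \<in> T" "t1 \<in> T" "t1' \<in> T" "u \<in> T" "u1 \<in> T"
    and C: "a \<in> carrier A" "b \<in> carrier A" "a1 \<in> carrier A" "b1 \<in> carrier A" "r \<in> carrier A" "r1 \<in> carrier A"
    and e: "u \<otimes> a = r \<otimes> t'" and e1: "u1 \<otimes> a1 = r1 \<otimes> t1'"
    and q1: "eqv (t,a) (t1,a1)" and q2: "eqv (t',b) (t1',b1)"
  shows "eqv (u \<otimes> t, r \<otimes> b) (u1 \<otimes> t1, r1 \<otimes> b1)"
proof (rule eqvI)
  fix c c' assume c: "c \<in> carrier A" "c' \<in> carrier A" and h: "c \<otimes> (u \<otimes> t) = c' \<otimes> (u1 \<otimes> t1)"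
  have E1: "(c \<otimes> u) \<otimes> a = (c' \<otimes> u1) \<otimes> a1"
    by (rule eqvD[OF q1]) (use T C c h in \<open>simp_all add: m_assoc\<close>)
  have E1': "c \<otimes> (r \<otimes> t') = c' \<otimes> (r1 \<otimes> t1')"
    using E1 T C c by (simp add: m_assoc e e1)
  have E2: "(c \<otimes> r) \<otimes> b = (c' \<otimes> r1) \<otimes> b1"
    by (rule eqvD[OF q2]) (use T C c E1' in \<open>simp_all add: m_assoc\<close>)
  show "c \<otimes> (r \<otimes> b) = c' \<otimes> (r1 \<otimes> b1)"
    using E2 T C c by (simp add: m_assoc)
qed

lemma padd_comm:
  assumes T: "t \<in> T" "t' \<in> T" "u \<in> T" "u' \<in> T"
    and C: "a \<in> carrier A" "b \<in> carrier A" "r \<in> carrier A" "r' \<in> carrier A"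
    and e: "u \<otimes> t = r \<otimes> t'" and e': "u' \<otimes> t' = r' \<otimes> t"
  shows "eqv (u \<otimes> t, u \<otimes> a \<oplus> r \<otimes> b) (u' \<otimes> t', u' \<otimes> b \<oplus> r' \<otimes> a)"
proof (rule eqvI)
  fix c c' assume c: "c \<in> carrier A" "c' \<in> carrier A" and h: "c \<otimes> (u \<otimes> t) = c' \<otimes> (u' \<otimes> t')"
  have 1: "c \<otimes> r = c' \<otimes> u'"
    by (rule cR[where t=t']) (use T C c h in \<open>simp_all add: m_assoc e[symmetric]\<close>)
  have 2: "c' \<otimes> r' = c \<otimes> u"
    by (rule cR[where t=t]) (use T C c h in \<open>simp_all add: m_assoc e'[symmetric]\<close>)
  have "c \<otimes> (u \<otimes> a \<oplus> r \<otimes> b) = (c \<otimes> u) \<otimes> a \<oplus> (c \<otimes> r) \<otimes> b"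
    using T C c by (simp add: r_distr m_assoc)
  also have "\<dots> = (c' \<otimes> u') \<otimes> b \<oplus> (c' \<otimes> r') \<otimes> a"
    using 1 2 T C c by (simp add: a_comm)
  also have "\<dots> = c' \<otimes> (u' \<otimes> b \<oplus> r' \<otimes> a)"
    using T C c by (simp add: r_distr m_assoc)
  finally show "c \<otimes> (u \<otimes> a \<oplus> r \<otimes> b) = c' \<otimes> (u' \<otimes> b \<oplus> r' \<otimes> a)" .
qed

lemma padd_assoc:
  assumes T: "t1 \<in> T" "t2 \<in> T" "t3 \<in> T" "u \<in> T" "v \<in> T" "u' \<in> T" "v' \<in> T"
    and C: "a1 \<in> carrier A" "a2 \<in> carrier A" "a3 \<in> carrier A" "r \<in> carrier A" "q \<in> carrier A" "r' \<in> carrier A" "q' \<in> carrier A"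
    and e1: "u \<otimes> t1 = r \<otimes> t2" and e2: "v \<otimes> (u \<otimes> t1) = q \<otimes> t3"
    and e3: "u' \<otimes> t2 = r' \<otimes> t3" and e4: "v' \<otimes> t1 = q' \<otimes> (u' \<otimes> t2)"
  shows "eqv (v \<otimes> (u \<otimes> t1), v \<otimes> (u \<otimes> a1 \<oplus> r \<otimes> a2) \<oplus> q \<otimes> a3)
             (v' \<otimes> t1, v' \<otimes> a1 \<oplus> q' \<otimes> (u' \<otimes> a2 \<oplus> r' \<otimes> a3))"
proof (rule eqvI)
  fix c c' assume c: "c \<in> carrier A" "c' \<in> carrier A" and h: "c \<otimes> (v \<otimes> (u \<otimes> t1)) = c' \<otimes> (v' \<otimes> t1)"
  have 1: "c \<otimes> (v \<otimes> u) = c' \<otimes> v'"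
    by (rule cR[where t=t1]) (use T C c h in \<open>simp_all add: m_assoc\<close>)
  have h2: "c \<otimes> (v \<otimes> (r \<otimes> t2)) = c' \<otimes> (q' \<otimes> (u' \<otimes> t2))"
    using h T C c by (simp add: e1[symmetric] e4[symmetric])
  have 2: "c \<otimes> (v \<otimes> r) = c' \<otimes> (q' \<otimes> u')"
    by (rule cR[where t=t2]) (use T C c h2 in \<open>simp_all add: m_assoc\<close>)
  have h3: "c \<otimes> (q \<otimes> t3) = c' \<otimes> (q' \<otimes> (r' \<otimes> t3))"
    using h T C c by (simp add: e2[symmetric] e3[symmetric] e4[symmetric])
  have 3: "c \<otimes> q = c' \<otimes> (q' \<otimes> r')"
    by (rule cR[where t=t3]) (use T C c h3 in \<open>simp_all add: m_assoc\<close>)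
  have "c \<otimes> (v \<otimes> (u \<otimes> a1 \<oplus> r \<otimes> a2) \<oplus> q \<otimes> a3) = (c \<otimes> (v \<otimes> u)) \<otimes> a1 \<oplus> (c \<otimes> (v \<otimes> r)) \<otimes> a2 \<oplus> (c \<otimes> q) \<otimes> a3"
    using T C c by (simp add: r_distr m_assoc)
  also have "\<dots> = (c' \<otimes> v') \<otimes> a1 \<oplus> (c' \<otimes> (q' \<otimes> u')) \<otimes> a2 \<oplus> (c' \<otimes> (q' \<otimes> r')) \<otimes> a3"
    unfolding 1 2 3 ..
  also have "\<dots> = c' \<otimes> (v' \<otimes> a1 \<oplus> q' \<otimes> (u' \<otimes> a2 \<oplus> r' \<otimes> a3))"
    using T C c by (simp add: r_distr m_assoc a_assoc)
  finally show "c \<otimes> (v \<otimes> (u \<otimes> a1 \<oplus> r \<otimes> a2) \<oplus> q \<otimes> a3) = c' \<otimes> (v' \<otimes> a1 \<oplus> q' \<otimes> (u' \<otimes> a2 \<oplus> r' \<otimes> a3))" .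
qed

lemma padd_zero:
  assumes T: "t \<in> T" "u \<in> T" and C: "a \<in> carrier A" "r \<in> carrier A"
    and e: "u \<otimes> \<one> = r \<otimes> t"
  shows "eqv (u \<otimes> \<one>, u \<otimes> \<zero> \<oplus> r \<otimes> a) (t, a)"
proof (rule eqvI)
  fix c c' assume c: "c \<in> carrier A" "c' \<in> carrier A" and h: "c \<otimes> (u \<otimes> \<one>) = c' \<otimes> t"
  have 1: "c \<otimes> r = c'"
    by (rule cR[where t=t]) (use T C c h in \<open>simp_all add: m_assoc e[symmetric]\<close>)
  show "c \<otimes> (u \<otimes> \<zero> \<oplus> r \<otimes> a) = c' \<otimes> a"
    using 1 T C c by (simp add: m_assoc[symmetric])
qed

lemma padd_neg:
  assumes T: "t \<in> T" "u \<in> T" and C: "a \<in> carrier A" "r \<in> carrier A"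
    and e: "u \<otimes> t = r \<otimes> t"
  shows "eqv (u \<otimes> t, u \<otimes> (\<ominus> a) \<oplus> r \<otimes> a) (\<one>, \<zero>)"
proof (rule eqvI)
  fix c c' assume c: "c \<in> carrier A" "c' \<in> carrier A"
  have "u = r" using cR[OF _ _ T(1) e] T C by simp
  then show "c \<otimes> (u \<otimes> (\<ominus> a) \<oplus> r \<otimes> a) = c' \<otimes> \<zero>"
    using T C c by (simp add: r_minus l_neg)
qed

lemma pmul_assoc:
  assumes T: "t1 \<in> T" "t2 \<in> T" "t3 \<in> T" "u \<in> T" "u' \<in> T" "v \<in> T" "v' \<in> T"
    and C: "a1 \<in> carrier A" "a2 \<in> carrier A" "a3 \<in> carrier A" "r \<in> carrier A" "r' \<in> carrier A" "p \<in> carrier A" "p' \<in> carrier A"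
    and e1: "u \<otimes> a1 = r \<otimes> t2" and e2: "u' \<otimes> (r \<otimes> a2) = r' \<otimes> t3"
    and e3: "v \<otimes> a2 = p \<otimes> t3" and e4: "v' \<otimes> a1 = p' \<otimes> (v \<otimes> t2)"
  shows "eqv (u' \<otimes> (u \<otimes> t1), r' \<otimes> a3) (v' \<otimes> t1, p' \<otimes> (p \<otimes> a3))"
proof (rule eqvI)
  fix c c' assume c: "c \<in> carrier A" "c' \<in> carrier A" and h: "c \<otimes> (u' \<otimes> (u \<otimes> t1)) = c' \<otimes> (v' \<otimes> t1)"
  have 1: "c \<otimes> (u' \<otimes> u) = c' \<otimes> v'"
    by (rule cR[where t=t1]) (use T C c h in \<open>simp_all add: m_assoc\<close>)
  have h2: "c \<otimes> (u' \<otimes> (r \<otimes> t2)) = c' \<otimes> (p' \<otimes> (v \<otimes> t2))"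
  proof -
    have "c \<otimes> (u' \<otimes> (r \<otimes> t2)) = (c \<otimes> (u' \<otimes> u)) \<otimes> a1" using T C c by (simp add: m_assoc e1)
    also have "\<dots> = c' \<otimes> (v' \<otimes> a1)" using 1 T C c by (simp add: m_assoc)
    finally show ?thesis by (simp add: e4)
  qed
  have 2: "c \<otimes> (u' \<otimes> r) = c' \<otimes> (p' \<otimes> v)"
    by (rule cR[where t=t2]) (use T C c h2 in \<open>simp_all add: m_assoc\<close>)
  have h3: "c \<otimes> (r' \<otimes> t3) = c' \<otimes> (p' \<otimes> (p \<otimes> t3))"
  proof -
    have "c \<otimes> (r' \<otimes> t3) = (c \<otimes> (u' \<otimes> r)) \<otimes> a2" using T C c by (simp add: m_assoc e2[symmetric])
    also have "\<dots> = c' \<otimes> (p' \<otimes> (v \<otimes> a2))" using 2 T C c by (simp add: m_assoc)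
    finally show ?thesis by (simp add: e3)
  qed
  have 3: "c \<otimes> r' = c' \<otimes> (p' \<otimes> p)"
    by (rule cR[where t=t3]) (use T C c h3 in \<open>simp_all add: m_assoc\<close>)
  show "c \<otimes> (r' \<otimes> a3) = c' \<otimes> (p' \<otimes> (p \<otimes> a3))"
    using 3 T C c by (simp add: m_assoc[symmetric])
qed

lemma pmul_one_r:
  assumes T: "t \<in> T" "u \<in> T" and C: "a \<in> carrier A" "r \<in> carrier A"
    and e: "u \<otimes> a = r \<otimes> \<one>"
  shows "eqv (u \<otimes> t, r \<otimes> \<one>) (t, a)"
proof (rule eqvI)
  fix c c' assume c: "c \<in> carrier A" "c' \<in> carrier A" and h: "c \<otimes> (u \<otimes> t) = c' \<otimes> t"
  have 1: "c \<otimes> u = c'"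
    by (rule cR[where t=t]) (use T C c h in \<open>simp_all add: m_assoc\<close>)
  show "c \<otimes> (r \<otimes> \<one>) = c' \<otimes> a"
    using 1 T C c by (simp add: e[symmetric] m_assoc[symmetric])
qed

lemma pdistr_l:
  assumes T: "t \<in> T" "t1 \<in> T" "t2 \<in> T" "u \<in> T" "v \<in> T" "v1 \<in> T" "v2 \<in> T" "z \<in> T"
    and C: "a \<in> carrier A" "b1 \<in> carrier A" "b2 \<in> carrier A" "r \<in> carrier A" "w \<in> carrier A"
       "w1 \<in> carrier A" "w2 \<in> carrier A" "y \<in> carrier A"
    and e1: "u \<otimes> t1 = r \<otimes> t2" and e2: "v \<otimes> a = w \<otimes> (u \<otimes> t1)"
    and e3: "v1 \<otimes> a = w1 \<otimes> t1" and e4: "v2 \<otimes> a = w2 \<otimes> t2"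
    and e5: "z \<otimes> (v1 \<otimes> t) = y \<otimes> (v2 \<otimes> t)"
  shows "eqv (v \<otimes> t, w \<otimes> (u \<otimes> b1 \<oplus> r \<otimes> b2)) (z \<otimes> (v1 \<otimes> t), z \<otimes> (w1 \<otimes> b1) \<oplus> y \<otimes> (w2 \<otimes> b2))"
proof (rule eqvI)
  fix c c' assume c: "c \<in> carrier A" "c' \<in> carrier A" and h: "c \<otimes> (v \<otimes> t) = c' \<otimes> (z \<otimes> (v1 \<otimes> t))"
  have 1: "c \<otimes> v = c' \<otimes> (z \<otimes> v1)"
    by (rule cR[where t=t]) (use T C c h in \<open>simp_all add: m_assoc\<close>)
  have zy: "z \<otimes> v1 = y \<otimes> v2"
    by (rule cR[where t=t]) (use T C c e5 in \<open>simp_all add: m_assoc\<close>)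
  have h2: "c \<otimes> (w \<otimes> (u \<otimes> t1)) = c' \<otimes> (z \<otimes> (w1 \<otimes> t1))"
  proof -
    have "c \<otimes> (w \<otimes> (u \<otimes> t1)) = (c \<otimes> v) \<otimes> a" using T C c by (simp add: m_assoc e2)
    also have "\<dots> = c' \<otimes> (z \<otimes> (v1 \<otimes> a))" using 1 T C c by (simp add: m_assoc)
    finally show ?thesis by (simp add: e3)
  qed
  have 2: "c \<otimes> (w \<otimes> u) = c' \<otimes> (z \<otimes> w1)"
    by (rule cR[where t=t1]) (use T C c h2 in \<open>simp_all add: m_assoc\<close>)
  have h3: "c \<otimes> (w \<otimes> (r \<otimes> t2)) = c' \<otimes> (y \<otimes> (w2 \<otimes> t2))"
  proof -
    have "c \<otimes> (w \<otimes> (r \<otimes> t2)) = (c \<otimes> v) \<otimes> a" using T C c by (simp add: m_assoc e2 e1)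
    also have "\<dots> = c' \<otimes> ((z \<otimes> v1) \<otimes> a)" using 1 T C c by (simp add: m_assoc)
    also have "\<dots> = c' \<otimes> (y \<otimes> (v2 \<otimes> a))" using zy T C c by (simp add: m_assoc)
    finally show ?thesis by (simp add: e4)
  qed
  have 3: "c \<otimes> (w \<otimes> r) = c' \<otimes> (y \<otimes> w2)"
    by (rule cR[where t=t2]) (use T C c h3 in \<open>simp_all add: m_assoc\<close>)
  have "c \<otimes> (w \<otimes> (u \<otimes> b1 \<oplus> r \<otimes> b2)) = (c \<otimes> (w \<otimes> u)) \<otimes> b1 \<oplus> (c \<otimes> (w \<otimes> r)) \<otimes> b2"
    using T C c by (simp add: r_distr m_assoc)
  also have "\<dots> = (c' \<otimes> (z \<otimes> w1)) \<otimes> b1 \<oplus> (c' \<otimes> (y \<otimes> w2)) \<otimes> b2"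
    unfolding 2 3 ..
  also have "\<dots> = c' \<otimes> (z \<otimes> (w1 \<otimes> b1) \<oplus> y \<otimes> (w2 \<otimes> b2))"
    using T C c by (simp add: r_distr m_assoc)
  finally show "c \<otimes> (w \<otimes> (u \<otimes> b1 \<oplus> r \<otimes> b2)) = c' \<otimes> (z \<otimes> (w1 \<otimes> b1) \<oplus> y \<otimes> (w2 \<otimes> b2))" .
qed

lemma pdistr_r:
  assumes T: "t \<in> T" "t1 \<in> T" "t2 \<in> T" "u \<in> T" "v \<in> T" "v1 \<in> T" "v2 \<in> T" "z \<in> T"
    and C: "a \<in> carrier A" "b1 \<in> carrier A" "b2 \<in> carrier A" "r \<in> carrier A" "w \<in> carrier A"
       "w1 \<in> carrier A" "w2 \<in> carrier A" "y \<in> carrier A"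
    and e1: "u \<otimes> t1 = r \<otimes> t2" and e2: "v \<otimes> (u \<otimes> b1 \<oplus> r \<otimes> b2) = w \<otimes> t"
    and e3: "v1 \<otimes> b1 = w1 \<otimes> t" and e4: "v2 \<otimes> b2 = w2 \<otimes> t"
    and e5: "z \<otimes> (v1 \<otimes> t1) = y \<otimes> (v2 \<otimes> t2)"
  shows "eqv (v \<otimes> (u \<otimes> t1), w \<otimes> a) (z \<otimes> (v1 \<otimes> t1), z \<otimes> (w1 \<otimes> a) \<oplus> y \<otimes> (w2 \<otimes> a))"
proof (rule eqvI)
  fix c c' assume c: "c \<in> carrier A" "c' \<in> carrier A" and h: "c \<otimes> (v \<otimes> (u \<otimes> t1)) = c' \<otimes> (z \<otimes> (v1 \<otimes> t1))"
  have 1: "c \<otimes> (v \<otimes> u) = c' \<otimes> (z \<otimes> v1)"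
    by (rule cR[where t=t1]) (use T C c h in \<open>simp_all add: m_assoc\<close>)
  have h2: "c \<otimes> (v \<otimes> (r \<otimes> t2)) = c' \<otimes> (y \<otimes> (v2 \<otimes> t2))"
    using h T C c by (simp add: e1[symmetric] e5[symmetric])
  have 2: "c \<otimes> (v \<otimes> r) = c' \<otimes> (y \<otimes> v2)"
    by (rule cR[where t=t2]) (use T C c h2 in \<open>simp_all add: m_assoc\<close>)
  have h3: "(c \<otimes> w) \<otimes> t = (c' \<otimes> (z \<otimes> w1) \<oplus> c' \<otimes> (y \<otimes> w2)) \<otimes> t"
  proof -
    have "(c \<otimes> w) \<otimes> t = c \<otimes> (v \<otimes> (u \<otimes> b1 \<oplus> r \<otimes> b2))" using T C c by (simp add: m_assoc e2)
    also have "\<dots> = (c \<otimes> (v \<otimes> u)) \<otimes> b1 \<oplus> (c \<otimes> (v \<otimes> r)) \<otimes> b2" using T C c by (simp add: r_distr m_assoc)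
    also have "\<dots> = c' \<otimes> (z \<otimes> (v1 \<otimes> b1)) \<oplus> c' \<otimes> (y \<otimes> (v2 \<otimes> b2))" unfolding 1 2 using T C c by (simp add: m_assoc)
    also have "\<dots> = (c' \<otimes> (z \<otimes> w1) \<oplus> c' \<otimes> (y \<otimes> w2)) \<otimes> t" using T C c by (simp add: e3 e4 l_distr m_assoc)
    finally show ?thesis .
  qed
  have 3: "c \<otimes> w = c' \<otimes> (z \<otimes> w1) \<oplus> c' \<otimes> (y \<otimes> w2)"
    by (rule cR[OF _ _ T(1) h3]) (use T C c in simp_all)
  show "c \<otimes> (w \<otimes> a) = c' \<otimes> (z \<otimes> (w1 \<otimes> a) \<oplus> y \<otimes> (w2 \<otimes> a))"
    using 3 T C c by (simp add: m_assoc[symmetric] r_distr l_distr)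
qed

lemma pmul_one_l:
  assumes T: "t \<in> T" "u \<in> T" and C: "a \<in> carrier A" "r \<in> carrier A"
    and e: "u \<otimes> \<one> = r \<otimes> t"
  shows "eqv (u \<otimes> \<one>, r \<otimes> a) (t, a)"
  using padd_zero[OF T C e] T C by simp

lemma PP_iff: "p \<in> PP \<longleftrightarrow> fst p \<in> T \<and> snd p \<in> carrier A"
  by (cases p) (auto simp: PP_def)

lemma eqv_trans_P: "p \<in> PP \<Longrightarrow> q \<in> PP \<Longrightarrow> r \<in> PP \<Longrightarrow> eqv p q \<Longrightarrow> eqv q r \<Longrightarrow> eqv p r"
  using eqv_trans[of "fst p" "fst q" "fst r" "snd p" "snd q" "snd r"] by (simp add: PP_iff)

lemma eqv_refl_P: "p \<in> PP \<Longrightarrow> eqv p p"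
  using eqv_refl[of "fst p" "snd p"] by (simp add: PP_iff)

definition cls :: "'a \<times> 'a \<Rightarrow> ('a \<times> 'a) set" where "cls p = {q \<in> PP. eqv p q}"
definition rep :: "('a \<times> 'a) set \<Rightarrow> 'a \<times> 'a" where "rep P = (SOME p. p \<in> P)"

lemma cls_eq: assumes "p \<in> PP" "q \<in> PP" shows "cls p = cls q \<longleftrightarrow> eqv p q"
proof
  assume "cls p = cls q"
  then have "q \<in> cls p" using assms eqv_refl_P unfolding cls_def by blast
  then show "eqv p q" unfolding cls_def by simp
next
  assume pq: "eqv p q"
  show "cls p = cls q" unfolding cls_def using pq assms eqv_sym eqv_trans_P by blast
qed

lemma rep_cls: assumes "p \<in> PP" shows "rep (cls p) \<in> PP" "eqv p (rep (cls p))"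
proof -
  have "p \<in> cls p" using assms eqv_refl_P unfolding cls_def by blast
  then have "rep (cls p) \<in> cls p" unfolding rep_def by (rule someI)
  then show "rep (cls p) \<in> PP" "eqv p (rep (cls p))" unfolding cls_def by auto
qed

lemma padd_PP: "p \<in> PP \<Longrightarrow> q \<in> PP \<Longrightarrow> padd p q \<in> PP"
  using orew(1,2)[of "fst p" "fst q"] by (auto simp: PP_iff padd_def Let_def mult_T)

lemma pmul_PP: "p \<in> PP \<Longrightarrow> q \<in> PP \<Longrightarrow> pmul p q \<in> PP"
  using orew(1,2)[of "snd p" "fst q"] by (auto simp: PP_iff pmul_def Let_def mult_T)

lemma padd_congP:
  assumes "p \<in> PP" "p' \<in> PP" "q \<in> PP" "q' \<in> PP" "eqv p p'" "eqv q q'"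
  shows "eqv (padd p q) (padd p' q')"
proof -
  obtain t a t' b t1 a1 t1' b1 where pq: "p = (t,a)" "q = (t',b)" "p' = (t1,a1)" "q' = (t1',b1)"
    by (cases p, cases q, cases p', cases q') auto
  have m: "t \<in> T" "t' \<in> T" "t1 \<in> T" "t1' \<in> T" "a \<in> carrier A" "b \<in> carrier A" "a1 \<in> carrier A" "b1 \<in> carrier A"
    using assms pq by (auto simp: PP_def)
  obtain u r where ur: "u \<in> T" "r \<in> carrier A" "u \<otimes> t = r \<otimes> t'" "padd (t,a) (t',b) = (u \<otimes> t, u \<otimes> a \<oplus> r \<otimes> b)"
    using padd_ex[of t t' a b] m by blast
  obtain u1 r1 where ur1: "u1 \<in> T" "r1 \<in> carrier A" "u1 \<otimes> t1 = r1 \<otimes> t1'" "padd (t1,a1) (t1',b1) = (u1 \<otimes> t1, u1 \<otimes> a1 \<oplus> r1 \<otimes> b1)"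
    using padd_ex[of t1 t1' a1 b1] m by blast
  show ?thesis using padd_cong[of t t' t1 t1' u u1 a b a1 b1 r r1] m ur ur1 assms pq by simp
qed

lemma pmul_congP:
  assumes "p \<in> PP" "p' \<in> PP" "q \<in> PP" "q' \<in> PP" "eqv p p'" "eqv q q'"
  shows "eqv (pmul p q) (pmul p' q')"
proof -
  obtain t a t' b t1 a1 t1' b1 where pq: "p = (t,a)" "q = (t',b)" "p' = (t1,a1)" "q' = (t1',b1)"
    by (cases p, cases q, cases p', cases q') auto
  have m: "t \<in> T" "t' \<in> T" "t1 \<in> T" "t1' \<in> T" "a \<in> carrier A" "b \<in> carrier A" "a1 \<in> carrier A" "b1 \<in> carrier A"
    using assms pq by (auto simp: PP_def)
  obtain u r where ur: "u \<in> T" "r \<in> carrier A" "u \<otimes> a = r \<otimes> t'" "pmul (t,a) (t',b) = (u \<otimes> t, r \<otimes> b)"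
    using pmul_ex[of t t' a b] m by blast
  obtain u1 r1 where ur1: "u1 \<in> T" "r1 \<in> carrier A" "u1 \<otimes> a1 = r1 \<otimes> t1'" "pmul (t1,a1) (t1',b1) = (u1 \<otimes> t1, r1 \<otimes> b1)"
    using pmul_ex[of t1 t1' a1 b1] m by blast
  show ?thesis using pmul_cong[of t t' t1 t1' u u1 a b a1 b1 r r1] m ur ur1 assms pq by simp
qed

definition Frac :: "('a \<times> 'a) set ring" where
  "Frac = \<lparr>carrier = cls ` PP, monoid.mult = (\<lambda>P Q. cls (pmul (rep P) (rep Q))),
     one = cls (\<one>, \<one>), ring.zero = cls (\<one>, \<zero>), ring.add = (\<lambda>P Q. cls (padd (rep P) (rep Q)))\<rparr>"

lemma Frac_add_raw: "P \<oplus>\<^bsub>Frac\<^esub> Q = cls (padd (rep P) (rep Q))" by (simp add: Frac_def)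
lemma Frac_mult_raw: "P \<otimes>\<^bsub>Frac\<^esub> Q = cls (pmul (rep P) (rep Q))" by (simp add: Frac_def)

lemma Frac_add: assumes "p \<in> PP" "q \<in> PP" shows "cls p \<oplus>\<^bsub>Frac\<^esub> cls q = cls (padd p q)"
proof -
  have "eqv (padd (rep (cls p)) (rep (cls q))) (padd p q)"
    using rep_cls[OF assms(1)] rep_cls[OF assms(2)] assms by (intro padd_congP) (auto intro: eqv_sym)
  then show ?thesis unfolding Frac_add_raw using cls_eq rep_cls assms padd_PP by metis
qed

lemma Frac_mult: assumes "p \<in> PP" "q \<in> PP" shows "cls p \<otimes>\<^bsub>Frac\<^esub> cls q = cls (pmul p q)"
proof -
  have "eqv (pmul (rep (cls p)) (rep (cls q))) (pmul p q)"
    using rep_cls[OF assms(1)] rep_cls[OF assms(2)] assms by (intro pmul_congP) (auto intro: eqv_sym)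
  then show ?thesis unfolding Frac_mult_raw using cls_eq rep_cls assms pmul_PP by metis
qed

lemma Frac_carrier: "carrier Frac = cls ` PP" by (simp add: Frac_def)
lemma Frac_zero: "\<zero>\<^bsub>Frac\<^esub> = cls (\<one>, \<zero>)" by (simp add: Frac_def)
lemma Frac_one: "\<one>\<^bsub>Frac\<^esub> = cls (\<one>, \<one>)" by (simp add: Frac_def)

lemma PP_I: "t \<in> T \<Longrightarrow> a \<in> carrier A \<Longrightarrow> (t,a) \<in> PP" by (simp add: PP_def)

lemma Frac_ring: "ring Frac"
proof (rule ringI)
  show "abelian_group Frac"
  proof (rule abelian_groupI)
    fix P Q assume "P \<in> carrier Frac" "Q \<in> carrier Frac"
    then obtain p q where "p \<in> PP" "q \<in> PP" "P = cls p" "Q = cls q" by (auto simp: Frac_carrier)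
    then show "P \<oplus>\<^bsub>Frac\<^esub> Q \<in> carrier Frac" by (simp add: Frac_add Frac_carrier padd_PP)
  next
    show "\<zero>\<^bsub>Frac\<^esub> \<in> carrier Frac" by (simp add: Frac_zero Frac_carrier PP_I one_T)
  next
    fix P Q R assume "P \<in> carrier Frac" "Q \<in> carrier Frac" "R \<in> carrier Frac"
    then obtain t1 a1 t2 a2 t3 a3 where m: "t1 \<in> T" "t2 \<in> T" "t3 \<in> T" "a1 \<in> carrier A" "a2 \<in> carrier A" "a3 \<in> carrier A"
      and PQR: "P = cls (t1,a1)" "Q = cls (t2,a2)" "R = cls (t3,a3)" by (auto simp: Frac_carrier PP_def)
    obtain u r where ur: "u \<in> T" "r \<in> carrier A" "u \<otimes> t1 = r \<otimes> t2" "padd (t1,a1) (t2,a2) = (u \<otimes> t1, u \<otimes> a1 \<oplus> r \<otimes> a2)"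
      using padd_ex[OF m(1) m(2) m(4) m(5)] by blast
    have c1: "u \<otimes> t1 \<in> T" "u \<otimes> a1 \<oplus> r \<otimes> a2 \<in> carrier A" using m ur(1,2) mult_T by auto
    obtain v q where vq: "v \<in> T" "q \<in> carrier A" "v \<otimes> (u \<otimes> t1) = q \<otimes> t3"
        "padd (u \<otimes> t1, u \<otimes> a1 \<oplus> r \<otimes> a2) (t3,a3) = (v \<otimes> (u \<otimes> t1), v \<otimes> (u \<otimes> a1 \<oplus> r \<otimes> a2) \<oplus> q \<otimes> a3)"
      using padd_ex[OF c1(1) m(3) c1(2) m(6)] by blast
    obtain u' r' where ur': "u' \<in> T" "r' \<in> carrier A" "u' \<otimes> t2 = r' \<otimes> t3" "padd (t2,a2) (t3,a3) = (u' \<otimes> t2, u' \<otimes> a2 \<oplus> r' \<otimes> a3)"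
      using padd_ex[OF m(2) m(3) m(5) m(6)] by blast
    have c2: "u' \<otimes> t2 \<in> T" "u' \<otimes> a2 \<oplus> r' \<otimes> a3 \<in> carrier A" using m ur'(1,2) mult_T by auto
    obtain v' q' where vq': "v' \<in> T" "q' \<in> carrier A" "v' \<otimes> t1 = q' \<otimes> (u' \<otimes> t2)"
        "padd (t1,a1) (u' \<otimes> t2, u' \<otimes> a2 \<oplus> r' \<otimes> a3) = (v' \<otimes> t1, v' \<otimes> a1 \<oplus> q' \<otimes> (u' \<otimes> a2 \<oplus> r' \<otimes> a3))"
      using padd_ex[OF m(1) c2(1) m(4) c2(2)] by blast
    have e: "eqv (v \<otimes> (u \<otimes> t1), v \<otimes> (u \<otimes> a1 \<oplus> r \<otimes> a2) \<oplus> q \<otimes> a3)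
             (v' \<otimes> t1, v' \<otimes> a1 \<oplus> q' \<otimes> (u' \<otimes> a2 \<oplus> r' \<otimes> a3))"
      by (rule padd_assoc) (use m ur vq ur' vq' in auto)
    have L: "P \<oplus>\<^bsub>Frac\<^esub> Q \<oplus>\<^bsub>Frac\<^esub> R = cls (v \<otimes> (u \<otimes> t1), v \<otimes> (u \<otimes> a1 \<oplus> r \<otimes> a2) \<oplus> q \<otimes> a3)"
      unfolding PQR Frac_add[OF PP_I[OF m(1) m(4)] PP_I[OF m(2) m(5)]] ur(4)
        Frac_add[OF PP_I[OF c1] PP_I[OF m(3) m(6)]] vq(4) ..
    have R: "P \<oplus>\<^bsub>Frac\<^esub> (Q \<oplus>\<^bsub>Frac\<^esub> R) = cls (v' \<otimes> t1, v' \<otimes> a1 \<oplus> q' \<otimes> (u' \<otimes> a2 \<oplus> r' \<otimes> a3))"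
      unfolding PQR Frac_add[OF PP_I[OF m(2) m(5)] PP_I[OF m(3) m(6)]] ur'(4)
        Frac_add[OF PP_I[OF m(1) m(4)] PP_I[OF c2]] vq'(4) ..
    have "v \<otimes> (u \<otimes> a1 \<oplus> r \<otimes> a2) \<oplus> q \<otimes> a3 \<in> carrier A" "v' \<otimes> a1 \<oplus> q' \<otimes> (u' \<otimes> a2 \<oplus> r' \<otimes> a3) \<in> carrier A"
      "v \<otimes> (u \<otimes> t1) \<in> T" "v' \<otimes> t1 \<in> T"
      using m ur(1,2) vq(1,2) ur'(1,2) vq'(1,2) c1 mult_T by auto
    then show "P \<oplus>\<^bsub>Frac\<^esub> Q \<oplus>\<^bsub>Frac\<^esub> R = P \<oplus>\<^bsub>Frac\<^esub> (Q \<oplus>\<^bsub>Frac\<^esub> R)"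
      unfolding L R using e by (simp add: cls_eq PP_I)
  next
    fix P Q assume "P \<in> carrier Frac" "Q \<in> carrier Frac"
    then obtain t1 a1 t2 a2 where m: "t1 \<in> T" "t2 \<in> T" "a1 \<in> carrier A" "a2 \<in> carrier A"
      and PQ: "P = cls (t1,a1)" "Q = cls (t2,a2)" by (auto simp: Frac_carrier PP_def)
    obtain u r where ur: "u \<in> T" "r \<in> carrier A" "u \<otimes> t1 = r \<otimes> t2" "padd (t1,a1) (t2,a2) = (u \<otimes> t1, u \<otimes> a1 \<oplus> r \<otimes> a2)"
      using padd_ex[OF m(1) m(2) m(3) m(4)] by blast
    obtain u' r' where ur': "u' \<in> T" "r' \<in> carrier A" "u' \<otimes> t2 = r' \<otimes> t1" "padd (t2,a2) (t1,a1) = (u' \<otimes> t2, u' \<otimes> a2 \<oplus> r' \<otimes> a1)"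
      using padd_ex[OF m(2) m(1) m(4) m(3)] by blast
    have e: "eqv (u \<otimes> t1, u \<otimes> a1 \<oplus> r \<otimes> a2) (u' \<otimes> t2, u' \<otimes> a2 \<oplus> r' \<otimes> a1)"
      by (rule padd_comm) (use m ur ur' in auto)
    have "u \<otimes> t1 \<in> T" "u' \<otimes> t2 \<in> T" "u \<otimes> a1 \<oplus> r \<otimes> a2 \<in> carrier A" "u' \<otimes> a2 \<oplus> r' \<otimes> a1 \<in> carrier A"
      using m ur(1,2) ur'(1,2) mult_T by auto
    then show "P \<oplus>\<^bsub>Frac\<^esub> Q = Q \<oplus>\<^bsub>Frac\<^esub> P"
      unfolding PQ Frac_add[OF PP_I[OF m(1) m(3)] PP_I[OF m(2) m(4)]] Frac_add[OF PP_I[OF m(2) m(4)] PP_I[OF m(1) m(3)]] ur(4) ur'(4)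
      using e by (simp add: cls_eq PP_I)
  next
    fix P assume "P \<in> carrier Frac"
    then obtain t a where m: "t \<in> T" "a \<in> carrier A" and P: "P = cls (t,a)" by (auto simp: Frac_carrier PP_def)
    obtain u r where ur: "u \<in> T" "r \<in> carrier A" "u \<otimes> \<one> = r \<otimes> t" "padd (\<one>,\<zero>) (t,a) = (u \<otimes> \<one>, u \<otimes> \<zero> \<oplus> r \<otimes> a)"
      using padd_ex[OF one_T m(1) zero_closed m(2)] by blast
    have e: "eqv (u \<otimes> \<one>, u \<otimes> \<zero> \<oplus> r \<otimes> a) (t, a)" by (rule padd_zero) (use m ur in auto)
    have "u \<otimes> \<one> \<in> T" "u \<otimes> \<zero> \<oplus> r \<otimes> a \<in> carrier A" using ur(1,2) m by auto
    then show "\<zero>\<^bsub>Frac\<^esub> \<oplus>\<^bsub>Frac\<^esub> P = P"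
      unfolding P Frac_zero Frac_add[OF PP_I[OF one_T zero_closed] PP_I[OF m]] ur(4)
      using e m by (simp only: cls_eq PP_I)
  next
    fix P assume "P \<in> carrier Frac"
    then obtain t a where m: "t \<in> T" "a \<in> carrier A" and P: "P = cls (t,a)" by (auto simp: Frac_carrier PP_def)
    have na: "\<ominus> a \<in> carrier A" using m by simp
    obtain u r where ur: "u \<in> T" "r \<in> carrier A" "u \<otimes> t = r \<otimes> t" "padd (t, \<ominus> a) (t,a) = (u \<otimes> t, u \<otimes> (\<ominus> a) \<oplus> r \<otimes> a)"
      using padd_ex[OF m(1) m(1) na m(2)] by blast
    have e: "eqv (u \<otimes> t, u \<otimes> (\<ominus> a) \<oplus> r \<otimes> a) (\<one>, \<zero>)" by (rule padd_neg) (use m ur in auto)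
    have "u \<otimes> t \<in> T" "u \<otimes> (\<ominus> a) \<oplus> r \<otimes> a \<in> carrier A" using ur(1,2) m mult_T by auto
    then have "cls (t, \<ominus> a) \<oplus>\<^bsub>Frac\<^esub> P = \<zero>\<^bsub>Frac\<^esub>"
      unfolding P Frac_zero Frac_add[OF PP_I[OF m(1) na] PP_I[OF m]] ur(4)
      using e by (simp only: cls_eq PP_I one_T zero_closed)
    moreover have "cls (t, \<ominus> a) \<in> carrier Frac" using m na by (simp add: Frac_carrier PP_I)
    ultimately show "\<exists>Q\<in>carrier Frac. Q \<oplus>\<^bsub>Frac\<^esub> P = \<zero>\<^bsub>Frac\<^esub>" by blast
  qed
next
  show "monoid Frac"
  proof (rule monoidI)
    fix P Q assume "P \<in> carrier Frac" "Q \<in> carrier Frac"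
    then obtain p q where "p \<in> PP" "q \<in> PP" "P = cls p" "Q = cls q" by (auto simp: Frac_carrier)
    then show "P \<otimes>\<^bsub>Frac\<^esub> Q \<in> carrier Frac" by (simp add: Frac_mult Frac_carrier pmul_PP)
  next
    show "\<one>\<^bsub>Frac\<^esub> \<in> carrier Frac" by (simp add: Frac_one Frac_carrier PP_I one_T)
  next
    fix P Q R assume "P \<in> carrier Frac" "Q \<in> carrier Frac" "R \<in> carrier Frac"
    then obtain t1 a1 t2 a2 t3 a3 where m: "t1 \<in> T" "t2 \<in> T" "t3 \<in> T" "a1 \<in> carrier A" "a2 \<in> carrier A" "a3 \<in> carrier A"
      and PQR: "P = cls (t1,a1)" "Q = cls (t2,a2)" "R = cls (t3,a3)" by (auto simp: Frac_carrier PP_def)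
    obtain u r where ur: "u \<in> T" "r \<in> carrier A" "u \<otimes> a1 = r \<otimes> t2" "pmul (t1,a1) (t2,a2) = (u \<otimes> t1, r \<otimes> a2)"
      using pmul_ex[OF m(1) m(2) m(4) m(5)] by blast
    have c1: "u \<otimes> t1 \<in> T" "r \<otimes> a2 \<in> carrier A" using m ur(1,2) mult_T by auto
    obtain u' r' where ur': "u' \<in> T" "r' \<in> carrier A" "u' \<otimes> (r \<otimes> a2) = r' \<otimes> t3"
        "pmul (u \<otimes> t1, r \<otimes> a2) (t3,a3) = (u' \<otimes> (u \<otimes> t1), r' \<otimes> a3)"
      using pmul_ex[OF c1(1) m(3) c1(2) m(6)] by blast
    obtain v p where vp: "v \<in> T" "p \<in> carrier A" "v \<otimes> a2 = p \<otimes> t3" "pmul (t2,a2) (t3,a3) = (v \<otimes> t2, p \<otimes> a3)"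
      using pmul_ex[OF m(2) m(3) m(5) m(6)] by blast
    have c2: "v \<otimes> t2 \<in> T" "p \<otimes> a3 \<in> carrier A" using m vp(1,2) mult_T by auto
    obtain v' p' where vp': "v' \<in> T" "p' \<in> carrier A" "v' \<otimes> a1 = p' \<otimes> (v \<otimes> t2)"
        "pmul (t1,a1) (v \<otimes> t2, p \<otimes> a3) = (v' \<otimes> t1, p' \<otimes> (p \<otimes> a3))"
      using pmul_ex[OF m(1) c2(1) m(4) c2(2)] by blast
    have e: "eqv (u' \<otimes> (u \<otimes> t1), r' \<otimes> a3) (v' \<otimes> t1, p' \<otimes> (p \<otimes> a3))"
      by (rule pmul_assoc) (use m ur ur' vp vp' in auto)
    have L: "P \<otimes>\<^bsub>Frac\<^esub> Q \<otimes>\<^bsub>Frac\<^esub> R = cls (u' \<otimes> (u \<otimes> t1), r' \<otimes> a3)"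
      unfolding PQR Frac_mult[OF PP_I[OF m(1) m(4)] PP_I[OF m(2) m(5)]] ur(4)
        Frac_mult[OF PP_I[OF c1] PP_I[OF m(3) m(6)]] ur'(4) ..
    have R: "P \<otimes>\<^bsub>Frac\<^esub> (Q \<otimes>\<^bsub>Frac\<^esub> R) = cls (v' \<otimes> t1, p' \<otimes> (p \<otimes> a3))"
      unfolding PQR Frac_mult[OF PP_I[OF m(2) m(5)] PP_I[OF m(3) m(6)]] vp(4)
        Frac_mult[OF PP_I[OF m(1) m(4)] PP_I[OF c2]] vp'(4) ..
    have "u' \<otimes> (u \<otimes> t1) \<in> T" "v' \<otimes> t1 \<in> T" "r' \<otimes> a3 \<in> carrier A" "p' \<otimes> (p \<otimes> a3) \<in> carrier A"
      using m ur(1,2) ur'(1,2) vp(1,2) vp'(1,2) c1 mult_T by auto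
    then show "P \<otimes>\<^bsub>Frac\<^esub> Q \<otimes>\<^bsub>Frac\<^esub> R = P \<otimes>\<^bsub>Frac\<^esub> (Q \<otimes>\<^bsub>Frac\<^esub> R)"
      unfolding L R using e by (simp add: cls_eq PP_I)
  next
    fix P assume "P \<in> carrier Frac"
    then obtain t a where m: "t \<in> T" "a \<in> carrier A" and P: "P = cls (t,a)" by (auto simp: Frac_carrier PP_def)
    obtain u r where ur: "u \<in> T" "r \<in> carrier A" "u \<otimes> \<one> = r \<otimes> t" "pmul (\<one>,\<one>) (t,a) = (u \<otimes> \<one>, r \<otimes> a)"
      using pmul_ex[OF one_T m(1) one_closed m(2)] by blast
    have e: "eqv (u \<otimes> \<one>, r \<otimes> a) (t, a)" by (rule pmul_one_l) (use m ur in auto)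
    have "u \<otimes> \<one> \<in> T" "r \<otimes> a \<in> carrier A" using ur(1,2) m by auto
    then show "\<one>\<^bsub>Frac\<^esub> \<otimes>\<^bsub>Frac\<^esub> P = P"
      unfolding P Frac_one Frac_mult[OF PP_I[OF one_T one_closed] PP_I[OF m]] ur(4)
      using e m by (simp only: cls_eq PP_I)
  next
    fix P assume "P \<in> carrier Frac"
    then obtain t a where m: "t \<in> T" "a \<in> carrier A" and P: "P = cls (t,a)" by (auto simp: Frac_carrier PP_def)
    obtain u r where ur: "u \<in> T" "r \<in> carrier A" "u \<otimes> a = r \<otimes> \<one>" "pmul (t,a) (\<one>,\<one>) = (u \<otimes> t, r \<otimes> \<one>)"
      using pmul_ex[OF m(1) one_T m(2) one_closed] by blast
    have e: "eqv (u \<otimes> t, r \<otimes> \<one>) (t, a)" by (rule pmul_one_r) (use m ur in auto)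
    have "u \<otimes> t \<in> T" "r \<otimes> \<one> \<in> carrier A" using ur(1,2) m mult_T by auto
    then show "P \<otimes>\<^bsub>Frac\<^esub> \<one>\<^bsub>Frac\<^esub> = P"
      unfolding P Frac_one Frac_mult[OF PP_I[OF m] PP_I[OF one_T one_closed]] ur(4)
      using e m by (simp only: cls_eq PP_I)
  qed
next
  fix P Q R assume "P \<in> carrier Frac" "Q \<in> carrier Frac" "R \<in> carrier Frac"
  then obtain t1 b1 t2 b2 t a where m: "t1 \<in> T" "t2 \<in> T" "t \<in> T" "b1 \<in> carrier A" "b2 \<in> carrier A" "a \<in> carrier A"
    and PQR: "P = cls (t1,b1)" "Q = cls (t2,b2)" "R = cls (t,a)" by (auto simp: Frac_carrier PP_def)
  obtain u r where ur: "u \<in> T" "r \<in> carrier A" "u \<otimes> t1 = r \<otimes> t2" "padd (t1,b1) (t2,b2) = (u \<otimes> t1, u \<otimes> b1 \<oplus> r \<otimes> b2)"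
    using padd_ex[OF m(1) m(2) m(4) m(5)] by blast
  have c0: "u \<otimes> t1 \<in> T" "u \<otimes> b1 \<oplus> r \<otimes> b2 \<in> carrier A" using m ur(1,2) mult_T by auto
  have PQ: "P \<oplus>\<^bsub>Frac\<^esub> Q = cls (u \<otimes> t1, u \<otimes> b1 \<oplus> r \<otimes> b2)"
    unfolding PQR Frac_add[OF PP_I[OF m(1) m(4)] PP_I[OF m(2) m(5)]] ur(4) ..
  show "(P \<oplus>\<^bsub>Frac\<^esub> Q) \<otimes>\<^bsub>Frac\<^esub> R = P \<otimes>\<^bsub>Frac\<^esub> R \<oplus>\<^bsub>Frac\<^esub> Q \<otimes>\<^bsub>Frac\<^esub> R"
  proof -
    obtain v w where vw: "v \<in> T" "w \<in> carrier A" "v \<otimes> (u \<otimes> b1 \<oplus> r \<otimes> b2) = w \<otimes> t"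
        "pmul (u \<otimes> t1, u \<otimes> b1 \<oplus> r \<otimes> b2) (t,a) = (v \<otimes> (u \<otimes> t1), w \<otimes> a)"
      using pmul_ex[OF c0(1) m(3) c0(2) m(6)] by blast
    obtain v1 w1 where vw1: "v1 \<in> T" "w1 \<in> carrier A" "v1 \<otimes> b1 = w1 \<otimes> t" "pmul (t1,b1) (t,a) = (v1 \<otimes> t1, w1 \<otimes> a)"
      using pmul_ex[OF m(1) m(3) m(4) m(6)] by blast
    obtain v2 w2 where vw2: "v2 \<in> T" "w2 \<in> carrier A" "v2 \<otimes> b2 = w2 \<otimes> t" "pmul (t2,b2) (t,a) = (v2 \<otimes> t2, w2 \<otimes> a)"
      using pmul_ex[OF m(2) m(3) m(5) m(6)] by blast
    have c1: "v1 \<otimes> t1 \<in> T" "v2 \<otimes> t2 \<in> T" "w1 \<otimes> a \<in> carrier A" "w2 \<otimes> a \<in> carrier A"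
      using m vw1(1,2) vw2(1,2) mult_T by auto
    obtain z y where zy: "z \<in> T" "y \<in> carrier A" "z \<otimes> (v1 \<otimes> t1) = y \<otimes> (v2 \<otimes> t2)"
        "padd (v1 \<otimes> t1, w1 \<otimes> a) (v2 \<otimes> t2, w2 \<otimes> a) = (z \<otimes> (v1 \<otimes> t1), z \<otimes> (w1 \<otimes> a) \<oplus> y \<otimes> (w2 \<otimes> a))"
      using padd_ex[OF c1] by blast
    have e: "eqv (v \<otimes> (u \<otimes> t1), w \<otimes> a) (z \<otimes> (v1 \<otimes> t1), z \<otimes> (w1 \<otimes> a) \<oplus> y \<otimes> (w2 \<otimes> a))"
      by (rule pdistr_r) (use m ur vw vw1 vw2 zy in auto)
    have L: "(P \<oplus>\<^bsub>Frac\<^esub> Q) \<otimes>\<^bsub>Frac\<^esub> R = cls (v \<otimes> (u \<otimes> t1), w \<otimes> a)"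
      unfolding PQ unfolding PQR Frac_mult[OF PP_I[OF c0] PP_I[OF m(3) m(6)]] vw(4) ..
    have R: "P \<otimes>\<^bsub>Frac\<^esub> R \<oplus>\<^bsub>Frac\<^esub> Q \<otimes>\<^bsub>Frac\<^esub> R = cls (z \<otimes> (v1 \<otimes> t1), z \<otimes> (w1 \<otimes> a) \<oplus> y \<otimes> (w2 \<otimes> a))"
      unfolding PQR Frac_mult[OF PP_I[OF m(1) m(4)] PP_I[OF m(3) m(6)]] vw1(4)
        Frac_mult[OF PP_I[OF m(2) m(5)] PP_I[OF m(3) m(6)]] vw2(4)
        Frac_add[OF PP_I[OF c1(1) c1(3)] PP_I[OF c1(2) c1(4)]] zy(4) ..
    have "v \<otimes> (u \<otimes> t1) \<in> T" "z \<otimes> (v1 \<otimes> t1) \<in> T" "w \<otimes> a \<in> carrier A" "z \<otimes> (w1 \<otimes> a) \<oplus> y \<otimes> (w2 \<otimes> a) \<in> carrier A"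
      using m c0 c1 vw(1,2) zy(1,2) mult_T by auto
    then show ?thesis unfolding L R using e by (simp add: cls_eq PP_I)
  qed
  show "R \<otimes>\<^bsub>Frac\<^esub> (P \<oplus>\<^bsub>Frac\<^esub> Q) = R \<otimes>\<^bsub>Frac\<^esub> P \<oplus>\<^bsub>Frac\<^esub> R \<otimes>\<^bsub>Frac\<^esub> Q"
  proof -
    obtain v w where vw: "v \<in> T" "w \<in> carrier A" "v \<otimes> a = w \<otimes> (u \<otimes> t1)"
        "pmul (t,a) (u \<otimes> t1, u \<otimes> b1 \<oplus> r \<otimes> b2) = (v \<otimes> t, w \<otimes> (u \<otimes> b1 \<oplus> r \<otimes> b2))"
      using pmul_ex[OF m(3) c0(1) m(6) c0(2)] by blast
    obtain v1 w1 where vw1: "v1 \<in> T" "w1 \<in> carrier A" "v1 \<otimes> a = w1 \<otimes> t1" "pmul (t,a) (t1,b1) = (v1 \<otimes> t, w1 \<otimes> b1)"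
      using pmul_ex[OF m(3) m(1) m(6) m(4)] by blast
    obtain v2 w2 where vw2: "v2 \<in> T" "w2 \<in> carrier A" "v2 \<otimes> a = w2 \<otimes> t2" "pmul (t,a) (t2,b2) = (v2 \<otimes> t, w2 \<otimes> b2)"
      using pmul_ex[OF m(3) m(2) m(6) m(5)] by blast
    have c1: "v1 \<otimes> t \<in> T" "v2 \<otimes> t \<in> T" "w1 \<otimes> b1 \<in> carrier A" "w2 \<otimes> b2 \<in> carrier A"
      using m vw1(1,2) vw2(1,2) mult_T by auto
    obtain z y where zy: "z \<in> T" "y \<in> carrier A" "z \<otimes> (v1 \<otimes> t) = y \<otimes> (v2 \<otimes> t)"
        "padd (v1 \<otimes> t, w1 \<otimes> b1) (v2 \<otimes> t, w2 \<otimes> b2) = (z \<otimes> (v1 \<otimes> t), z \<otimes> (w1 \<otimes> b1) \<oplus> y \<otimes> (w2 \<otimes> b2))"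
      using padd_ex[OF c1] by blast
    have e: "eqv (v \<otimes> t, w \<otimes> (u \<otimes> b1 \<oplus> r \<otimes> b2)) (z \<otimes> (v1 \<otimes> t), z \<otimes> (w1 \<otimes> b1) \<oplus> y \<otimes> (w2 \<otimes> b2))"
      by (rule pdistr_l) (use m ur vw vw1 vw2 zy in auto)
    have L: "R \<otimes>\<^bsub>Frac\<^esub> (P \<oplus>\<^bsub>Frac\<^esub> Q) = cls (v \<otimes> t, w \<otimes> (u \<otimes> b1 \<oplus> r \<otimes> b2))"
      unfolding PQ unfolding PQR Frac_mult[OF PP_I[OF m(3) m(6)] PP_I[OF c0]] vw(4) ..
    have R: "R \<otimes>\<^bsub>Frac\<^esub> P \<oplus>\<^bsub>Frac\<^esub> R \<otimes>\<^bsub>Frac\<^esub> Q = cls (z \<otimes> (v1 \<otimes> t), z \<otimes> (w1 \<otimes> b1) \<oplus> y \<otimes> (w2 \<otimes> b2))"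
      unfolding PQR Frac_mult[OF PP_I[OF m(3) m(6)] PP_I[OF m(1) m(4)]] vw1(4)
        Frac_mult[OF PP_I[OF m(3) m(6)] PP_I[OF m(2) m(5)]] vw2(4)
        Frac_add[OF PP_I[OF c1(1) c1(3)] PP_I[OF c1(2) c1(4)]] zy(4) ..
    have "v \<otimes> t \<in> T" "z \<otimes> (v1 \<otimes> t) \<in> T" "w \<otimes> (u \<otimes> b1 \<oplus> r \<otimes> b2) \<in> carrier A" "z \<otimes> (w1 \<otimes> b1) \<oplus> y \<otimes> (w2 \<otimes> b2) \<in> carrier A"
      using m c0 c1 vw(1,2) zy(1,2) mult_T by auto
    then show ?thesis unfolding L R using e by (simp add: cls_eq PP_I)
  qed
qed

definition iota :: "'a \<Rightarrow> ('a \<times> 'a) set" where "iota a = cls (\<one>, a)"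

lemma iota_hom: "iota \<in> ring_hom A Frac"
proof (rule ring_hom_memI)
  fix x assume "x \<in> carrier A" then show "iota x \<in> carrier Frac"
    by (simp add: iota_def Frac_carrier PP_I one_T)
next
  fix x y assume xy: "x \<in> carrier A" "y \<in> carrier A"
  obtain u r where ur: "u \<in> T" "r \<in> carrier A" "u \<otimes> x = r \<otimes> \<one>" "pmul (\<one>,x) (\<one>,y) = (u \<otimes> \<one>, r \<otimes> y)"
    using pmul_ex[OF one_T one_T xy(1) xy(2)] by blast
  have e: "eqv (\<one>, x \<otimes> y) (u \<otimes> \<one>, r \<otimes> y)"
  proof (rule eqvI)
    fix c c' assume c: "c \<in> carrier A" "c' \<in> carrier A" and h: "c \<otimes> \<one> = c' \<otimes> (u \<otimes> \<one>)"
    then have "c = c' \<otimes> u" using ur by simp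
    then show "c \<otimes> (x \<otimes> y) = c' \<otimes> (r \<otimes> y)" using ur xy c by (simp add: m_assoc[symmetric]) (simp add: m_assoc)
  qed
  show "iota (x \<otimes> y) = iota x \<otimes>\<^bsub>Frac\<^esub> iota y"
    unfolding iota_def using ur e xy one_T by (simp add: Frac_mult PP_I cls_eq)
next
  fix x y assume xy: "x \<in> carrier A" "y \<in> carrier A"
  obtain u r where ur: "u \<in> T" "r \<in> carrier A" "u \<otimes> \<one> = r \<otimes> \<one>" "padd (\<one>,x) (\<one>,y) = (u \<otimes> \<one>, u \<otimes> x \<oplus> r \<otimes> y)"
    using padd_ex[OF one_T one_T xy(1) xy(2)] by blast
  have ru: "r = u" using ur by simp
  have e: "eqv (\<one>, x \<oplus> y) (u \<otimes> \<one>, u \<otimes> x \<oplus> r \<otimes> y)"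
  proof (rule eqvI)
    fix c c' assume c: "c \<in> carrier A" "c' \<in> carrier A" and h: "c \<otimes> \<one> = c' \<otimes> (u \<otimes> \<one>)"
    then have "c = c' \<otimes> u" using ur by simp
    then show "c \<otimes> (x \<oplus> y) = c' \<otimes> (u \<otimes> x \<oplus> r \<otimes> y)" using ur xy c ru by (simp add: r_distr m_assoc)
  qed
  show "iota (x \<oplus> y) = iota x \<oplus>\<^bsub>Frac\<^esub> iota y"
    unfolding iota_def using ur e xy one_T by (simp add: Frac_add PP_I cls_eq)
next
  show "iota \<one> = \<one>\<^bsub>Frac\<^esub>" by (simp add: iota_def Frac_one)
qed

lemma iota_unit: assumes t: "t \<in> T" shows "iota t \<in> Units Frac"
proof -
  obtain u r where ur: "u \<in> T" "r \<in> carrier A" "u \<otimes> t = r \<otimes> t" "pmul (\<one>,t) (t,\<one>) = (u \<otimes> \<one>, r \<otimes> \<one>)"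
    using pmul_ex[OF one_T t Tc[OF t] one_closed] by blast
  have ru: "u = r" using cR[OF _ _ t ur(3)] ur by simp
  have e1: "eqv (u \<otimes> \<one>, r \<otimes> \<one>) (\<one>, \<one>)"
    by (rule eqvI) (use ur ru in simp)
  obtain u' r' where ur': "u' \<in> T" "r' \<in> carrier A" "u' \<otimes> \<one> = r' \<otimes> \<one>" "pmul (t,\<one>) (\<one>,t) = (u' \<otimes> t, r' \<otimes> t)"
    using pmul_ex[OF t one_T one_closed Tc[OF t]] by blast
  have ru': "u' = r'" using ur' by simp
  have e2: "eqv (u' \<otimes> t, r' \<otimes> t) (\<one>, \<one>)"
    by (rule eqvI) (use ur' ru' t in simp)
  have "cls (t, \<one>) \<in> carrier Frac" using t by (simp add: Frac_carrier PP_I)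
  moreover have "iota t \<in> carrier Frac" using t one_T by (simp add: iota_def Frac_carrier PP_I)
  moreover have "iota t \<otimes>\<^bsub>Frac\<^esub> cls (t, \<one>) = \<one>\<^bsub>Frac\<^esub>"
    unfolding iota_def Frac_one using t one_T ur e1 by (simp add: Frac_mult PP_I cls_eq)
  moreover have "cls (t, \<one>) \<otimes>\<^bsub>Frac\<^esub> iota t = \<one>\<^bsub>Frac\<^esub>"
    unfolding iota_def Frac_one using t one_T ur' e2 mult_T by (simp add: Frac_mult PP_I cls_eq)
  ultimately show ?thesis unfolding Units_def by blast
qed

lemma iota_inj: assumes a: "a \<in> carrier A" "iota a = \<zero>\<^bsub>Frac\<^esub>" shows "a = \<zero>"
proof -
  have "eqv (\<one>, a) (\<one>, \<zero>)" using a one_T unfolding iota_def Frac_zero by (simp add: cls_eq PP_I)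
  from eqvD[OF this, of \<one> \<one>] show ?thesis using a by simp
qed
end


lemma quot_all:
  assumes "ring R" "ideal b R"
  shows "(\<forall>P\<in>carrier (R Quot b). Phi P) \<longleftrightarrow> (\<forall>x\<in>carrier R. Phi (b +>\<^bsub>R\<^esub> x))"
proof
  assume h: "\<forall>P\<in>carrier (R Quot b). Phi P"
  show "\<forall>x\<in>carrier R. Phi (b +>\<^bsub>R\<^esub> x)"
  proof
    fix x assume "x \<in> carrier R"
    then have "b +>\<^bsub>R\<^esub> x \<in> carrier (R Quot b)"
      using ring_hom_closed[OF ideal.rcos_ring_hom[OF assms(2)]] by blast
    then show "Phi (b +>\<^bsub>R\<^esub> x)" using h by blast
  qed
next
  assume h: "\<forall>x\<in>carrier R. Phi (b +>\<^bsub>R\<^esub> x)"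
  show "\<forall>P\<in>carrier (R Quot b). Phi P"
  proof
    fix P assume "P \<in> carrier (R Quot b)"
    then obtain x where "x \<in> carrier R" "P = b +>\<^bsub>R\<^esub> x" using quot_elem[OF assms(2)] by blast
    then show "Phi P" using h by blast
  qed
qed

context uloc_ore
begin

definition Treg :: "'a set \<Rightarrow> bool" where
  "Treg b \<longleftrightarrow> (\<forall>x\<in>carrier A. \<forall>t\<in>T. x \<otimes> t \<in> b \<longrightarrow> x \<in> b)"

lemma regular_iff:
  assumes b: "ideal b A"
  shows "(\<forall>t\<in>T. b +> t \<in> left_regular (A Quot b)) \<longleftrightarrow> Treg b"
proof -
  interpret b: ideal b A by fact
  have pi: "(+>) b \<in> ring_hom A (A Quot b)" by (rule b.rcos_ring_hom)
  have carrQ: "b +> x \<in> carrier (A Quot b)" if "x \<in> carrier A" for x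
    using ring_hom_closed[OF pi that] .
  have *: "b +> t \<in> left_regular (A Quot b) \<longleftrightarrow> (\<forall>x\<in>carrier A. x \<otimes> t \<in> b \<longrightarrow> x \<in> b)" if t: "t \<in> T" for t
  proof -
    have tc: "t \<in> carrier A" using t Tc by simp
    have "b +> t \<in> left_regular (A Quot b) \<longleftrightarrow>
        (\<forall>P\<in>carrier (A Quot b). P \<otimes>\<^bsub>A Quot b\<^esub> (b +> t) = \<zero>\<^bsub>A Quot b\<^esub> \<longrightarrow> P = \<zero>\<^bsub>A Quot b\<^esub>)"
      unfolding left_regular_def using carrQ[OF tc] by simp
    also have "\<dots> \<longleftrightarrow> (\<forall>x\<in>carrier A. (b +> x) \<otimes>\<^bsub>A Quot b\<^esub> (b +> t) = \<zero>\<^bsub>A Quot b\<^esub> \<longrightarrow> b +> x = \<zero>\<^bsub>A Quot b\<^esub>)"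
      by (rule quot_all[OF A.ring_axioms b])
    also have "\<dots> \<longleftrightarrow> (\<forall>x\<in>carrier A. x \<otimes> t \<in> b \<longrightarrow> x \<in> b)"
    proof -
      have "\<And>x. x \<in> carrier A \<Longrightarrow> ((b +> x) \<otimes>\<^bsub>A Quot b\<^esub> (b +> t) = \<zero>\<^bsub>A Quot b\<^esub> \<longleftrightarrow> x \<otimes> t \<in> b)"
        using ring_hom_mult[OF pi _ tc, symmetric] quot_zero_iff[OF A.ring_axioms b] tc by simp
      moreover have "\<And>x. x \<in> carrier A \<Longrightarrow> (b +> x = \<zero>\<^bsub>A Quot b\<^esub> \<longleftrightarrow> x \<in> b)"
        using quot_zero_iff[OF A.ring_axioms b] by simp
      ultimately show ?thesis by auto
    qed
    finally show ?thesis .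
  qed
  show ?thesis unfolding Treg_def using * by auto
qed

lemma prime_a_eq: "prime_a A T = \<Inter>{b. ideal b A \<and> Treg b}"
proof -
  have "{b. ideal b A \<and> (\<forall>t\<in>T. b +> t \<in> left_regular (A Quot b))} = {b. ideal b A \<and> Treg b}"
    using regular_iff by blast
  then show ?thesis unfolding prime_a_def by simp
qed

lemma Treg_carrier: "Treg (carrier A)"
  unfolding Treg_def by simp

lemma pa_ideal: "ideal (prime_a A T) A"
  unfolding prime_a_eq by (rule i_Intersect) (use oneideal Treg_carrier in auto)

lemma pa_Treg: "Treg (prime_a A T)"
  unfolding prime_a_eq Treg_def by blast

lemma pa_least: "ideal b A \<Longrightarrow> Treg b \<Longrightarrow> prime_a A T \<subseteq> b"
  unfolding prime_a_eq by blast

lemma pa_TregD: "x \<in> carrier A \<Longrightarrow> t \<in> T \<Longrightarrow> x \<otimes> t \<in> prime_a A T \<Longrightarrow> x \<in> prime_a A T"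
  using pa_Treg unfolding Treg_def by blast

lemma pa_zero: "\<zero> \<in> prime_a A T"
  using ideal.axioms(1)[OF pa_ideal] additive_subgroup.zero_closed by blast

lemma pa_sub: "prime_a A T \<subseteq> carrier A"
  using ideal.axioms(1)[OF pa_ideal] additive_subgroup.a_subset by blast

lemma ass_kernel: "ass A T = a_kernel A U mm"
  unfolding ass_def a_kernel_def' by simp

lemma mm_hom_ring: "ring_hom_ring A U mm"
  using A.ring_axioms U_ring map_hom by (rule ring_hom_ringI2)

lemma ass_ideal: "ideal (ass A T) A"
  unfolding ass_kernel by (rule ring_hom_ring.kernel_is_ideal[OF mm_hom_ring])

lemma ass_Treg: "Treg (ass A T)"
  unfolding Treg_def
proof (intro ballI impI)
  interpret U: ring U by (rule U_ring)
  fix x t assume x: "x \<in> carrier A" and t: "t \<in> T" and xt: "x \<otimes> t \<in> ass A T"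
  have "mm x \<otimes>\<^bsub>U\<^esub> mm t = \<zero>\<^bsub>U\<^esub>" using xt x t unfolding ass_def by (simp add: mm_mult Tc)
  then have "mm x \<otimes>\<^bsub>U\<^esub> mm t \<otimes>\<^bsub>U\<^esub> xx t = \<zero>\<^bsub>U\<^esub>" using x_closed[OF t] by simp
  then have "mm x = \<zero>\<^bsub>U\<^esub>" using x_inv(1)[OF t] map_closed[OF x] map_closed[OF Tc[OF t]] x_closed[OF t]
    by (simp add: U.m_assoc)
  then show "x \<in> ass A T" using x unfolding ass_def by simp
qed

lemma pa_sub_ass: "prime_a A T \<subseteq> ass A T"
  by (rule pa_least[OF ass_ideal ass_Treg])

lemma mm_unit: assumes t: "t \<in> T" shows "mm t \<in> Units U" "inv\<^bsub>U\<^esub> (mm t) = xx t"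
proof -
  interpret U: ring U by (rule U_ring)
  show "mm t \<in> Units U" unfolding Units_def using x_inv[OF t] map_closed[OF Tc[OF t]] x_closed[OF t] by blast
  show "inv\<^bsub>U\<^esub> (mm t) = xx t" using U.inv_unique'[OF map_closed[OF Tc[OF t]] x_closed[OF t] x_inv[OF t]] by simp
qed

lemma oreA:
  assumes s: "s \<in> T" and r: "r \<in> carrier A"
  shows "\<exists>s1\<in>T. \<exists>r1\<in>carrier A. s1 \<otimes> r \<ominus> r1 \<otimes> s \<in> prime_a A T"
proof -
  obtain s1 s2 r1 where s1: "s1 \<in> T" and s2: "s2 \<in> T" and r1: "r1 \<in> carrier A"
    and e: "(s1 \<otimes> r \<ominus> r1 \<otimes> s) \<otimes> s2 = \<zero>"
    using ore[OF s r] by blast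
  have "s1 \<otimes> r \<ominus> r1 \<otimes> s \<in> prime_a A T"
    using pa_TregD[of "s1 \<otimes> r \<ominus> r1 \<otimes> s" s2] e pa_zero s1 s2 r1 r s by (simp add: Tc)
  then show ?thesis using s1 r1 by blast
qed

definition bb :: "'a set" where "bb = {r \<in> carrier A. \<exists>t\<in>T. t \<otimes> r \<in> prime_a A T}"

lemma pa_sub_bb: "prime_a A T \<subseteq> bb"
proof
  fix x assume x: "x \<in> prime_a A T"
  then have xc: "x \<in> carrier A" using pa_sub by auto
  then have "\<one> \<otimes> x \<in> prime_a A T" using x by simp
  then show "x \<in> bb" unfolding bb_def using one_T xc by blast
qed

lemma bb_ideal: "ideal bb A"
proof -
  interpret P: ideal "prime_a A T" A by (rule pa_ideal)
  show ?thesis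
  proof (rule idealI[OF A.ring_axioms])
    show "subgroup bb (add_monoid A)"
    proof
      show "bb \<subseteq> carrier (add_monoid A)" unfolding bb_def by auto
    next
      fix x y assume x: "x \<in> bb" and y: "y \<in> bb"
      obtain s where s: "s \<in> T" "s \<otimes> x \<in> prime_a A T" and xc: "x \<in> carrier A" using x unfolding bb_def by auto
      obtain t where t: "t \<in> T" "t \<otimes> y \<in> prime_a A T" and yc: "y \<in> carrier A" using y unfolding bb_def by auto
      obtain s1 r1 where s1: "s1 \<in> T" and r1: "r1 \<in> carrier A" and e: "s1 \<otimes> s \<ominus> r1 \<otimes> t \<in> prime_a A T"
        using oreA[OF t(1) Tc[OF s(1)]] by blast
      have "(s1 \<otimes> s) \<otimes> (x \<oplus> y) = s1 \<otimes> (s \<otimes> x) \<oplus> ((s1 \<otimes> s \<ominus> r1 \<otimes> t) \<otimes> y \<oplus> r1 \<otimes> (t \<otimes> y))"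
        using s1 r1 s t xc yc by (simp add: r_distr l_distr a_minus_def m_assoc l_minus a_assoc l_neg Tc)
      also have "\<dots> \<in> prime_a A T"
        using P.a_closed[OF P.I_l_closed[OF s(2) Tc[OF s1]] P.a_closed[OF P.I_r_closed[OF e yc] P.I_l_closed[OF t(2) r1]]] .
      finally have "(s1 \<otimes> s) \<otimes> (x \<oplus> y) \<in> prime_a A T" .
      then show "x \<otimes>\<^bsub>add_monoid A\<^esub> y \<in> bb" unfolding bb_def using mult_T[OF s1 s(1)] xc yc by auto
    next
      have "\<zero> \<in> bb" unfolding bb_def using one_T pa_zero
        by (intro CollectI conjI zero_closed bexI[of _ "\<one>"]) simp_all
      then show "\<one>\<^bsub>add_monoid A\<^esub> \<in> bb" by simp
    next
      fix x assume x: "x \<in> bb"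
      obtain s where s: "s \<in> T" "s \<otimes> x \<in> prime_a A T" and xc: "x \<in> carrier A" using x unfolding bb_def by auto
      have "s \<otimes> (\<ominus> x) = \<ominus> (s \<otimes> x)" using s xc by (simp add: r_minus Tc)
      then have "s \<otimes> (\<ominus> x) \<in> prime_a A T" using s P.a_inv_closed by simp
      then show "inv\<^bsub>add_monoid A\<^esub> x \<in> bb" unfolding bb_def using s xc by (auto simp: a_inv_def[symmetric])
    qed
  next
    fix a x assume a: "a \<in> bb" and x: "x \<in> carrier A"
    obtain s where s: "s \<in> T" "s \<otimes> a \<in> prime_a A T" and ac: "a \<in> carrier A" using a unfolding bb_def by auto
    obtain s1 r1 where s1: "s1 \<in> T" and r1: "r1 \<in> carrier A" and e: "s1 \<otimes> x \<ominus> r1 \<otimes> s \<in> prime_a A T"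
      using oreA[OF s(1) x] by blast
    have "s1 \<otimes> (x \<otimes> a) = (s1 \<otimes> x \<ominus> r1 \<otimes> s) \<otimes> a \<oplus> r1 \<otimes> (s \<otimes> a)"
      using s1 r1 s x ac by (simp add: l_distr a_minus_def m_assoc l_minus a_assoc l_neg Tc)
    also have "\<dots> \<in> prime_a A T"
      using P.a_closed[OF P.I_r_closed[OF e ac] P.I_l_closed[OF s(2) r1]] .
    finally show "x \<otimes> a \<in> bb" unfolding bb_def using s1 x ac by auto
  next
    fix a x assume a: "a \<in> bb" and x: "x \<in> carrier A"
    obtain s where s: "s \<in> T" "s \<otimes> a \<in> prime_a A T" and ac: "a \<in> carrier A" using a unfolding bb_def by auto
    have "s \<otimes> (a \<otimes> x) = (s \<otimes> a) \<otimes> x" using s x ac by (simp add: m_assoc Tc)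
    also have "\<dots> \<in> prime_a A T" using P.I_r_closed[OF s(2) x] .
    finally show "a \<otimes> x \<in> bb" unfolding bb_def using s x ac by auto
  qed
qed

lemma bb_regR: "x \<in> carrier A \<Longrightarrow> t \<in> T \<Longrightarrow> x \<otimes> t \<in> bb \<Longrightarrow> x \<in> bb"
proof -
  assume x: "x \<in> carrier A" and t: "t \<in> T" and xt: "x \<otimes> t \<in> bb"
  obtain u where u: "u \<in> T" "u \<otimes> (x \<otimes> t) \<in> prime_a A T" using xt unfolding bb_def by auto
  have "(u \<otimes> x) \<otimes> t \<in> prime_a A T" using u x t by (simp add: m_assoc Tc)
  then have "u \<otimes> x \<in> prime_a A T" by (rule pa_TregD[rotated 1, OF t]) (use u x in \<open>simp add: Tc\<close>)
  then show "x \<in> bb" unfolding bb_def using u x by auto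
qed

lemma bb_regL: "x \<in> carrier A \<Longrightarrow> t \<in> T \<Longrightarrow> t \<otimes> x \<in> bb \<Longrightarrow> x \<in> bb"
proof -
  assume x: "x \<in> carrier A" and t: "t \<in> T" and xt: "t \<otimes> x \<in> bb"
  obtain u where u: "u \<in> T" "u \<otimes> (t \<otimes> x) \<in> prime_a A T" using xt unfolding bb_def by auto
  have "(u \<otimes> t) \<otimes> x \<in> prime_a A T" using u x t by (simp add: m_assoc Tc)
  then show "x \<in> bb" unfolding bb_def using mult_T[OF u(1) t] x by auto
qed


lemma Q_ore_reg: "ore_reg (A Quot bb) ((+>) bb ` T)"
proof -
  interpret I: ideal bb A by (rule bb_ideal)
  interpret Q: ring "A Quot bb" by (rule I.quotient_is_ring)
  have pi: "(+>) bb \<in> ring_hom A (A Quot bb)" by (rule I.rcos_ring_hom)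
  have zi: "\<And>x. x \<in> carrier A \<Longrightarrow> bb +> x = \<zero>\<^bsub>A Quot bb\<^esub> \<longleftrightarrow> x \<in> bb"
    using quot_zero_iff[OF A.ring_axioms bb_ideal] by simp
  have mul: "\<And>x y. x \<in> carrier A \<Longrightarrow> y \<in> carrier A \<Longrightarrow> (bb +> x) \<otimes>\<^bsub>A Quot bb\<^esub> (bb +> y) = bb +> (x \<otimes> y)"
    using ring_hom_mult[OF pi] by simp
  show ?thesis
  proof (intro ore_reg.intro[OF Q.ring_axioms] ore_reg_axioms.intro)
    show "(+>) bb ` T \<subseteq> carrier (A Quot bb)" using ring_hom_closed[OF pi] Tc by auto
  next
    show "\<one>\<^bsub>A Quot bb\<^esub> \<in> (+>) bb ` T" using ring_hom_one[OF pi] one_T by (metis image_eqI)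
  next
    fix s t assume "s \<in> (+>) bb ` T" "t \<in> (+>) bb ` T"
    then obtain s0 t0 where "s0 \<in> T" "t0 \<in> T" "s = bb +> s0" "t = bb +> t0" by blast
    then show "s \<otimes>\<^bsub>A Quot bb\<^esub> t \<in> (+>) bb ` T" using mul mult_T Tc by auto
  next
    fix r s assume r: "r \<in> carrier (A Quot bb)" and s: "s \<in> (+>) bb ` T"
    obtain r0 where r0: "r0 \<in> carrier A" "r = bb +> r0" using quot_elem[OF bb_ideal r] by blast
    obtain s0 where s0: "s0 \<in> T" "s = bb +> s0" using s by blast
    obtain s1 r1 where s1: "s1 \<in> T" and r1: "r1 \<in> carrier A" and e: "s1 \<otimes> r0 \<ominus> r1 \<otimes> s0 \<in> prime_a A T"
      using oreA[OF s0(1) r0(1)] by blast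
    have "bb +> (s1 \<otimes> r0) = bb +> (r1 \<otimes> s0)"
      using quot_eq_iff[OF A.ring_axioms bb_ideal] e pa_sub_bb s1 r1 r0 s0 by (auto simp: Tc)
    then have "(bb +> s1) \<otimes>\<^bsub>A Quot bb\<^esub> r = (bb +> r1) \<otimes>\<^bsub>A Quot bb\<^esub> s"
      using r0 s0 s1 r1 mul by (simp add: Tc)
    moreover have "bb +> r1 \<in> carrier (A Quot bb)" using ring_hom_closed[OF pi r1] .
    ultimately show "\<exists>s'\<in>(+>) bb ` T. \<exists>r'\<in>carrier (A Quot bb). s' \<otimes>\<^bsub>A Quot bb\<^esub> r = r' \<otimes>\<^bsub>A Quot bb\<^esub> s"
      using s1 by blast
  next
    fix x t assume x: "x \<in> carrier (A Quot bb)" and t: "t \<in> (+>) bb ` T" and xt: "x \<otimes>\<^bsub>A Quot bb\<^esub> t = \<zero>\<^bsub>A Quot bb\<^esub>"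
    obtain x0 where x0: "x0 \<in> carrier A" "x = bb +> x0" using quot_elem[OF bb_ideal x] by blast
    obtain t0 where t0: "t0 \<in> T" "t = bb +> t0" using t by blast
    have "x0 \<otimes> t0 \<in> bb" using xt x0 t0 mul zi by (simp add: Tc)
    then have "x0 \<in> bb" using bb_regR x0 t0 by blast
    then show "x = \<zero>\<^bsub>A Quot bb\<^esub>" using zi x0 by simp
  next
    fix x t assume x: "x \<in> carrier (A Quot bb)" and t: "t \<in> (+>) bb ` T" and xt: "t \<otimes>\<^bsub>A Quot bb\<^esub> x = \<zero>\<^bsub>A Quot bb\<^esub>"
    obtain x0 where x0: "x0 \<in> carrier A" "x = bb +> x0" using quot_elem[OF bb_ideal x] by blast
    obtain t0 where t0: "t0 \<in> T" "t = bb +> t0" using t by blast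
    have "t0 \<otimes> x0 \<in> bb" using xt x0 t0 mul zi by (simp add: Tc)
    then have "x0 \<in> bb" using bb_regL x0 t0 by blast
    then show "x = \<zero>\<^bsub>A Quot bb\<^esub>" using zi x0 by simp
  qed
qed

lemma frac_exists:
  "\<exists>(B :: ('a set \<times> 'a set) set ring) f. ring B \<and> f \<in> ring_hom A B \<and> (\<forall>t\<in>T. f t \<in> Units B)
     \<and> (\<forall>a\<in>carrier A. f a = \<zero>\<^bsub>B\<^esub> \<longrightarrow> a \<in> bb)"
proof -
  interpret I: ideal bb A by (rule bb_ideal)
  interpret O: ore_reg "A Quot bb" "(+>) bb ` T" by (rule Q_ore_reg)
  have pi: "(+>) bb \<in> ring_hom A (A Quot bb)" by (rule I.rcos_ring_hom)
  let ?f = "O.iota \<circ> (+>) bb"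
  have f: "?f \<in> ring_hom A O.Frac" by (rule ring_hom_trans[OF pi O.iota_hom])
  have u: "\<forall>t\<in>T. ?f t \<in> Units O.Frac" using O.iota_unit by auto
  have k: "\<forall>a\<in>carrier A. ?f a = \<zero>\<^bsub>O.Frac\<^esub> \<longrightarrow> a \<in> bb"
  proof (intro ballI impI)
    fix a assume a: "a \<in> carrier A" and fa: "?f a = \<zero>\<^bsub>O.Frac\<^esub>"
    have "bb +> a = \<zero>\<^bsub>A Quot bb\<^esub>" using O.iota_inj[OF ring_hom_closed[OF pi a]] fa by simp
    then show "a \<in> bb" using quot_zero_iff[OF A.ring_axioms bb_ideal a] by simp
  qed
  show ?thesis using O.Frac_ring f u k by blast
qed

lemma ass_sub_bb: "ass A T \<subseteq> bb"
proof
  fix a assume a: "a \<in> ass A T"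
  obtain B :: "('a set \<times> 'a set) set ring" and f where B: "ring B" and f: "f \<in> ring_hom A B"
    and u: "\<forall>t\<in>T. f t \<in> Units B" and k: "\<forall>a\<in>carrier A. f a = \<zero>\<^bsub>B\<^esub> \<longrightarrow> a \<in> bb"
    using frac_exists by blast
  have u': "\<And>t. t \<in> T \<Longrightarrow> f t \<in> Units B" using u by blast
  obtain g where g: "g \<in> ring_hom U B" "\<forall>a\<in>carrier A. g (mm a) = f a"
    using univ_lift[OF B f u'] by blast
  have ac: "a \<in> carrier A" and ma: "mm a = \<zero>\<^bsub>U\<^esub>" using a unfolding ass_def by auto
  have "f a = g (mm a)" using g(2) ac by simp
  also have "\<dots> = g \<zero>\<^bsub>U\<^esub>" using ma by simp
  also have "\<dots> = \<zero>\<^bsub>B\<^esub>" by (rule ring_hom_zero[OF g(1) U_ring B])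
  finally have "f a = \<zero>\<^bsub>B\<^esub>" .
  then show "a \<in> bb" using k ac by blast
qed

lemma nontriv_iff: "prime_a A T \<noteq> carrier A \<longleftrightarrow> \<one>\<^bsub>U\<^esub> \<noteq> \<zero>\<^bsub>U\<^esub>"
proof
  assume pa: "prime_a A T \<noteq> carrier A"
  show "\<one>\<^bsub>U\<^esub> \<noteq> \<zero>\<^bsub>U\<^esub>"
  proof
    assume "\<one>\<^bsub>U\<^esub> = \<zero>\<^bsub>U\<^esub>"
    then have "\<one> \<in> ass A T" unfolding ass_def using mm_one by simp
    then have "\<one> \<in> bb" using ass_sub_bb by blast
    then obtain t where t: "t \<in> T" "t \<otimes> \<one> \<in> prime_a A T" unfolding bb_def by blast
    then have "\<one> \<otimes> t \<in> prime_a A T" by (simp add: Tc)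
    then have "\<one> \<in> prime_a A T" using pa_TregD[OF one_closed t(1)] by blast
    then have "prime_a A T = carrier A" using ideal.one_imp_carrier[OF pa_ideal] by blast
    then show False using pa by blast
  qed
next
  assume ne: "\<one>\<^bsub>U\<^esub> \<noteq> \<zero>\<^bsub>U\<^esub>"
  show "prime_a A T \<noteq> carrier A"
  proof
    assume "prime_a A T = carrier A"
    then have "\<one> \<in> ass A T" using pa_sub_ass by blast
    then show False using ne mm_one unfolding ass_def by simp
  qed
qed

lemma ll_iff: "left_localizable A T \<longleftrightarrow> \<one>\<^bsub>U\<^esub> \<noteq> \<zero>\<^bsub>U\<^esub>"
  unfolding left_localizable_def using U_form by blast

end


context uloc_ore
begin

abbreviation "Ir \<equiv> Idl (ass_r A T)"
abbreviation "Rr \<equiv> A Quot Ir"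
abbreviation "Sr \<equiv> (+>) Ir ` T"

lemma ass_r_sub: "ass_r A T \<subseteq> carrier A" unfolding ass_r_def by auto

lemma Ir_ideal: "ideal Ir A" by (rule genideal_ideal[OF ass_r_sub])

lemma ass_r_Ir: "ass_r A T \<subseteq> Ir" by (rule genideal_self[OF ass_r_sub])

lemma ass_r_ass: "ass_r A T \<subseteq> ass A T"
proof
  fix x assume x: "x \<in> ass_r A T"
  then obtain t where t: "t \<in> T" "x \<otimes> t = \<zero>" and xc: "x \<in> carrier A" unfolding ass_r_def by auto
  have "\<zero> \<in> ass A T" using ideal.axioms(1)[OF ass_ideal] additive_subgroup.zero_closed by blast
  then have "x \<otimes> t \<in> ass A T" using t by simp
  then show "x \<in> ass A T" using ass_Treg xc t unfolding Treg_def by blast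
qed

lemma Ir_ass: "Ir \<subseteq> ass A T"
  by (rule genideal_minimal[OF ass_ideal ass_r_ass])

lemma Rr_ring: "ring Rr" by (rule ideal.quotient_is_ring[OF Ir_ideal])

lemma pir: "(+>) Ir \<in> ring_hom A Rr" by (rule ideal.rcos_ring_hom[OF Ir_ideal])

lemma Rr_ore:
  assumes r: "r \<in> carrier Rr" and s: "s \<in> Sr"
  shows "\<exists>s'\<in>Sr. \<exists>r'\<in>carrier Rr. s' \<otimes>\<^bsub>Rr\<^esub> r = r' \<otimes>\<^bsub>Rr\<^esub> s"
proof -
  obtain r0 where r0: "r0 \<in> carrier A" "r = Ir +> r0" using quot_elem[OF Ir_ideal r] by blast
  obtain s0 where s0: "s0 \<in> T" "s = Ir +> s0" using s by blast
  obtain s1 s2 r1 where s1: "s1 \<in> T" and s2: "s2 \<in> T" and r1: "r1 \<in> carrier A"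
    and e: "(s1 \<otimes> r0 \<ominus> r1 \<otimes> s0) \<otimes> s2 = \<zero>" using ore[OF s0(1) r0(1)] by blast
  have "s1 \<otimes> r0 \<ominus> r1 \<otimes> s0 \<in> carrier A" using s1 r1 r0 s0 by (simp add: Tc)
  then have "s1 \<otimes> r0 \<ominus> r1 \<otimes> s0 \<in> ass_r A T" unfolding ass_r_def using e s2 by blast
  then have "s1 \<otimes> r0 \<ominus> r1 \<otimes> s0 \<in> Ir" using ass_r_Ir by blast
  then have "Ir +> (s1 \<otimes> r0) = Ir +> (r1 \<otimes> s0)"
    using quot_eq_iff[OF A.ring_axioms Ir_ideal] s1 r1 r0 s0 by (simp add: Tc)
  moreover have "(Ir +> s1) \<otimes>\<^bsub>Rr\<^esub> r = Ir +> (s1 \<otimes> r0)"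
    using r0 s1 ring_hom_mult[OF pir, of s1 r0] by (simp add: Tc)
  moreover have "(Ir +> r1) \<otimes>\<^bsub>Rr\<^esub> s = Ir +> (r1 \<otimes> s0)"
    using s0 r1 ring_hom_mult[OF pir, of r1 s0] by (simp add: Tc)
  ultimately have "(Ir +> s1) \<otimes>\<^bsub>Rr\<^esub> r = (Ir +> r1) \<otimes>\<^bsub>Rr\<^esub> s" by simp
  moreover have "Ir +> r1 \<in> carrier Rr" using ring_hom_closed[OF pir r1] .
  ultimately show ?thesis using s1 by blast
qed

lemma Sr_sub: "Sr \<subseteq> carrier Rr" using ring_hom_closed[OF pir] Tc by auto
lemma Sr_one: "\<one>\<^bsub>Rr\<^esub> \<in> Sr"
proof -
  have "\<one>\<^bsub>Rr\<^esub> = Ir +> \<one>" using ring_hom_one[OF pir] by simp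
  then show ?thesis using one_T by blast
qed
lemma Sr_mult: "s \<in> Sr \<Longrightarrow> t \<in> Sr \<Longrightarrow> s \<otimes>\<^bsub>Rr\<^esub> t \<in> Sr"
proof -
  assume "s \<in> Sr" "t \<in> Sr"
  then obtain s0 t0 where st: "s0 \<in> T" "t0 \<in> T" "s = Ir +> s0" "t = Ir +> t0" by blast
  then have "s \<otimes>\<^bsub>Rr\<^esub> t = Ir +> (s0 \<otimes> t0)" using ring_hom_mult[OF pir] Tc by simp
  then show ?thesis using mult_T[OF st(1,2)] by blast
qed

lemma part1: "left_Ore_set Rr Sr"
  unfolding left_Ore_set_def
proof (intro conjI ballI)
  show "Sr \<subseteq> carrier Rr" by (rule Sr_sub)
  show "\<one>\<^bsub>Rr\<^esub> \<in> Sr" by (rule Sr_one)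
  fix s t assume "s \<in> Sr" "t \<in> Sr" then show "s \<otimes>\<^bsub>Rr\<^esub> t \<in> Sr" by (rule Sr_mult)
next
  fix r s assume "r \<in> carrier Rr" "s \<in> Sr"
  then show "\<exists>s'\<in>Sr. \<exists>r'\<in>carrier Rr. s' \<otimes>\<^bsub>Rr\<^esub> r = r' \<otimes>\<^bsub>Rr\<^esub> s" by (rule Rr_ore)
qed

lemma Rr_uloc_ore: "uloc_ore Rr Sr"
proof -
  interpret Q: ring Rr by (rule Rr_ring)
  show ?thesis
  proof (intro uloc_ore.intro uloc.intro uloc_axioms.intro uloc_ore_axioms.intro Q.ring_axioms Sr_sub Sr_one Sr_mult)
    fix s r assume s: "s \<in> Sr" and r: "r \<in> carrier Rr"
    obtain s' r' where s': "s' \<in> Sr" and r': "r' \<in> carrier Rr" and e: "s' \<otimes>\<^bsub>Rr\<^esub> r = r' \<otimes>\<^bsub>Rr\<^esub> s"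
      using Rr_ore[OF r s] by blast
    have c: "r' \<otimes>\<^bsub>Rr\<^esub> s \<in> carrier Rr" using r' s Sr_sub by blast
    have "s' \<otimes>\<^bsub>Rr\<^esub> r \<ominus>\<^bsub>Rr\<^esub> r' \<otimes>\<^bsub>Rr\<^esub> s = \<zero>\<^bsub>Rr\<^esub>"
      unfolding e using Q.r_right_minus_eq[OF c c] by simp
    then have "(s' \<otimes>\<^bsub>Rr\<^esub> r \<ominus>\<^bsub>Rr\<^esub> r' \<otimes>\<^bsub>Rr\<^esub> s) \<otimes>\<^bsub>Rr\<^esub> \<one>\<^bsub>Rr\<^esub> = \<zero>\<^bsub>Rr\<^esub>"
      by simp
    then show "\<exists>s1\<in>Sr. \<exists>s2\<in>Sr. \<exists>r1\<in>carrier Rr. (s1 \<otimes>\<^bsub>Rr\<^esub> r \<ominus>\<^bsub>Rr\<^esub> r1 \<otimes>\<^bsub>Rr\<^esub> s) \<otimes>\<^bsub>Rr\<^esub> s2 = \<zero>\<^bsub>Rr\<^esub>"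
      using s' r' Sr_one by blast
  qed
qed

lemma part2_core: "\<one>\<^bsub>U\<^esub> \<noteq> \<zero>\<^bsub>U\<^esub> \<longleftrightarrow> \<one>\<^bsub>univ_loc Rr Sr\<^esub> \<noteq> \<zero>\<^bsub>univ_loc Rr Sr\<^esub>"
proof -
  interpret RR: uloc_ore Rr Sr by (rule Rr_uloc_ore)
  interpret U: ring U by (rule U_ring)
  interpret U2: ring "univ_loc Rr Sr" by (rule RR.U_ring)
  have f1: "univ_map Rr Sr \<circ> (+>) Ir \<in> ring_hom A (univ_loc Rr Sr)"
    by (rule ring_hom_trans[OF pir RR.map_hom])
  have u1: "(univ_map Rr Sr \<circ> (+>) Ir) t \<in> Units (univ_loc Rr Sr)" if t: "t \<in> T" for t
    using RR.mm_unit(1)[of "Ir +> t"] t by simp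
  obtain g1 where g1: "g1 \<in> ring_hom U (univ_loc Rr Sr)"
    using univ_lift[OF RR.U_ring f1 u1] by blast
  have ker: "\<And>x. x \<in> Ir \<Longrightarrow> mm x = \<zero>\<^bsub>U\<^esub>" using Ir_ass unfolding ass_def by auto
  obtain f2 where f2: "f2 \<in> ring_hom Rr U" "\<forall>x\<in>carrier A. f2 (Ir +> x) = mm x"
    using quot_lift[OF A.ring_axioms Ir_ideal U_ring map_hom ker] by blast
  have u2: "f2 s \<in> Units U" if s: "s \<in> Sr" for s
  proof -
    obtain t where "t \<in> T" "s = Ir +> t" using s by blast
    then show ?thesis using f2(2) mm_unit(1) by (simp add: Tc)
  qed
  obtain g2 where g2: "g2 \<in> ring_hom (univ_loc Rr Sr) U"
    using RR.univ_lift[OF U_ring f2(1) u2] by blast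
  show ?thesis
  proof
    assume ne: "\<one>\<^bsub>U\<^esub> \<noteq> \<zero>\<^bsub>U\<^esub>"
    show "\<one>\<^bsub>univ_loc Rr Sr\<^esub> \<noteq> \<zero>\<^bsub>univ_loc Rr Sr\<^esub>"
    proof
      assume e: "\<one>\<^bsub>univ_loc Rr Sr\<^esub> = \<zero>\<^bsub>univ_loc Rr Sr\<^esub>"
      have "\<one>\<^bsub>U\<^esub> = g2 \<one>\<^bsub>univ_loc Rr Sr\<^esub>" using ring_hom_one[OF g2] by simp
      also have "\<dots> = g2 \<zero>\<^bsub>univ_loc Rr Sr\<^esub>" using e by simp
      also have "\<dots> = \<zero>\<^bsub>U\<^esub>" by (rule ring_hom_zero[OF g2 RR.U_ring U_ring])
      finally show False using ne by simp
    qed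
  next
    assume ne: "\<one>\<^bsub>univ_loc Rr Sr\<^esub> \<noteq> \<zero>\<^bsub>univ_loc Rr Sr\<^esub>"
    show "\<one>\<^bsub>U\<^esub> \<noteq> \<zero>\<^bsub>U\<^esub>"
    proof
      assume e: "\<one>\<^bsub>U\<^esub> = \<zero>\<^bsub>U\<^esub>"
      have "\<one>\<^bsub>univ_loc Rr Sr\<^esub> = g1 \<one>\<^bsub>U\<^esub>" using ring_hom_one[OF g1] by simp
      also have "\<dots> = g1 \<zero>\<^bsub>U\<^esub>" using e by simp
      also have "\<dots> = \<zero>\<^bsub>univ_loc Rr Sr\<^esub>" by (rule ring_hom_zero[OF g1 U_ring RR.U_ring])
      finally show False using ne by simp
    qed
  qed
qed

lemma parts234:
  "(left_localizable A T \<longleftrightarrow> left_localizable Rr Sr)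
   \<and> (left_localizable Rr Sr \<longleftrightarrow> prime_a Rr Sr \<noteq> carrier Rr)
   \<and> (prime_a Rr Sr \<noteq> carrier Rr \<longleftrightarrow> prime_a A T \<noteq> carrier A)"
proof -
  interpret RR: uloc_ore Rr Sr by (rule Rr_uloc_ore)
  have a: "left_localizable A T \<longleftrightarrow> \<one>\<^bsub>U\<^esub> \<noteq> \<zero>\<^bsub>U\<^esub>" by (rule ll_iff)
  have b: "left_localizable Rr Sr \<longleftrightarrow> \<one>\<^bsub>univ_loc Rr Sr\<^esub> \<noteq> \<zero>\<^bsub>univ_loc Rr Sr\<^esub>" by (rule RR.ll_iff)
  have c: "prime_a A T \<noteq> carrier A \<longleftrightarrow> \<one>\<^bsub>U\<^esub> \<noteq> \<zero>\<^bsub>U\<^esub>" by (rule nontriv_iff)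
  have d: "prime_a Rr Sr \<noteq> carrier Rr \<longleftrightarrow> \<one>\<^bsub>univ_loc Rr Sr\<^esub> \<noteq> \<zero>\<^bsub>univ_loc Rr Sr\<^esub>" by (rule RR.nontriv_iff)
  show ?thesis unfolding a b c d using part2_core by simp
qed


abbreviation "pa \<equiv> prime_a A T"
abbreviation "Qa \<equiv> A Quot pa"
abbreviation "Sa \<equiv> (\<lambda>s. pa +> s) ` T"

lemma pia: "(+>) pa \<in> ring_hom A Qa" by (rule ideal.rcos_ring_hom[OF pa_ideal])
lemma Qa_ring: "ring Qa" by (rule ideal.quotient_is_ring[OF pa_ideal])

lemma pa_zi: "x \<in> carrier A \<Longrightarrow> pa +> x = \<zero>\<^bsub>Qa\<^esub> \<longleftrightarrow> x \<in> pa"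
  using quot_zero_iff[OF A.ring_axioms pa_ideal] by simp

lemma pa_mul: "x \<in> carrier A \<Longrightarrow> y \<in> carrier A \<Longrightarrow> (pa +> x) \<otimes>\<^bsub>Qa\<^esub> (pa +> y) = pa +> (x \<otimes> y)"
  using ring_hom_mult[OF pia] by simp

lemma part5a: "left_denominator_set Qa Sa"
proof -
  interpret Q: ring Qa by (rule Qa_ring)
  have sub: "Sa \<subseteq> carrier Qa" using ring_hom_closed[OF pia] Tc by auto
  have one: "\<one>\<^bsub>Qa\<^esub> \<in> Sa"
  proof -
    have "\<one>\<^bsub>Qa\<^esub> = pa +> \<one>" using ring_hom_one[OF pia] by simp
    then show ?thesis using one_T by blast
  qed
  have mul: "s \<otimes>\<^bsub>Qa\<^esub> t \<in> Sa" if st0: "s \<in> Sa" "t \<in> Sa" for s t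
  proof -
    obtain s0 t0 where st: "s0 \<in> T" "t0 \<in> T" "s = pa +> s0" "t = pa +> t0" using st0 by blast
    then have "s \<otimes>\<^bsub>Qa\<^esub> t = pa +> (s0 \<otimes> t0)" using pa_mul Tc by simp
    then show ?thesis using mult_T[OF st(1,2)] by blast
  qed
  have oreQ: "\<exists>s'\<in>Sa. \<exists>r'\<in>carrier Qa. s' \<otimes>\<^bsub>Qa\<^esub> r = r' \<otimes>\<^bsub>Qa\<^esub> s" if r: "r \<in> carrier Qa" and s: "s \<in> Sa" for r s
  proof -
    obtain r0 where r0: "r0 \<in> carrier A" "r = pa +> r0" using quot_elem[OF pa_ideal r] by blast
    obtain s0 where s0: "s0 \<in> T" "s = pa +> s0" using s by blast
    obtain s1 r1 where s1: "s1 \<in> T" and r1: "r1 \<in> carrier A" and e: "s1 \<otimes> r0 \<ominus> r1 \<otimes> s0 \<in> pa"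
      using oreA[OF s0(1) r0(1)] by blast
    have "pa +> (s1 \<otimes> r0) = pa +> (r1 \<otimes> s0)"
      using quot_eq_iff[OF A.ring_axioms pa_ideal] e s1 r1 r0 s0 by (simp add: Tc)
    moreover have "(pa +> s1) \<otimes>\<^bsub>Qa\<^esub> r = pa +> (s1 \<otimes> r0)" using r0 s1 pa_mul by (simp add: Tc)
    moreover have "(pa +> r1) \<otimes>\<^bsub>Qa\<^esub> s = pa +> (r1 \<otimes> s0)" using s0 r1 pa_mul by (simp add: Tc)
    ultimately have "(pa +> s1) \<otimes>\<^bsub>Qa\<^esub> r = (pa +> r1) \<otimes>\<^bsub>Qa\<^esub> s" by simp
    moreover have "pa +> r1 \<in> carrier Qa" using ring_hom_closed[OF pia r1] .
    moreover have "pa +> s1 \<in> Sa" using s1 by blast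
    ultimately show ?thesis by blast
  qed
  have den: "\<exists>t\<in>Sa. t \<otimes>\<^bsub>Qa\<^esub> r = \<zero>\<^bsub>Qa\<^esub>" if r: "r \<in> carrier Qa" and s: "s \<in> Sa" and rs: "r \<otimes>\<^bsub>Qa\<^esub> s = \<zero>\<^bsub>Qa\<^esub>" for r s
  proof -
    obtain r0 where r0: "r0 \<in> carrier A" "r = pa +> r0" using quot_elem[OF pa_ideal r] by blast
    obtain s0 where s0: "s0 \<in> T" "s = pa +> s0" using s by blast
    have "pa +> (r0 \<otimes> s0) = \<zero>\<^bsub>Qa\<^esub>" using rs r0 s0 pa_mul by (simp add: Tc)
    then have "r0 \<otimes> s0 \<in> pa" using pa_zi r0 s0 by (simp add: Tc)
    then have "r0 \<in> pa" using pa_TregD r0 s0 by blast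
    then have "r = \<zero>\<^bsub>Qa\<^esub>" using pa_zi r0 by simp
    then have "\<one>\<^bsub>Qa\<^esub> \<otimes>\<^bsub>Qa\<^esub> r = \<zero>\<^bsub>Qa\<^esub>" by simp
    then show ?thesis using one by blast
  qed
  show ?thesis unfolding left_denominator_set_def left_Ore_set_def
  proof (intro conjI ballI impI)
    show "Sa \<subseteq> carrier Qa" by (rule sub)
    show "\<one>\<^bsub>Qa\<^esub> \<in> Sa" by (rule one)
  next
    fix s t assume "s \<in> Sa" "t \<in> Sa" then show "s \<otimes>\<^bsub>Qa\<^esub> t \<in> Sa" by (rule mul)
  next
    fix r s assume "r \<in> carrier Qa" "s \<in> Sa" then show "\<exists>s'\<in>Sa. \<exists>r'\<in>carrier Qa. s' \<otimes>\<^bsub>Qa\<^esub> r = r' \<otimes>\<^bsub>Qa\<^esub> s" by (rule oreQ)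
  next
    fix r s assume "r \<in> carrier Qa" "s \<in> Sa" "r \<otimes>\<^bsub>Qa\<^esub> s = \<zero>\<^bsub>Qa\<^esub>"
    then show "\<exists>t\<in>Sa. t \<otimes>\<^bsub>Qa\<^esub> r = \<zero>\<^bsub>Qa\<^esub>" by (rule den)
  qed
qed

lemma part5b: "Sa \<subseteq> left_regular Qa"
  using regular_iff[OF pa_ideal] pa_Treg by blast

lemma part5c: "ass A T = {r \<in> carrier A. pa +> r \<in> ass_l Qa Sa}"
proof
  show "ass A T \<subseteq> {r \<in> carrier A. pa +> r \<in> ass_l Qa Sa}"
  proof
    fix r assume r: "r \<in> ass A T"
    then have rc: "r \<in> carrier A" unfolding ass_def by simp
    have "r \<in> bb" using r ass_sub_bb by blast
    then obtain t where t: "t \<in> T" "t \<otimes> r \<in> pa" unfolding bb_def by blast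
    have "(pa +> t) \<otimes>\<^bsub>Qa\<^esub> (pa +> r) = \<zero>\<^bsub>Qa\<^esub>" using pa_mul pa_zi t rc by (simp add: Tc)
    moreover have "pa +> r \<in> carrier Qa" using ring_hom_closed[OF pia rc] .
    moreover have "pa +> t \<in> Sa" using t by blast
    ultimately have "pa +> r \<in> ass_l Qa Sa" unfolding ass_l_def by blast
    then show "r \<in> {r \<in> carrier A. pa +> r \<in> ass_l Qa Sa}" using rc by blast
  qed
next
  show "{r \<in> carrier A. pa +> r \<in> ass_l Qa Sa} \<subseteq> ass A T"
  proof
    fix r assume "r \<in> {r \<in> carrier A. pa +> r \<in> ass_l Qa Sa}"
    then have rc: "r \<in> carrier A" and "pa +> r \<in> ass_l Qa Sa" by auto
    then obtain t' where t': "t' \<in> Sa" "t' \<otimes>\<^bsub>Qa\<^esub> (pa +> r) = \<zero>\<^bsub>Qa\<^esub>" unfolding ass_l_def by blast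
    obtain t where t: "t \<in> T" "t' = pa +> t" using t'(1) by blast
    have "pa +> (t \<otimes> r) = \<zero>\<^bsub>Qa\<^esub>" using t'(2) t pa_mul rc by (simp add: Tc)
    then have "t \<otimes> r \<in> pa" using pa_zi t rc by (simp add: Tc)
    then have "t \<otimes> r \<in> ass A T" using pa_sub_ass by blast
    then have tr: "mm t \<otimes>\<^bsub>U\<^esub> mm r = \<zero>\<^bsub>U\<^esub>" unfolding ass_def using t rc by (simp add: mm_mult Tc)
    interpret U: ring U by (rule U_ring)
    have "mm r = (xx t \<otimes>\<^bsub>U\<^esub> mm t) \<otimes>\<^bsub>U\<^esub> mm r" using x_inv(2)[OF t(1)] map_closed[OF rc] by simp
    also have "\<dots> = xx t \<otimes>\<^bsub>U\<^esub> (mm t \<otimes>\<^bsub>U\<^esub> mm r)"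
      using map_closed[OF rc] map_closed[OF Tc[OF t(1)]] x_closed[OF t(1)] by (simp add: U.m_assoc)
    also have "\<dots> = \<zero>\<^bsub>U\<^esub>" unfolding tr using x_closed[OF t(1)] by simp
    finally show "r \<in> ass A T" unfolding ass_def using rc by simp
  qed
qed

lemma part5d:
  fixes B :: "('c,'n) ring_scheme" and \<sigma>
  assumes loc: "is_left_Ore_loc Qa Sa B \<sigma>"
  shows "\<exists>\<psi>. \<psi> \<in> ring_iso U B \<and> (\<forall>r\<in>carrier A. \<psi> (mm r) = \<sigma> (pa +> r))"
proof -
  have B: "ring B" and sig: "\<sigma> \<in> ring_hom Qa B" and su: "\<forall>t\<in>Sa. \<sigma> t \<in> Units B"
    and surj: "\<forall>b\<in>carrier B. \<exists>t\<in>Sa. \<exists>a\<in>carrier Qa. b = inv\<^bsub>B\<^esub> (\<sigma> t) \<otimes>\<^bsub>B\<^esub> \<sigma> a"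
    and kern: "\<forall>a\<in>carrier Qa. \<sigma> a = \<zero>\<^bsub>B\<^esub> \<longleftrightarrow> a \<in> ass_l Qa Sa"
    using loc unfolding is_left_Ore_loc_def by auto
  interpret B: ring B by (rule B)
  interpret U: ring U by (rule U_ring)
  let ?f = "\<sigma> \<circ> (+>) pa"
  have f: "?f \<in> ring_hom A B" by (rule ring_hom_trans[OF pia sig])
  have fu: "?f t \<in> Units B" if "t \<in> T" for t using su that by auto
  obtain \<psi> where psi: "\<psi> \<in> ring_hom U B" "\<forall>a\<in>carrier A. \<psi> (mm a) = ?f a" "\<forall>t\<in>T. \<psi> (xx t) = inv\<^bsub>B\<^esub> (?f t)"
    using univ_lift[OF B f fu] by blast
  interpret hh: ring_hom_ring U B \<psi> using U_ring B psi(1) by (rule ring_hom_ringI2)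
  have inj: "inj_on \<psi> (carrier U)"
  proof (rule hh.trivial_ker_imp_inj)
    show "a_kernel U B \<psi> = {\<zero>\<^bsub>U\<^esub>}"
    proof
      show "{\<zero>\<^bsub>U\<^esub>} \<subseteq> a_kernel U B \<psi>" unfolding a_kernel_def' by simp
      show "a_kernel U B \<psi> \<subseteq> {\<zero>\<^bsub>U\<^esub>}"
      proof
        fix u assume "u \<in> a_kernel U B \<psi>"
        then have u: "u \<in> carrier U" "\<psi> u = \<zero>\<^bsub>B\<^esub>" unfolding a_kernel_def' by auto
        obtain t a where t: "t \<in> T" and a: "a \<in> carrier A" and ue: "u = xx t \<otimes>\<^bsub>U\<^esub> mm a" using U_form[OF u(1)] by blast
        have ft: "?f t \<in> Units B" using fu[OF t] .
        have fa: "?f a \<in> carrier B" using ring_hom_closed[OF f a] .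
        have "inv\<^bsub>B\<^esub> (?f t) \<otimes>\<^bsub>B\<^esub> ?f a = \<zero>\<^bsub>B\<^esub>"
          using u(2) ue psi t a x_closed[OF t] map_closed[OF a] by simp
        then have "?f t \<otimes>\<^bsub>B\<^esub> (inv\<^bsub>B\<^esub> (?f t) \<otimes>\<^bsub>B\<^esub> ?f a) = \<zero>\<^bsub>B\<^esub>" using B.Units_closed[OF ft] by simp
        moreover have "?f t \<otimes>\<^bsub>B\<^esub> (inv\<^bsub>B\<^esub> (?f t) \<otimes>\<^bsub>B\<^esub> ?f a) = (?f t \<otimes>\<^bsub>B\<^esub> inv\<^bsub>B\<^esub> (?f t)) \<otimes>\<^bsub>B\<^esub> ?f a"
          using B.Units_closed[OF ft] B.Units_inv_closed[OF ft] fa by (simp only: B.m_assoc)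
        moreover have "(?f t \<otimes>\<^bsub>B\<^esub> inv\<^bsub>B\<^esub> (?f t)) \<otimes>\<^bsub>B\<^esub> ?f a = ?f a"
          using B.Units_r_inv[OF ft] fa by simp
        ultimately have "?f a = \<zero>\<^bsub>B\<^esub>" by simp
        then have "pa +> a \<in> ass_l Qa Sa" using kern ring_hom_closed[OF pia a] by simp
        then have "a \<in> ass A T" using part5c a by blast
        then have "mm a = \<zero>\<^bsub>U\<^esub>" unfolding ass_def by simp
        then show "u \<in> {\<zero>\<^bsub>U\<^esub>}" using ue x_closed[OF t] by simp
      qed
    qed
  qed
  have im: "\<psi> ` carrier U = carrier B"
  proof
    show "\<psi> ` carrier U \<subseteq> carrier B" using ring_hom_closed[OF psi(1)] by blast
    show "carrier B \<subseteq> \<psi> ` carrier U"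
    proof
      fix b assume b: "b \<in> carrier B"
      obtain t' a' where t': "t' \<in> Sa" and a': "a' \<in> carrier Qa" and be: "b = inv\<^bsub>B\<^esub> (\<sigma> t') \<otimes>\<^bsub>B\<^esub> \<sigma> a'"
        using surj b by blast
      obtain t where t: "t \<in> T" "t' = pa +> t" using t' by blast
      obtain a where a: "a \<in> carrier A" "a' = pa +> a" using quot_elem[OF pa_ideal a'] by blast
      have "\<psi> (xx t \<otimes>\<^bsub>U\<^esub> mm a) = \<psi> (xx t) \<otimes>\<^bsub>B\<^esub> \<psi> (mm a)"
        using x_closed[OF t(1)] map_closed[OF a(1)] by simp
      also have "\<dots> = b" using psi t a be by simp
      finally show "b \<in> \<psi> ` carrier U" using x_closed[OF t(1)] map_closed[OF a(1)] by (metis U.m_closed image_eqI)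
    qed
  qed
  have "\<psi> \<in> ring_iso U B" unfolding ring_iso_def bij_betw_def using psi(1) inj im by blast
  then show ?thesis using psi(2) by auto
qed
end


theorem theorem4p2:
  fixes R :: "('a,'m) ring_scheme" and S :: "'a set"
  assumes "ring R" and "almost_left_Ore R S"
  shows "left_Ore_set (R Quot (Idl\<^bsub>R\<^esub> (ass_r R S))) ((\<lambda>s. Idl\<^bsub>R\<^esub> (ass_r R S) +>\<^bsub>R\<^esub> s) ` S)
       \<and> (left_localizable R S \<longleftrightarrow>
            left_localizable (R Quot (Idl\<^bsub>R\<^esub> (ass_r R S))) ((\<lambda>s. Idl\<^bsub>R\<^esub> (ass_r R S) +>\<^bsub>R\<^esub> s) ` S))
       \<and> (left_localizable (R Quot (Idl\<^bsub>R\<^esub> (ass_r R S))) ((\<lambda>s. Idl\<^bsub>R\<^esub> (ass_r R S) +>\<^bsub>R\<^esub> s) ` S) \<longleftrightarrow>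
            prime_a (R Quot (Idl\<^bsub>R\<^esub> (ass_r R S))) ((\<lambda>s. Idl\<^bsub>R\<^esub> (ass_r R S) +>\<^bsub>R\<^esub> s) ` S)
              \<noteq> carrier (R Quot (Idl\<^bsub>R\<^esub> (ass_r R S))))
       \<and> (prime_a (R Quot (Idl\<^bsub>R\<^esub> (ass_r R S))) ((\<lambda>s. Idl\<^bsub>R\<^esub> (ass_r R S) +>\<^bsub>R\<^esub> s) ` S)
              \<noteq> carrier (R Quot (Idl\<^bsub>R\<^esub> (ass_r R S)))
            \<longleftrightarrow> prime_a R S \<noteq> carrier R)
       \<and> (prime_a R S \<noteq> carrier R \<longrightarrow>
         left_denominator_set (R Quot prime_a R S) ((\<lambda>s. prime_a R S +>\<^bsub>R\<^esub> s) ` S)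
       \<and> (\<lambda>s. prime_a R S +>\<^bsub>R\<^esub> s) ` S \<subseteq> left_regular (R Quot prime_a R S)
       \<and> ass R S = {r \<in> carrier R. prime_a R S +>\<^bsub>R\<^esub> r
                        \<in> ass_l (R Quot prime_a R S) ((\<lambda>s. prime_a R S +>\<^bsub>R\<^esub> s) ` S)}
       \<and> (\<forall>(B :: ('c,'n) ring_scheme) \<sigma>.
            is_left_Ore_loc (R Quot prime_a R S) ((\<lambda>s. prime_a R S +>\<^bsub>R\<^esub> s) ` S) B \<sigma> \<longrightarrow>
            (\<exists>\<psi>. \<psi> \<in> ring_iso (univ_loc R S) B \<and>
                 (\<forall>r\<in>carrier R. \<psi> (univ_map R S r) = \<sigma> (prime_a R S +>\<^bsub>R\<^esub> r)))))"
proof -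
  interpret R: ring R by (rule assms(1))
  have m: "multiplicative_set R S" and o: "\<And>s r. s \<in> S \<Longrightarrow> r \<in> carrier R \<Longrightarrow> \<exists>s1\<in>S. \<exists>s2\<in>S. \<exists>r1\<in>carrier R.
        (s1 \<otimes>\<^bsub>R\<^esub> r \<ominus>\<^bsub>R\<^esub> r1 \<otimes>\<^bsub>R\<^esub> s) \<otimes>\<^bsub>R\<^esub> s2 = \<zero>\<^bsub>R\<^esub>"
    using assms(2) unfolding almost_left_Ore_def by auto
  have Ssub: "S \<subseteq> carrier R" and one: "\<one>\<^bsub>R\<^esub> \<in> S" and mul: "\<And>s t. s \<in> S \<Longrightarrow> t \<in> S \<Longrightarrow> s \<otimes>\<^bsub>R\<^esub> t \<in> S"
    using m unfolding multiplicative_set_def by auto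
  interpret RS: uloc_ore R S
    by (intro uloc_ore.intro uloc.intro uloc_axioms.intro uloc_ore_axioms.intro assms(1) Ssub one mul o)
  have p234: "(left_localizable R S \<longleftrightarrow> left_localizable RS.Rr RS.Sr)
   \<and> (left_localizable RS.Rr RS.Sr \<longleftrightarrow> prime_a RS.Rr RS.Sr \<noteq> carrier RS.Rr)
   \<and> (prime_a RS.Rr RS.Sr \<noteq> carrier RS.Rr \<longleftrightarrow> prime_a R S \<noteq> carrier R)"
    by (rule RS.parts234)
  show ?thesis
  proof (intro conjI impI allI)
    show "left_Ore_set (R Quot (Idl\<^bsub>R\<^esub> (ass_r R S))) ((\<lambda>s. Idl\<^bsub>R\<^esub> (ass_r R S) +>\<^bsub>R\<^esub> s) ` S)"
      using RS.part1 by simp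
    show "left_localizable R S \<longleftrightarrow>
            left_localizable (R Quot (Idl\<^bsub>R\<^esub> (ass_r R S))) ((\<lambda>s. Idl\<^bsub>R\<^esub> (ass_r R S) +>\<^bsub>R\<^esub> s) ` S)"
      using p234 by simp
    show "left_localizable (R Quot (Idl\<^bsub>R\<^esub> (ass_r R S))) ((\<lambda>s. Idl\<^bsub>R\<^esub> (ass_r R S) +>\<^bsub>R\<^esub> s) ` S) \<longleftrightarrow>
            prime_a (R Quot (Idl\<^bsub>R\<^esub> (ass_r R S))) ((\<lambda>s. Idl\<^bsub>R\<^esub> (ass_r R S) +>\<^bsub>R\<^esub> s) ` S)
              \<noteq> carrier (R Quot (Idl\<^bsub>R\<^esub> (ass_r R S)))"
      using p234 by simp
    show "prime_a (R Quot (Idl\<^bsub>R\<^esub> (ass_r R S))) ((\<lambda>s. Idl\<^bsub>R\<^esub> (ass_r R S) +>\<^bsub>R\<^esub> s) ` S)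
              \<noteq> carrier (R Quot (Idl\<^bsub>R\<^esub> (ass_r R S)))
            \<longleftrightarrow> prime_a R S \<noteq> carrier R"
      using p234 by simp
    show "left_denominator_set (R Quot prime_a R S) ((\<lambda>s. prime_a R S +>\<^bsub>R\<^esub> s) ` S)"
      by (rule RS.part5a)
    show "(\<lambda>s. prime_a R S +>\<^bsub>R\<^esub> s) ` S \<subseteq> left_regular (R Quot prime_a R S)"
      by (rule RS.part5b)
    show "ass R S = {r \<in> carrier R. prime_a R S +>\<^bsub>R\<^esub> r
                        \<in> ass_l (R Quot prime_a R S) ((\<lambda>s. prime_a R S +>\<^bsub>R\<^esub> s) ` S)}"
      by (rule RS.part5c)
  next
    fix B :: "('c,'n) ring_scheme" and \<sigma>
    assume "is_left_Ore_loc (R Quot prime_a R S) ((\<lambda>s. prime_a R S +>\<^bsub>R\<^esub> s) ` S) B \<sigma>"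
    then show "\<exists>\<psi>. \<psi> \<in> ring_iso (univ_loc R S) B \<and>
                 (\<forall>r\<in>carrier R. \<psi> (univ_map R S r) = \<sigma> (prime_a R S +>\<^bsub>R\<^esub> r))"
      by (rule RS.part5d)
  qed
qed

end
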